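(* Let $\mathcal{A}$ be a polycategory. Then $\mathsf{CProc}(\mathcal{A})$ has additives: for every finite family of formulas $X_i$ ($i\in I$), the formula $\sum_{i\in I}a_i{:}X_i$ is a poly-sum and $\prod_{i\in I}a_i{:}X_i$ is a poly-product of the $X_i$ in $\mathsf{CProc}(\mathcal{A})$.
   Context: Formulas over $\mathcal{A}$: every object (atom) of $\mathcal{A}$ is a formula; for a finite index set $I$ and formulas $X_i$: sum $\sum_{i\in I}a_i{:}X_i$, product $\prod_{i\in I}a_i{:}X_i$ (distinct events $a_i$), tensor $\bigotimes_{i\in I}X_i$, par $\mathrm{Par}_{i\in I}X_i$; empty cases $\mathbf 0,\mathbf 1,\top,\bot$. A sequent $\Gamma\vdash\Delta$ consists of lists of channel-labelled formulas $\alpha{:}X$ with distinct channel names ($\alpha{:}\bigotimes_iX_i$, $\alpha{:}\mathrm{Par}_iX_i$ name components $\alpha_i$); $\Lambda(\Gamma\vdash\Delta)$ is the set of channel names of the sequent, $\Lambda(t)$ that of the type of $t$. Terms: $\alpha\equiv_A\beta::\alpha{:}A\vdash\beta{:}A$ for atoms; maps of $\mathcal{A}$ as axiom terms; cotuple $\alpha\{a_i\mapsto f_i\}_i::\Gamma,\alpha{:}\sum_ia_i{:}X_i\vdash\Delta$ from $f_i::\Gamma,\alpha{:}X_i\vdash\Delta$; tuple $\alpha\{a_i\mapsto f_i\}_i::\Gamma\vdash\alpha{:}\prod_ia_i{:}X_i,\Delta$ from $f_i::\Gamma\vdash\alpha{:}X_i,\Delta$; projection $\alpha[a_k]f::\Gamma,\alpha{:}\prod_ia_i{:}X_i\vdash\Delta$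 from $f::\Gamma,\alpha{:}X_k\vdash\Delta$; injection $\alpha[a_k]f::\Gamma\vdash\alpha{:}\sum_ia_i{:}X_i,\Delta$ from $f::\Gamma\vdash\alpha{:}X_k,\Delta$ ($I\neq\emptyset$); ltensor $\alpha\langle(\alpha_i)_i\mapsto f\rangle::\Gamma,\alpha{:}\bigotimes_iX_i\vdash\Delta$ from $f::\Gamma,\{\alpha_i{:}X_i\}_i\vdash\Delta$; rpar dually; lpar $\alpha\langle\alpha_i\mid\Lambda(\Gamma_i\vdash\Delta_i)\mapsto f_i\rangle_i::\Gamma,\alpha{:}\mathrm{Par}_iX_i\vdash\Delta$ from $f_i::\Gamma_i,\alpha_i{:}X_i\vdash\Delta_i$ where $\Gamma=[\Gamma_i]_i,\Delta=[\Delta_i]_i$; rtensor dually; cut $f;_\gamma g::\Gamma,\Gamma'\vdash\Delta,\Delta'$ from $f::\Gamma\vdash\Delta,\gamma{:}Z$, $g::\gamma{:}Z,\Gamma'\vdash\Delta'$ ($\gamma$ the only shared channel). Identity terms $1_X$ on compound formulas are defined by expansion (e.g. $1_{\sum a_i:X_i}=\alpha\{a_i\mapsto\beta[a_i]1_{X_i}\}_i$). $\sim$ is the congruence on terms generated by channel renaming, the cut-elimination rewrites (1) $f;_\gamma1\Rightarrow f$, (2) $1;_\gamma f\Rightarrow f$, (3)–(10) commuting a cut past a rule acting on a channel $\alpha\neq\gamma$ (e.g. (3) $\alpha\{a_i\mapsto f_i\}_i;_\gamma g\Rightarrow\alpha\{a_i\mapsto f_i;_\gamma g\}_i$, (4)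 $g;_\gamma\alpha\{a_i\mapsto f_i\}_i\Rightarrow\alpha\{a_i\mapsto g;_\gamma f_i\}_i$, (5),(6) $\alpha[a]f;_\gamma g\Rightarrow\alpha[a](f;_\gamma g)$ and dual, (7),(8) $\alpha\langle(\alpha_i)\mapsto f\rangle;_\gamma g\Rightarrow\alpha\langle(\alpha_i)\mapsto f;_\gamma g\rangle$ and dual, (9),(10) moving the cut into the branch $\alpha_k$ of a fork whose channel set $\Lambda_k$ contains $\gamma$), the principal rewrites (11) $\gamma[a_k]f;_\gamma\gamma\{a_i\mapsto g_i\}_i\Rightarrow f;_\gamma g_k$, (12) its dual, (13) $\gamma\langle\alpha_i\mid\Lambda_i\mapsto f_i\rangle_{i=1}^n;_\gamma\gamma\langle(\alpha_i)_{i=1}^n\mapsto g\rangle\Rightarrow f_n;_{\alpha_n}(\cdots(f_1;_{\alpha_1}g)\cdots)$, (14) its dual, and the permuting conversions (15)–(24) which interchange two consecutive rules acting on distinct channels $\alpha,\beta$ (e.g. $\alpha\{a_i\mapsto\beta\{b_j\mapsto f_{ij}\}_j\}_i\leftrightarrow\beta\{b_j\mapsto\alpha\{a_i\mapsto f_{ij}\}_i\}_j$, $\alpha[a]\beta[b]f\leftrightarrow\beta[b]\alpha[a]f$, etc.) whenever both sides are well typed. $\mathsf{CProc}(\mathcal{A})$ is the polycategory whose objects are formulas, whose morphisms $\Gamma\to\Delta$ are $\sim$-classes of terms of type $\Gamma\vdash\Delta$, with identities $1_X$ and composition by cut. In a polycategory, $\sum_iX_i$ is a poly-sum of the $X_i$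 if there is a bijection between families $\{f_i:\Gamma,X_i\to\Delta\}_i$ and maps $\alpha\{f_i\}_i:\Gamma,\sum_iX_i\to\Delta$, natural in that $h;_\gamma\alpha\{f_i\}_i=\alpha\{h;_\gamma f_i\}_i$ and $\alpha\{f_i\}_i;_\gamma h=\alpha\{f_i;_\gamma h\}_i$ for $\alpha\neq\gamma$; poly-products are the dual notion. *)

theory Defs
  imports Main "HOL-Library.FuncSet"
begin

section \<open>The polycategory A (its data: objects = type 'a, maps = type 'm)\<close>

text \<open>A map f of A has a list of source objects src f and target objects tgt f;
  idm A is the identity on the object A; cmp f i j g composes the i-th output
  of f with the j-th input of g (symmetric, unrestricted cut).\<close>

definition polycategory ::
  "('m \<Rightarrow> 'a list) \<Rightarrow> ('m \<Rightarrow> 'a list) \<Rightarrow> ('a \<Rightarrow> 'm) \<Rightarrow> ('m \<Rightarrow> nat \<Rightarrow> nat \<Rightarrow> 'm \<Rightarrow> 'm) \<Rightarrow> bool"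
where
  "polycategory src tgt idm cmp \<longleftrightarrow>
     (\<forall>A. src (idm A) = [A] \<and> tgt (idm A) = [A]) \<and>
     (\<forall>f g i j. i < length (tgt f) \<and> j < length (src g) \<and> tgt f ! i = src g ! j \<longrightarrow>
        src (cmp f i j g) = take j (src g) @ src f @ drop (Suc j) (src g) \<and>
        tgt (cmp f i j g) = take i (tgt f) @ tgt g @ drop (Suc i) (tgt f)) \<and>
     (\<forall>A g j. j < length (src g) \<and> src g ! j = A \<longrightarrow> cmp (idm A) 0 j g = g) \<and>
     (\<forall>A f i. i < length (tgt f) \<and> tgt f ! i = A \<longrightarrow> cmp f i 0 (idm A) = f) \<and>
     (\<forall>f g h i j k l. i < length (tgt f) \<and> j < length (src g) \<and> tgt f ! i = src g ! j \<and>
        k < length (tgt g) \<and> l < length (src h) \<and> tgt g ! k = src h ! l \<longrightarrow>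
        cmp (cmp f i j g) (i + k) l h = cmp f i (l + j) (cmp g k l h))"

datatype ('a, 'e) fm =
    Atom 'a
  | Sum "('e \<times> ('a, 'e) fm) list"
  | Prod "('e \<times> ('a, 'e) fm) list"
  | Tens "('a, 'e) fm list"
  | Par "('a, 'e) fm list"

inductive wf_fm :: "('a, 'e) fm \<Rightarrow> bool" where
  "wf_fm (Atom A)"
| "distinct (map fst qs) \<Longrightarrow> \<forall>p\<in>set qs. wf_fm (snd p) \<Longrightarrow> wf_fm (Sum qs)"
| "distinct (map fst qs) \<Longrightarrow> \<forall>p\<in>set qs. wf_fm (snd p) \<Longrightarrow> wf_fm (Prod qs)"
| "\<forall>X\<in>set Xs. wf_fm X \<Longrightarrow> wf_fm (Tens Xs)"
| "\<forall>X\<in>set Xs. wf_fm X \<Longrightarrow> wf_fm (Par Xs)"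

text \<open>As in the paper, the same syntax is used for
  left and right rules: Case = cotuple/tuple \<alpha>{a_i \<mapsto> f_i}, Sel = projection/injection
  \<alpha>[a]f, Split = ltensor/rpar \<alpha>\<langle>(\<alpha>_i) \<mapsto> f\<rangle>, Fork = lpar/rtensor
  \<alpha>\<langle>\<alpha>_i | \<Lambda>_i \<mapsto> f_i\<rangle>_i; Eq \<alpha> A \<beta> is \<alpha> \<equiv>_A \<beta>; Ax m ins outs is the map m of A
  used as an axiom on the channels ins (inputs) and outs (outputs); Cut \<gamma> f g is f ;_\<gamma> g.\<close>

datatype ('a, 'm, 'e, 'c) tm =
    Eq 'c 'a 'c
  | Ax 'm "'c list" "'c list"
  | Case 'c "('e \<times> ('a, 'm, 'e, 'c) tm) list"
  | Sel 'c 'e "('a, 'm, 'e, 'c) tm"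
  | Split 'c "'c list" "('a, 'm, 'e, 'c) tm"
  | Fork 'c "('c \<times> 'c set \<times> ('a, 'm, 'e, 'c) tm) list"
  | Cut 'c "('a, 'm, 'e, 'c) tm" "('a, 'm, 'e, 'c) tm"

text \<open>All channel names occurring in a term (free, bound, or in channel-set annotations).\<close>
fun chans :: "('a, 'm, 'e, 'c) tm \<Rightarrow> 'c set" where
  "chans (Eq \<alpha> A \<beta>) = {\<alpha>, \<beta>}"
| "chans (Ax m ins outs) = set ins \<union> set outs"
| "chans (Case \<alpha> ps) = insert \<alpha> (\<Union> (set (map (\<lambda>p. chans (snd p)) ps)))"
| "chans (Sel \<alpha> a f) = insert \<alpha> (chans f)"
| "chans (Split \<alpha> cs f) = insert \<alpha> (set cs \<union> chans f)"
| "chans (Fork \<alpha> bs) = insert \<alpha> (\<Union> (set (map (\<lambda>b. insert (fst b) (fst (snd b) \<union> chans (snd (snd b)))) bs)))"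
| "chans (Cut \<gamma> f g) = insert \<gamma> (chans f \<union> chans g)"

text \<open>Renaming every occurrence of the channel x into y (used only with y fresh).\<close>
fun ren :: "'c \<Rightarrow> 'c \<Rightarrow> ('a, 'm, 'e, 'c) tm \<Rightarrow> ('a, 'm, 'e, 'c) tm" where
  "ren x y (Eq \<alpha> A \<beta>) = Eq (if \<alpha> = x then y else \<alpha>) A (if \<beta> = x then y else \<beta>)"
| "ren x y (Ax m ins outs) = Ax m (map (\<lambda>c. if c = x then y else c) ins) (map (\<lambda>c. if c = x then y else c) outs)"
| "ren x y (Case \<alpha> ps) = Case (if \<alpha> = x then y else \<alpha>) (map (\<lambda>p. (fst p, ren x y (snd p))) ps)"
| "ren x y (Sel \<alpha> a f) = Sel (if \<alpha> = x then y else \<alpha>) a (ren x y f)"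
| "ren x y (Split \<alpha> cs f) = Split (if \<alpha> = x then y else \<alpha>) (map (\<lambda>c. if c = x then y else c) cs) (ren x y f)"
| "ren x y (Fork \<alpha> bs) = Fork (if \<alpha> = x then y else \<alpha>)
     (map (\<lambda>b. (if fst b = x then y else fst b, (\<lambda>c. if c = x then y else c) ` fst (snd b), ren x y (snd (snd b)))) bs)"
| "ren x y (Cut \<gamma> f g) = Cut (if \<gamma> = x then y else \<gamma>) (ren x y f) (ren x y g)"

text \<open>A side of a sequent is a finite assignment of formulas to channel names
  (channel-labelled formulas with distinct names; order is immaterial).\<close>
type_synonym ('c, 'a, 'e) side = "'c \<Rightarrow> ('a, 'e) fm option"

definition seq_ok :: "('c, 'a, 'e) side \<Rightarrow> ('c, 'a, 'e) side \<Rightarrow> bool" where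
  "seq_ok \<Gamma> \<Delta> \<longleftrightarrow> finite (dom \<Gamma>) \<and> finite (dom \<Delta>) \<and> dom \<Gamma> \<inter> dom \<Delta> = {} \<and>
     (\<forall>X \<in> ran \<Gamma> \<union> ran \<Delta>. wf_fm X)"

definition joinall :: "('c, 'a, 'e) side list \<Rightarrow> ('c, 'a, 'e) side" where
  "joinall Gs = foldr (++) Gs Map.empty"

inductive tp :: "('m \<Rightarrow> 'a list) \<Rightarrow> ('m \<Rightarrow> 'a list) \<Rightarrow> ('a, 'm, 'e, 'c) tm
                  \<Rightarrow> ('c, 'a, 'e) side \<Rightarrow> ('c, 'a, 'e) side \<Rightarrow> bool"
  for src tgt :: "'m \<Rightarrow> 'a list" where
  eq: "\<alpha> \<noteq> \<beta> \<Longrightarrow> tp src tgt (Eq \<alpha> A \<beta>) [\<alpha> \<mapsto> Atom A] [\<beta> \<mapsto> Atom A]"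
| ax: "distinct (ins @ outs) \<Longrightarrow> length ins = length (src m) \<Longrightarrow> length outs = length (tgt m) \<Longrightarrow>
       tp src tgt (Ax m ins outs) (map_of (zip ins (map Atom (src m)))) (map_of (zip outs (map Atom (tgt m))))"
| cotuple: "seq_ok (\<Gamma>(\<alpha> \<mapsto> Sum qs)) \<Delta> \<Longrightarrow> \<alpha> \<notin> dom \<Gamma> \<Longrightarrow> distinct (map fst qs) \<Longrightarrow>
       map fst ps = map fst qs \<Longrightarrow>
       \<forall>i < length ps. tp src tgt (snd (ps ! i)) (\<Gamma>(\<alpha> \<mapsto> snd (qs ! i))) \<Delta> \<Longrightarrow>
       tp src tgt (Case \<alpha> ps) (\<Gamma>(\<alpha> \<mapsto> Sum qs)) \<Delta>"
| tuple: "seq_ok \<Gamma> (\<Delta>(\<alpha> \<mapsto> Prod qs)) \<Longrightarrow> \<alpha> \<notin> dom \<Delta> \<Longrightarrow> distinct (map fst qs) \<Longrightarrow>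
       map fst ps = map fst qs \<Longrightarrow>
       \<forall>i < length ps. tp src tgt (snd (ps ! i)) \<Gamma> (\<Delta>(\<alpha> \<mapsto> snd (qs ! i))) \<Longrightarrow>
       tp src tgt (Case \<alpha> ps) \<Gamma> (\<Delta>(\<alpha> \<mapsto> Prod qs))"
| proj: "seq_ok (\<Gamma>(\<alpha> \<mapsto> Prod qs)) \<Delta> \<Longrightarrow> \<alpha> \<notin> dom \<Gamma> \<Longrightarrow> distinct (map fst qs) \<Longrightarrow>
       (a, X) \<in> set qs \<Longrightarrow> tp src tgt f (\<Gamma>(\<alpha> \<mapsto> X)) \<Delta> \<Longrightarrow>
       tp src tgt (Sel \<alpha> a f) (\<Gamma>(\<alpha> \<mapsto> Prod qs)) \<Delta>"
| inj: "seq_ok \<Gamma> (\<Delta>(\<alpha> \<mapsto> Sum qs)) \<Longrightarrow> \<alpha> \<notin> dom \<Delta> \<Longrightarrow> distinct (map fst qs) \<Longrightarrow>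
       (a, X) \<in> set qs \<Longrightarrow> tp src tgt f \<Gamma> (\<Delta>(\<alpha> \<mapsto> X)) \<Longrightarrow>
       tp src tgt (Sel \<alpha> a f) \<Gamma> (\<Delta>(\<alpha> \<mapsto> Sum qs))"
| ltensor: "seq_ok (\<Gamma>(\<alpha> \<mapsto> Tens Xs)) \<Delta> \<Longrightarrow> \<alpha> \<notin> dom \<Gamma> \<Longrightarrow>
       length cs = length Xs \<Longrightarrow> distinct cs \<Longrightarrow> set cs \<inter> (dom \<Gamma> \<union> dom \<Delta>) = {} \<Longrightarrow>
       tp src tgt f (\<Gamma> ++ map_of (zip cs Xs)) \<Delta> \<Longrightarrow>
       tp src tgt (Split \<alpha> cs f) (\<Gamma>(\<alpha> \<mapsto> Tens Xs)) \<Delta>"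
| rpar: "seq_ok \<Gamma> (\<Delta>(\<alpha> \<mapsto> Par Xs)) \<Longrightarrow> \<alpha> \<notin> dom \<Delta> \<Longrightarrow>
       length cs = length Xs \<Longrightarrow> distinct cs \<Longrightarrow> set cs \<inter> (dom \<Gamma> \<union> dom \<Delta>) = {} \<Longrightarrow>
       tp src tgt f \<Gamma> (\<Delta> ++ map_of (zip cs Xs)) \<Longrightarrow>
       tp src tgt (Split \<alpha> cs f) \<Gamma> (\<Delta>(\<alpha> \<mapsto> Par Xs))"
| lpar: "seq_ok ((joinall Gs)(\<alpha> \<mapsto> Par Xs)) (joinall Ds) \<Longrightarrow> \<alpha> \<notin> dom (joinall Gs) \<Longrightarrow>
       length bs = length Xs \<Longrightarrow> length Gs = length bs \<Longrightarrow> length Ds = length bs \<Longrightarrow>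
       \<forall>i < length bs. \<forall>j < length bs. i \<noteq> j \<longrightarrow>
          (dom (Gs ! i) \<union> dom (Ds ! i)) \<inter> (dom (Gs ! j) \<union> dom (Ds ! j)) = {} \<Longrightarrow>
       \<forall>i < length bs. fst (snd (bs ! i)) = dom (Gs ! i) \<union> dom (Ds ! i) \<and>
          fst (bs ! i) \<notin> fst (snd (bs ! i)) \<and>
          tp src tgt (snd (snd (bs ! i))) ((Gs ! i)(fst (bs ! i) \<mapsto> Xs ! i)) (Ds ! i) \<Longrightarrow>
       tp src tgt (Fork \<alpha> bs) ((joinall Gs)(\<alpha> \<mapsto> Par Xs)) (joinall Ds)"
| rtensor: "seq_ok (joinall Gs) ((joinall Ds)(\<alpha> \<mapsto> Tens Xs)) \<Longrightarrow> \<alpha> \<notin> dom (joinall Ds) \<Longrightarrow>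
       length bs = length Xs \<Longrightarrow> length Gs = length bs \<Longrightarrow> length Ds = length bs \<Longrightarrow>
       \<forall>i < length bs. \<forall>j < length bs. i \<noteq> j \<longrightarrow>
          (dom (Gs ! i) \<union> dom (Ds ! i)) \<inter> (dom (Gs ! j) \<union> dom (Ds ! j)) = {} \<Longrightarrow>
       \<forall>i < length bs. fst (snd (bs ! i)) = dom (Gs ! i) \<union> dom (Ds ! i) \<and>
          fst (bs ! i) \<notin> fst (snd (bs ! i)) \<and>
          tp src tgt (snd (snd (bs ! i))) (Gs ! i) ((Ds ! i)(fst (bs ! i) \<mapsto> Xs ! i)) \<Longrightarrow>
       tp src tgt (Fork \<alpha> bs) (joinall Gs) ((joinall Ds)(\<alpha> \<mapsto> Tens Xs))"
| cut: "tp src tgt f \<Gamma> (\<Delta>(\<gamma> \<mapsto> Z)) \<Longrightarrow> tp src tgt g (\<Gamma>'(\<gamma> \<mapsto> Z)) \<Delta>' \<Longrightarrow>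
       \<gamma> \<notin> dom \<Gamma> \<union> dom \<Delta> \<union> dom \<Gamma>' \<union> dom \<Delta>' \<Longrightarrow>
       (dom \<Gamma> \<union> dom \<Delta>) \<inter> (dom \<Gamma>' \<union> dom \<Delta>') = {} \<Longrightarrow>
       tp src tgt (Cut \<gamma> f g) (\<Gamma> ++ \<Gamma>') (\<Delta> ++ \<Delta>')"

section \<open>Identity terms 1_X :: \<alpha>:X \<turnstile> \<beta>:X, defined by expansion (bound names arbitrary)\<close>

inductive is_id :: "('a, 'e) fm \<Rightarrow> 'c \<Rightarrow> 'c \<Rightarrow> ('a, 'm, 'e, 'c) tm \<Rightarrow> bool" where
  "\<alpha> \<noteq> \<beta> \<Longrightarrow> is_id (Atom A) \<alpha> \<beta> (Eq \<alpha> A \<beta>)"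
| "\<alpha> \<noteq> \<beta> \<Longrightarrow> length ts = length qs \<Longrightarrow>
   \<forall>i < length qs. is_id (snd (qs ! i)) \<alpha> \<beta> (ts ! i) \<Longrightarrow>
   is_id (Sum qs) \<alpha> \<beta> (Case \<alpha> (map (\<lambda>i. (fst (qs ! i), Sel \<beta> (fst (qs ! i)) (ts ! i))) [0..<length qs]))"
| "\<alpha> \<noteq> \<beta> \<Longrightarrow> length ts = length qs \<Longrightarrow>
   \<forall>i < length qs. is_id (snd (qs ! i)) \<alpha> \<beta> (ts ! i) \<Longrightarrow>
   is_id (Prod qs) \<alpha> \<beta> (Case \<beta> (map (\<lambda>i. (fst (qs ! i), Sel \<alpha> (fst (qs ! i)) (ts ! i))) [0..<length qs]))"
| "\<alpha> \<noteq> \<beta> \<Longrightarrow> length cs = length Xs \<Longrightarrow> length ds = length Xs \<Longrightarrow> length ts = length Xs \<Longrightarrow>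
   distinct (cs @ ds) \<Longrightarrow> \<alpha> \<notin> set (cs @ ds) \<Longrightarrow> \<beta> \<notin> set (cs @ ds) \<Longrightarrow>
   \<forall>i < length Xs. is_id (Xs ! i) (cs ! i) (ds ! i) (ts ! i) \<Longrightarrow>
   is_id (Tens Xs) \<alpha> \<beta> (Split \<alpha> cs (Fork \<beta> (map (\<lambda>i. (ds ! i, {cs ! i}, ts ! i)) [0..<length Xs])))"
| "\<alpha> \<noteq> \<beta> \<Longrightarrow> length cs = length Xs \<Longrightarrow> length ds = length Xs \<Longrightarrow> length ts = length Xs \<Longrightarrow>
   distinct (cs @ ds) \<Longrightarrow> \<alpha> \<notin> set (cs @ ds) \<Longrightarrow> \<beta> \<notin> set (cs @ ds) \<Longrightarrow>
   \<forall>i < length Xs. is_id (Xs ! i) (cs ! i) (ds ! i) (ts ! i) \<Longrightarrow>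
   is_id (Par Xs) \<alpha> \<beta> (Split \<beta> ds (Fork \<alpha> (map (\<lambda>i. (cs ! i, {ds ! i}, ts ! i)) [0..<length Xs])))"

section \<open>Generating steps of \<sim>\<close>

inductive step :: "('a, 'm, 'e, 'c) tm \<Rightarrow> ('a, 'm, 'e, 'c) tm \<Rightarrow> bool" where
  alpha_cut: "y \<notin> chans f \<Longrightarrow> y \<notin> chans g \<Longrightarrow> step (Cut \<gamma> f g) (Cut y (ren \<gamma> y f) (ren \<gamma> y g))"
| alpha_split: "k < length cs \<Longrightarrow> y \<notin> chans f \<Longrightarrow> y \<notin> set cs \<Longrightarrow>
     step (Split \<alpha> cs f) (Split \<alpha> (cs[k := y]) (ren (cs ! k) y f))"
| alpha_fork: "k < length bs \<Longrightarrow> bs ! k = (c, L, f) \<Longrightarrow> y \<notin> chans f \<Longrightarrow>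
     step (Fork \<alpha> bs) (Fork \<alpha> (bs[k := (y, L, ren c y f)]))"
  \<comment> \<open>(1), (2): cuts with identities\<close>
| r1: "is_id Z \<gamma> \<delta> i \<Longrightarrow> \<delta> \<notin> chans f \<Longrightarrow> step (Cut \<gamma> f i) (ren \<gamma> \<delta> f)"
| r2: "is_id Z \<delta> \<gamma> i \<Longrightarrow> \<delta> \<notin> chans f \<Longrightarrow> step (Cut \<gamma> i f) (ren \<gamma> \<delta> f)"
  \<comment> \<open>(3)-(10): commuting cuts\<close>
| r3: "\<alpha> \<noteq> \<gamma> \<Longrightarrow> step (Cut \<gamma> (Case \<alpha> ps) g) (Case \<alpha> (map (\<lambda>(a, f). (a, Cut \<gamma> f g)) ps))"
| r4: "\<alpha> \<noteq> \<gamma> \<Longrightarrow> step (Cut \<gamma> g (Case \<alpha> ps)) (Case \<alpha> (map (\<lambda>(a, f). (a, Cut \<gamma> g f)) ps))"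
| r5: "\<alpha> \<noteq> \<gamma> \<Longrightarrow> step (Cut \<gamma> (Sel \<alpha> a f) g) (Sel \<alpha> a (Cut \<gamma> f g))"
| r6: "\<alpha> \<noteq> \<gamma> \<Longrightarrow> step (Cut \<gamma> g (Sel \<alpha> a f)) (Sel \<alpha> a (Cut \<gamma> g f))"
| r7: "\<alpha> \<noteq> \<gamma> \<Longrightarrow> \<gamma> \<notin> set cs \<Longrightarrow> set cs \<inter> chans g = {} \<Longrightarrow>
     step (Cut \<gamma> (Split \<alpha> cs f) g) (Split \<alpha> cs (Cut \<gamma> f g))"
| r8: "\<alpha> \<noteq> \<gamma> \<Longrightarrow> \<gamma> \<notin> set cs \<Longrightarrow> set cs \<inter> chans g = {} \<Longrightarrow>
     step (Cut \<gamma> g (Split \<alpha> cs f)) (Split \<alpha> cs (Cut \<gamma> g f))"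
| r9: "\<alpha> \<noteq> \<gamma> \<Longrightarrow> k < length bs \<Longrightarrow> bs ! k = (c, L, f) \<Longrightarrow> \<gamma> \<in> L \<Longrightarrow> c \<noteq> \<gamma> \<Longrightarrow> c \<notin> chans g \<Longrightarrow>
     step (Cut \<gamma> (Fork \<alpha> bs) g) (Fork \<alpha> (bs[k := (c, L', Cut \<gamma> f g)]))"
| r10: "\<alpha> \<noteq> \<gamma> \<Longrightarrow> k < length bs \<Longrightarrow> bs ! k = (c, L, f) \<Longrightarrow> \<gamma> \<in> L \<Longrightarrow> c \<noteq> \<gamma> \<Longrightarrow> c \<notin> chans g \<Longrightarrow>
     step (Cut \<gamma> g (Fork \<alpha> bs)) (Fork \<alpha> (bs[k := (c, L', Cut \<gamma> g f)]))"
  \<comment> \<open>(11)-(14): principal cuts\<close>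
| r11: "(a, g) \<in> set ps \<Longrightarrow> step (Cut \<gamma> (Sel \<gamma> a f) (Case \<gamma> ps)) (Cut \<gamma> f g)"
| r12: "(a, f) \<in> set ps \<Longrightarrow> step (Cut \<gamma> (Case \<gamma> ps) (Sel \<gamma> a g)) (Cut \<gamma> f g)"
| r13: "cs = map fst bs \<Longrightarrow>
     step (Cut \<gamma> (Fork \<gamma> bs) (Split \<gamma> cs g)) (foldl (\<lambda>acc b. Cut (fst b) (snd (snd b)) acc) g bs)"
| r14: "cs = map fst bs \<Longrightarrow>
     step (Cut \<gamma> (Split \<gamma> cs f) (Fork \<gamma> bs)) (foldl (\<lambda>acc b. Cut (fst b) acc (snd (snd b))) f bs)"
  \<comment> \<open>(15)-(24): permuting conversions of two rules on distinct channels\<close>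
| p_case_case: "\<alpha> \<noteq> \<beta> \<Longrightarrow>
     step (Case \<alpha> (map (\<lambda>i. (as ! i, Case \<beta> (map (\<lambda>j. (bs ! j, F i j)) [0..<length bs]))) [0..<length as]))
          (Case \<beta> (map (\<lambda>j. (bs ! j, Case \<alpha> (map (\<lambda>i. (as ! i, F i j)) [0..<length as]))) [0..<length bs]))"
| p_case_sel: "\<alpha> \<noteq> \<beta> \<Longrightarrow>
     step (Case \<alpha> (map (\<lambda>(a, f). (a, Sel \<beta> b f)) ps)) (Sel \<beta> b (Case \<alpha> ps))"
| p_case_split: "\<alpha> \<noteq> \<beta> \<Longrightarrow> \<alpha> \<notin> set cs \<Longrightarrow>
     step (Case \<alpha> (map (\<lambda>(a, f). (a, Split \<beta> cs f)) ps)) (Split \<beta> cs (Case \<alpha> ps))"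
| p_case_fork: "\<alpha> \<noteq> \<beta> \<Longrightarrow> k < length bs \<Longrightarrow> \<alpha> \<noteq> c \<Longrightarrow>
     step (Case \<alpha> (map (\<lambda>(a, f). (a, Fork \<beta> (bs[k := (c, L, f)]))) ps))
          (Fork \<beta> (bs[k := (c, L, Case \<alpha> ps)]))"
| p_sel_sel: "\<alpha> \<noteq> \<beta> \<Longrightarrow> step (Sel \<alpha> a (Sel \<beta> b f)) (Sel \<beta> b (Sel \<alpha> a f))"
| p_sel_split: "\<alpha> \<noteq> \<beta> \<Longrightarrow> \<alpha> \<notin> set cs \<Longrightarrow> step (Sel \<alpha> a (Split \<beta> cs f)) (Split \<beta> cs (Sel \<alpha> a f))"
| p_sel_fork: "\<alpha> \<noteq> \<beta> \<Longrightarrow> k < length bs \<Longrightarrow> \<alpha> \<noteq> c \<Longrightarrow>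
     step (Sel \<alpha> a (Fork \<beta> (bs[k := (c, L, f)]))) (Fork \<beta> (bs[k := (c, L, Sel \<alpha> a f)]))"
| p_split_split: "\<alpha> \<noteq> \<beta> \<Longrightarrow> \<alpha> \<notin> set ds \<Longrightarrow> \<beta> \<notin> set cs \<Longrightarrow> set cs \<inter> set ds = {} \<Longrightarrow>
     step (Split \<alpha> cs (Split \<beta> ds f)) (Split \<beta> ds (Split \<alpha> cs f))"
| p_split_fork: "\<alpha> \<noteq> \<beta> \<Longrightarrow> k < length bs \<Longrightarrow> \<alpha> \<noteq> c \<Longrightarrow> c \<notin> set cs \<Longrightarrow> \<beta> \<notin> set cs \<Longrightarrow>
     step (Split \<alpha> cs (Fork \<beta> (bs[k := (c, L, f)]))) (Fork \<beta> (bs[k := (c, L', Split \<alpha> cs f)]))"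
| p_fork_fork: "\<alpha> \<noteq> \<beta> \<Longrightarrow> k < length as \<Longrightarrow> l < length bs \<Longrightarrow> a \<noteq> \<beta> \<Longrightarrow> b \<noteq> \<alpha> \<Longrightarrow> a \<noteq> b \<Longrightarrow>
     step (Fork \<alpha> (as[k := (a, L, Fork \<beta> (bs[l := (b, M, g)]))]))
          (Fork \<beta> (bs[l := (b, M', Fork \<alpha> (as[k := (a, L', g)]))]))"

inductive cstep :: "('a, 'm, 'e, 'c) tm \<Rightarrow> ('a, 'm, 'e, 'c) tm \<Rightarrow> bool" where
  "step t u \<Longrightarrow> cstep t u"
| "cstep f f' \<Longrightarrow> k < length ps \<Longrightarrow> ps ! k = (a, f) \<Longrightarrow> cstep (Case \<alpha> ps) (Case \<alpha> (ps[k := (a, f')]))"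
| "cstep f f' \<Longrightarrow> cstep (Sel \<alpha> a f) (Sel \<alpha> a f')"
| "cstep f f' \<Longrightarrow> cstep (Split \<alpha> cs f) (Split \<alpha> cs f')"
| "cstep f f' \<Longrightarrow> k < length bs \<Longrightarrow> bs ! k = (c, L, f) \<Longrightarrow> cstep (Fork \<alpha> bs) (Fork \<alpha> (bs[k := (c, L, f')]))"
| "cstep f f' \<Longrightarrow> cstep (Cut \<gamma> f g) (Cut \<gamma> f' g)"
| "cstep g g' \<Longrightarrow> cstep (Cut \<gamma> f g) (Cut \<gamma> f g')"

section \<open>The polycategory CProc(A): hom-sets of \<sim>-classes\<close>

text \<open>\<sim> on terms of type \<Gamma> \<turnstile> \<Delta>: the equivalence relation generated by the
  (context-closed) steps, applied whenever both sides are well typed of type \<Gamma> \<turnstile> \<Delta>.\<close>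
definition conv1 :: "('m \<Rightarrow> 'a list) \<Rightarrow> ('m \<Rightarrow> 'a list) \<Rightarrow> ('c, 'a, 'e) side \<Rightarrow> ('c, 'a, 'e) side
     \<Rightarrow> ('a, 'm, 'e, 'c) tm \<Rightarrow> ('a, 'm, 'e, 'c) tm \<Rightarrow> bool" where
  "conv1 src tgt \<Gamma> \<Delta> t u \<longleftrightarrow> tp src tgt t \<Gamma> \<Delta> \<and> tp src tgt u \<Gamma> \<Delta> \<and> (cstep t u \<or> cstep u t)"

definition sim :: "('m \<Rightarrow> 'a list) \<Rightarrow> ('m \<Rightarrow> 'a list) \<Rightarrow> ('c, 'a, 'e) side \<Rightarrow> ('c, 'a, 'e) side
     \<Rightarrow> ('a, 'm, 'e, 'c) tm \<Rightarrow> ('a, 'm, 'e, 'c) tm \<Rightarrow> bool" where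
  "sim src tgt \<Gamma> \<Delta> t u \<longleftrightarrow> tp src tgt t \<Gamma> \<Delta> \<and> (conv1 src tgt \<Gamma> \<Delta>)\<^sup>*\<^sup>* t u"

definition cls :: "('m \<Rightarrow> 'a list) \<Rightarrow> ('m \<Rightarrow> 'a list) \<Rightarrow> ('c, 'a, 'e) side \<Rightarrow> ('c, 'a, 'e) side
     \<Rightarrow> ('a, 'm, 'e, 'c) tm \<Rightarrow> ('a, 'm, 'e, 'c) tm set" where
  "cls src tgt \<Gamma> \<Delta> t = {u. sim src tgt \<Gamma> \<Delta> t u}"

definition hom :: "('m \<Rightarrow> 'a list) \<Rightarrow> ('m \<Rightarrow> 'a list) \<Rightarrow> ('c, 'a, 'e) side \<Rightarrow> ('c, 'a, 'e) side
     \<Rightarrow> ('a, 'm, 'e, 'c) tm set set" where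
  "hom src tgt \<Gamma> \<Delta> = cls src tgt \<Gamma> \<Delta> ` {t. tp src tgt t \<Gamma> \<Delta>}"

text \<open>S is a poly-sum of the family Xs: a bijection, for all \<Gamma>, \<Delta> and (fresh) \<alpha>,
  between families {f_i : \<Gamma>, \<alpha>:X_i \<rightarrow> \<Delta>}_i and maps \<Gamma>, \<alpha>:S \<rightarrow> \<Delta>, natural in
  cuts (composition) along a channel \<gamma> \<noteq> \<alpha> on either side.\<close>
definition is_poly_sum :: "'c itself \<Rightarrow> ('m \<Rightarrow> 'a list) \<Rightarrow> ('m \<Rightarrow> 'a list)
     \<Rightarrow> ('a, 'e) fm \<Rightarrow> ('a, 'e) fm list \<Rightarrow> bool" where
  "is_poly_sum (_ :: 'c itself) src tgt S Xs \<longleftrightarrow>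
   (\<exists>\<Phi> :: ('c, 'a, 'e) side \<Rightarrow> ('c, 'a, 'e) side \<Rightarrow> 'c \<Rightarrow> (nat \<Rightarrow> ('a, 'm, 'e, 'c) tm set)
            \<Rightarrow> ('a, 'm, 'e, 'c) tm set.
     (\<forall>\<Gamma> \<Delta> \<alpha>. seq_ok (\<Gamma>(\<alpha> \<mapsto> S)) \<Delta> \<and> \<alpha> \<notin> dom \<Gamma> \<longrightarrow>
        bij_betw (\<Phi> \<Gamma> \<Delta> \<alpha>)
          (Pi\<^sub>E {..<length Xs} (\<lambda>i. hom src tgt (\<Gamma>(\<alpha> \<mapsto> Xs ! i)) \<Delta>))
          (hom src tgt (\<Gamma>(\<alpha> \<mapsto> S)) \<Delta>)) \<and>
     \<comment> \<open>h ;_\<gamma> \<alpha>{f_i}_i = \<alpha>{h ;_\<gamma> f_i}_i\<close>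
     (\<forall>\<Gamma> \<Delta> \<alpha> \<Gamma>0 \<Delta>0 \<gamma> Z h fs t.
        seq_ok (\<Gamma>(\<alpha> \<mapsto> S)) \<Delta> \<and> \<alpha> \<notin> dom \<Gamma> \<and> \<gamma> \<noteq> \<alpha> \<and> \<Gamma> \<gamma> = Some Z \<and>
        tp src tgt h \<Gamma>0 (\<Delta>0(\<gamma> \<mapsto> Z)) \<and> \<gamma> \<notin> dom \<Gamma>0 \<union> dom \<Delta>0 \<and>
        (dom \<Gamma>0 \<union> dom \<Delta>0) \<inter> (dom \<Gamma> \<union> dom \<Delta> \<union> {\<alpha>}) = {} \<and>
        (\<forall>i < length Xs. tp src tgt (fs i) (\<Gamma>(\<alpha> \<mapsto> Xs ! i)) \<Delta>) \<and>
        t \<in> \<Phi> \<Gamma> \<Delta> \<alpha> (\<lambda>i\<in>{..<length Xs}. cls src tgt (\<Gamma>(\<alpha> \<mapsto> Xs ! i)) \<Delta> (fs i))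
      \<longrightarrow> cls src tgt ((\<Gamma>0 ++ \<Gamma>(\<gamma> := None))(\<alpha> \<mapsto> S)) (\<Delta>0 ++ \<Delta>) (Cut \<gamma> h t)
          = \<Phi> (\<Gamma>0 ++ \<Gamma>(\<gamma> := None)) (\<Delta>0 ++ \<Delta>) \<alpha>
              (\<lambda>i\<in>{..<length Xs}. cls src tgt ((\<Gamma>0 ++ \<Gamma>(\<gamma> := None))(\<alpha> \<mapsto> Xs ! i)) (\<Delta>0 ++ \<Delta>)
                                    (Cut \<gamma> h (fs i)))) \<and>
     \<comment> \<open>\<alpha>{f_i}_i ;_\<gamma> h = \<alpha>{f_i ;_\<gamma> h}_i\<close>
     (\<forall>\<Gamma> \<Delta> \<alpha> \<Gamma>0 \<Delta>0 \<gamma> Z h fs t.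
        seq_ok (\<Gamma>(\<alpha> \<mapsto> S)) \<Delta> \<and> \<alpha> \<notin> dom \<Gamma> \<and> \<gamma> \<noteq> \<alpha> \<and> \<Delta> \<gamma> = Some Z \<and>
        tp src tgt h (\<Gamma>0(\<gamma> \<mapsto> Z)) \<Delta>0 \<and> \<gamma> \<notin> dom \<Gamma>0 \<union> dom \<Delta>0 \<and>
        (dom \<Gamma>0 \<union> dom \<Delta>0) \<inter> (dom \<Gamma> \<union> dom \<Delta> \<union> {\<alpha>}) = {} \<and>
        (\<forall>i < length Xs. tp src tgt (fs i) (\<Gamma>(\<alpha> \<mapsto> Xs ! i)) \<Delta>) \<and>
        t \<in> \<Phi> \<Gamma> \<Delta> \<alpha> (\<lambda>i\<in>{..<length Xs}. cls src tgt (\<Gamma>(\<alpha> \<mapsto> Xs ! i)) \<Delta> (fs i))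
      \<longrightarrow> cls src tgt ((\<Gamma> ++ \<Gamma>0)(\<alpha> \<mapsto> S)) (\<Delta>(\<gamma> := None) ++ \<Delta>0) (Cut \<gamma> t h)
          = \<Phi> (\<Gamma> ++ \<Gamma>0) (\<Delta>(\<gamma> := None) ++ \<Delta>0) \<alpha>
              (\<lambda>i\<in>{..<length Xs}. cls src tgt ((\<Gamma> ++ \<Gamma>0)(\<alpha> \<mapsto> Xs ! i)) (\<Delta>(\<gamma> := None) ++ \<Delta>0)
                                    (Cut \<gamma> (fs i) h))))"

text \<open>The dual notion: S is a poly-product of Xs (families {f_i : \<Gamma> \<rightarrow> \<alpha>:X_i, \<Delta>}_i
  correspond naturally to maps \<Gamma> \<rightarrow> \<alpha>:S, \<Delta>).\<close>
definition is_poly_product :: "'c itself \<Rightarrow> ('m \<Rightarrow> 'a list) \<Rightarrow> ('m \<Rightarrow> 'a list)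
     \<Rightarrow> ('a, 'e) fm \<Rightarrow> ('a, 'e) fm list \<Rightarrow> bool" where
  "is_poly_product (_ :: 'c itself) src tgt S Xs \<longleftrightarrow>
   (\<exists>\<Phi> :: ('c, 'a, 'e) side \<Rightarrow> ('c, 'a, 'e) side \<Rightarrow> 'c \<Rightarrow> (nat \<Rightarrow> ('a, 'm, 'e, 'c) tm set)
            \<Rightarrow> ('a, 'm, 'e, 'c) tm set.
     (\<forall>\<Gamma> \<Delta> \<alpha>. seq_ok \<Gamma> (\<Delta>(\<alpha> \<mapsto> S)) \<and> \<alpha> \<notin> dom \<Delta> \<longrightarrow>
        bij_betw (\<Phi> \<Gamma> \<Delta> \<alpha>)
          (Pi\<^sub>E {..<length Xs} (\<lambda>i. hom src tgt \<Gamma> (\<Delta>(\<alpha> \<mapsto> Xs ! i))))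
          (hom src tgt \<Gamma> (\<Delta>(\<alpha> \<mapsto> S)))) \<and>
     \<comment> \<open>h ;_\<gamma> \<alpha>{f_i}_i = \<alpha>{h ;_\<gamma> f_i}_i\<close>
     (\<forall>\<Gamma> \<Delta> \<alpha> \<Gamma>0 \<Delta>0 \<gamma> Z h fs t.
        seq_ok \<Gamma> (\<Delta>(\<alpha> \<mapsto> S)) \<and> \<alpha> \<notin> dom \<Delta> \<and> \<gamma> \<noteq> \<alpha> \<and> \<Gamma> \<gamma> = Some Z \<and>
        tp src tgt h \<Gamma>0 (\<Delta>0(\<gamma> \<mapsto> Z)) \<and> \<gamma> \<notin> dom \<Gamma>0 \<union> dom \<Delta>0 \<and>
        (dom \<Gamma>0 \<union> dom \<Delta>0) \<inter> (dom \<Gamma> \<union> dom \<Delta> \<union> {\<alpha>}) = {} \<and>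
        (\<forall>i < length Xs. tp src tgt (fs i) \<Gamma> (\<Delta>(\<alpha> \<mapsto> Xs ! i))) \<and>
        t \<in> \<Phi> \<Gamma> \<Delta> \<alpha> (\<lambda>i\<in>{..<length Xs}. cls src tgt \<Gamma> (\<Delta>(\<alpha> \<mapsto> Xs ! i)) (fs i))
      \<longrightarrow> cls src tgt (\<Gamma>0 ++ \<Gamma>(\<gamma> := None)) ((\<Delta>0 ++ \<Delta>)(\<alpha> \<mapsto> S)) (Cut \<gamma> h t)
          = \<Phi> (\<Gamma>0 ++ \<Gamma>(\<gamma> := None)) (\<Delta>0 ++ \<Delta>) \<alpha>
              (\<lambda>i\<in>{..<length Xs}. cls src tgt (\<Gamma>0 ++ \<Gamma>(\<gamma> := None)) ((\<Delta>0 ++ \<Delta>)(\<alpha> \<mapsto> Xs ! i))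
                                    (Cut \<gamma> h (fs i)))) \<and>
     \<comment> \<open>\<alpha>{f_i}_i ;_\<gamma> h = \<alpha>{f_i ;_\<gamma> h}_i\<close>
     (\<forall>\<Gamma> \<Delta> \<alpha> \<Gamma>0 \<Delta>0 \<gamma> Z h fs t.
        seq_ok \<Gamma> (\<Delta>(\<alpha> \<mapsto> S)) \<and> \<alpha> \<notin> dom \<Delta> \<and> \<gamma> \<noteq> \<alpha> \<and> \<Delta> \<gamma> = Some Z \<and>
        tp src tgt h (\<Gamma>0(\<gamma> \<mapsto> Z)) \<Delta>0 \<and> \<gamma> \<notin> dom \<Gamma>0 \<union> dom \<Delta>0 \<and>
        (dom \<Gamma>0 \<union> dom \<Delta>0) \<inter> (dom \<Gamma> \<union> dom \<Delta> \<union> {\<alpha>}) = {} \<and>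
        (\<forall>i < length Xs. tp src tgt (fs i) \<Gamma> (\<Delta>(\<alpha> \<mapsto> Xs ! i))) \<and>
        t \<in> \<Phi> \<Gamma> \<Delta> \<alpha> (\<lambda>i\<in>{..<length Xs}. cls src tgt \<Gamma> (\<Delta>(\<alpha> \<mapsto> Xs ! i)) (fs i))
      \<longrightarrow> cls src tgt (\<Gamma> ++ \<Gamma>0) ((\<Delta>(\<gamma> := None) ++ \<Delta>0)(\<alpha> \<mapsto> S)) (Cut \<gamma> t h)
          = \<Phi> (\<Gamma> ++ \<Gamma>0) (\<Delta>(\<gamma> := None) ++ \<Delta>0) \<alpha>
              (\<lambda>i\<in>{..<length Xs}. cls src tgt (\<Gamma> ++ \<Gamma>0) ((\<Delta>(\<gamma> := None) ++ \<Delta>0)(\<alpha> \<mapsto> Xs ! i))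
                                    (Cut \<gamma> (fs i) h))))"

end

theory Submission
  imports Defs
begin


definition sw :: "'c \<Rightarrow> 'c \<Rightarrow> 'c \<Rightarrow> 'c" where
  "sw x y c = (if c = x then y else if c = y then x else c)"

fun rs :: "('c \<Rightarrow> 'c) \<Rightarrow> ('a, 'm, 'e, 'c) tm \<Rightarrow> ('a, 'm, 'e, 'c) tm" where
  "rs s (Eq \<alpha> A \<beta>) = Eq (s \<alpha>) A (s \<beta>)"
| "rs s (Ax m ins outs) = Ax m (map s ins) (map s outs)"
| "rs s (Case \<alpha> ps) = Case (s \<alpha>) (map (\<lambda>p. (fst p, rs s (snd p))) ps)"
| "rs s (Sel \<alpha> a f) = Sel (s \<alpha>) a (rs s f)"
| "rs s (Split \<alpha> cs f) = Split (s \<alpha>) (map s cs) (rs s f)"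
| "rs s (Fork \<alpha> bs) = Fork (s \<alpha>) (map (\<lambda>b. (s (fst b), s ` fst (snd b), rs s (snd (snd b)))) bs)"
| "rs s (Cut \<gamma> f g) = Cut (s \<gamma>) (rs s f) (rs s g)"

lemma ren_rs: "ren x y t = rs (\<lambda>c. if c = x then y else c) t"
  by (induction x y t rule: ren.induct) auto

lemma rs_cong: "(\<forall>c\<in>chans t. s c = s' c) \<Longrightarrow> rs s t = rs s' t"
  by (induction s t rule: rs.induct) (fastforce intro!: image_cong)+

lemma rs_comp: "rs s (rs s' t) = rs (s \<circ> s') t"
  by (induction s' t rule: rs.induct) (auto simp: image_image)

lemma rs_id: "rs id t = t"
proof (induction t)
  case (Case x1 x2)
  then show ?case by (auto intro: map_idI)
next
  case (Fork x1 x2)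
  then show ?case by (auto intro!: map_idI)
qed auto

lemma chans_rs: "chans (rs s t) = s ` chans t"
  by (induction s t rule: rs.induct) (auto simp: image_Union image_UN)

lemma ren_sw: "y \<notin> chans t \<Longrightarrow> ren x y t = rs (sw x y) t"
  unfolding ren_rs by (rule rs_cong) (auto simp: sw_def)

lemma ren_ren: "y \<notin> chans t \<Longrightarrow> ren y x (ren x y t) = t"
proof -
  assume a: "y \<notin> chans t"
  have "ren y x (ren x y t) = rs ((\<lambda>c. if c = y then x else c) \<circ> (\<lambda>c. if c = x then y else c)) t"
    unfolding ren_rs rs_comp ..
  also have "\<dots> = rs id t" by (rule rs_cong) (use a in auto)
  finally show ?thesis by (simp add: rs_id)
qed

lemma ren_fresh: "x \<noteq> y \<Longrightarrow> x \<notin> chans (ren x y t)"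
  unfolding ren_rs chans_rs by auto

lemma seq_ok_alt: "seq_ok \<Gamma> \<Delta> \<longleftrightarrow> finite (dom \<Gamma>) \<and> finite (dom \<Delta>) \<and> dom \<Gamma> \<inter> dom \<Delta> = {} \<and>
   (\<forall>c X. \<Gamma> c = Some X \<longrightarrow> wf_fm X) \<and> (\<forall>c X. \<Delta> c = Some X \<longrightarrow> wf_fm X)"
  unfolding seq_ok_def ran_def by blast

lemma map_of_zip_Some: "length ks = length vs \<Longrightarrow> map_of (zip ks vs) c = Some v \<Longrightarrow> v \<in> set vs"
  by (metis in_set_zipE map_of_SomeD)

lemma tp_seq_ok: "tp src tgt t \<Gamma> \<Delta> \<Longrightarrow> seq_ok \<Gamma> \<Delta>"
proof (induction rule: tp.induct)
  case (eq \<alpha> \<beta> A)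
  then show ?case unfolding seq_ok_def by (simp add: wf_fm.intros)
next
  case (ax ins outs m)
  have 1: "\<forall>c X. map_of (zip ins (map Atom (src m))) c = Some X \<longrightarrow> wf_fm X"
    using map_of_zip_Some[of ins "map Atom (src m)"] ax by (auto intro: wf_fm.intros)
  have 2: "\<forall>c X. map_of (zip outs (map Atom (tgt m))) c = Some X \<longrightarrow> wf_fm X"
    using map_of_zip_Some[of outs "map Atom (tgt m)"] ax by (auto intro: wf_fm.intros)
  have 3: "dom (map_of (zip ins (map Atom (src m)))) = set ins"
    "dom (map_of (zip outs (map Atom (tgt m)))) = set outs" using ax by simp_all
  show ?case using 1 2 3 ax unfolding seq_ok_alt by simp
next
  case (cut f \<Gamma> \<Delta> \<gamma> Z g \<Gamma>' \<Delta>')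
  have w1: "\<forall>c X. \<Gamma> c = Some X \<longrightarrow> wf_fm X" "\<forall>c X. \<Delta>' c = Some X \<longrightarrow> wf_fm X"
    using cut.IH unfolding seq_ok_alt by blast+
  have w2: "\<forall>c X. \<Gamma>' c = Some X \<longrightarrow> wf_fm X"
  proof (intro allI impI)
    fix c X assume "\<Gamma>' c = Some X"
    moreover then have "c \<noteq> \<gamma>" using cut.hyps(3) by auto
    ultimately have "(\<Gamma>'(\<gamma> \<mapsto> Z)) c = Some X" by simp
    then show "wf_fm X" using cut.IH(2) unfolding seq_ok_alt by blast
  qed
  have w3: "\<forall>c X. \<Delta> c = Some X \<longrightarrow> wf_fm X"
  proof (intro allI impI)
    fix c X assume "\<Delta> c = Some X"
    moreover then have "c \<noteq> \<gamma>" using cut.hyps(3) by auto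
    ultimately have "(\<Delta>(\<gamma> \<mapsto> Z)) c = Some X" by simp
    then show "wf_fm X" using cut.IH(1) unfolding seq_ok_alt by blast
  qed
  have f: "finite (dom \<Gamma>)" "finite (dom \<Gamma>')" "finite (dom \<Delta>)" "finite (dom \<Delta>')"
    using cut.IH unfolding seq_ok_alt by auto
  have d: "dom \<Gamma> \<inter> dom \<Delta> = {}" "dom \<Gamma>' \<inter> dom \<Delta>' = {}"
    using cut.IH unfolding seq_ok_alt by auto
  show ?case unfolding seq_ok_alt
    using w1 w2 w3 f d cut.hyps(4) by (auto simp: map_add_Some_iff)
qed blast+

lemma seq_ok_upd_fin: "seq_ok (G(c \<mapsto> X)) D \<Longrightarrow> finite (dom G) \<and> finite (dom D)"
  unfolding seq_ok_def by auto

lemma seq_ok_upd_fin2: "seq_ok G (D(c \<mapsto> X)) \<Longrightarrow> finite (dom G) \<and> finite (dom D)"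
  unfolding seq_ok_def by auto

lemma tp_fin: "tp src tgt t \<Gamma> \<Delta> \<Longrightarrow> finite (chans t)"
proof (induction rule: tp.induct)
  case (cotuple \<Gamma> \<alpha> qs \<Delta> ps)
  then show ?case by (auto simp: in_set_conv_nth) (metis snd_conv)
next
  case (tuple \<Gamma> \<Delta> \<alpha> qs ps)
  then show ?case by (auto simp: in_set_conv_nth) (metis snd_conv)
next
  case (lpar Gs \<alpha> Xs Ds bs)
  have "\<forall>b\<in>set bs. finite (insert (fst b) (fst (snd b) \<union> chans (snd (snd b))))"
  proof
    fix b assume "b \<in> set bs"
    then obtain i where i: "i < length bs" "b = bs ! i" by (auto simp: in_set_conv_nth)
    have h: "fst (snd (bs ! i)) = dom (Gs ! i) \<union> dom (Ds ! i)" "finite (chans (snd (snd (bs ! i))))"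
      and t: "tp src tgt (snd (snd (bs ! i))) ((Gs ! i)(fst (bs ! i) \<mapsto> Xs ! i)) (Ds ! i)"
      using lpar.IH i(1) by blast+
    have "finite (dom (Gs ! i)) \<and> finite (dom (Ds ! i))"
      using seq_ok_upd_fin[OF tp_seq_ok[OF t]] .
    then show "finite (insert (fst b) (fst (snd b) \<union> chans (snd (snd b))))"
      using h i(2) by simp
  qed
  then show ?case by auto
next
  case (rtensor Gs Ds \<alpha> Xs bs)
  have "\<forall>b\<in>set bs. finite (insert (fst b) (fst (snd b) \<union> chans (snd (snd b))))"
  proof
    fix b assume "b \<in> set bs"
    then obtain i where i: "i < length bs" "b = bs ! i" by (auto simp: in_set_conv_nth)
    have h: "fst (snd (bs ! i)) = dom (Gs ! i) \<union> dom (Ds ! i)" "finite (chans (snd (snd (bs ! i))))"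
      and t: "tp src tgt (snd (snd (bs ! i))) (Gs ! i) ((Ds ! i)(fst (bs ! i) \<mapsto> Xs ! i))"
      using rtensor.IH i(1) by blast+
    have "finite (dom (Gs ! i)) \<and> finite (dom (Ds ! i))"
      using seq_ok_upd_fin2[OF tp_seq_ok[OF t]] .
    then show "finite (insert (fst b) (fst (snd b) \<union> chans (snd (snd b))))"
      using h i(2) by simp
  qed
  then show ?case by auto
qed auto

definition rn :: "('c \<Rightarrow> 'c) \<Rightarrow> ('c, 'a, 'e) side \<Rightarrow> ('c, 'a, 'e) side" where
  "rn r G = (\<lambda>c. G (r c))"

locale bijr =
  fixes s r :: "'c \<Rightarrow> 'c"
  assumes sr: "\<And>c. s (r c) = c" and rsi: "\<And>c. r (s c) = c"
begin

lemma inj_s: "inj s" by (metis injI rsi)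

lemma rn_upd: "rn r (G(a \<mapsto> v)) = (rn r G)(s a \<mapsto> v)"
  unfolding rn_def by (rule ext) (auto simp: sr rsi)

lemma rn_dom: "dom (rn r G) = s ` dom G"
  unfolding rn_def by (auto simp: dom_def image_def) (metis sr, metis rsi)

lemma rn_add: "rn r (G ++ H) = (rn r G) ++ (rn r H)"
  unfolding rn_def by (rule ext) (simp add: map_add_def)

lemma rn_empty: "rn r Map.empty = Map.empty"
  unfolding rn_def by (rule ext) simp

lemma rk_iff: "(r c = k) = (c = s k)" by (metis sr rsi)

lemma s_eq: "(s a = s b) = (a = b)" by (metis rsi)

lemma rn_map_of_aux: "map_of (zip ks vs) (r c) = map_of (zip (map s ks) vs) c"
proof (induction ks arbitrary: vs)
  case Nil
  then show ?case by simp
next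
  case (Cons k ks)
  then show ?case
    by (cases vs) (auto simp: rk_iff)
qed

lemma rn_map_of: "rn r (map_of (zip ks vs)) = map_of (zip (map s ks) vs)"
  unfolding rn_def by (intro ext) (rule rn_map_of_aux)

lemma rn_joinall: "rn r (joinall Gs) = joinall (map (rn r) Gs)"
  by (induction Gs) (simp_all add: joinall_def rn_empty rn_add)

lemma rn_seq_ok: "seq_ok G D \<Longrightarrow> seq_ok (rn r G) (rn r D)"
  unfolding seq_ok_alt rn_dom using inj_s
  by (auto simp: image_Int[symmetric] rn_def)

lemma s_notin: "(s a \<notin> s ` A) = (a \<notin> A)"
  using inj_s by (simp add: inj_image_mem_iff)

lemma rn_single: "rn r [a \<mapsto> v] = [s a \<mapsto> v]"
  by (simp add: rn_upd rn_empty)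

lemma tp_rs: "tp src tgt t \<Gamma> \<Delta> \<Longrightarrow> tp src tgt (rs s t) (rn r \<Gamma>) (rn r \<Delta>)"
proof (induction rule: tp.induct)
  case (eq \<alpha> \<beta> A)
  then show ?case unfolding rn_single rs.simps by (intro tp.eq) (simp add: inj_s inj_eq)
next
  case (ax ins outs m)
  then show ?case using inj_s by (auto simp: rn_map_of distinct_map s_eq intro!: tp.ax inj_on_subset[OF inj_s]) blast
next
  case (cotuple \<Gamma> \<alpha> qs \<Delta> ps)
  let ?ps = "map (\<lambda>p. (fst p, rs s (snd p))) ps"
  have "tp src tgt (Case (s \<alpha>) ?ps) ((rn r \<Gamma>)(s \<alpha> \<mapsto> Sum qs)) (rn r \<Delta>)"
  proof (rule tp.cotuple)
    show "seq_ok ((rn r \<Gamma>)(s \<alpha> \<mapsto> fm.Sum qs)) (rn r \<Delta>)"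
      using rn_seq_ok[OF cotuple.hyps(1)] by (simp only: rn_upd)
    show "s \<alpha> \<notin> dom (rn r \<Gamma>)" using cotuple.hyps(2) by (simp add: rn_dom s_notin)
    show "distinct (map fst qs)" by fact
    show "map fst ?ps = map fst qs" using cotuple.hyps(4) by (simp add: o_def)
    show "\<forall>i<length ?ps. tp src tgt (snd (?ps ! i)) ((rn r \<Gamma>)(s \<alpha> \<mapsto> snd (qs ! i))) (rn r \<Delta>)"
    proof (intro allI impI)
      fix i assume "i < length ?ps"
      then have "i < length ps" by simp
      then have "tp src tgt (rs s (snd (ps ! i))) (rn r (\<Gamma>(\<alpha> \<mapsto> snd (qs ! i)))) (rn r \<Delta>)"
        using cotuple.IH by blast
      then show "tp src tgt (snd (?ps ! i)) ((rn r \<Gamma>)(s \<alpha> \<mapsto> snd (qs ! i))) (rn r \<Delta>)"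
        using \<open>i < length ps\<close> by (simp add: rn_upd)
    qed
  qed
  then show ?case by (simp only: rs.simps rn_upd)
next
  case (tuple \<Gamma> \<Delta> \<alpha> qs ps)
  let ?ps = "map (\<lambda>p. (fst p, rs s (snd p))) ps"
  have "tp src tgt (Case (s \<alpha>) ?ps) (rn r \<Gamma>) ((rn r \<Delta>)(s \<alpha> \<mapsto> Prod qs))"
  proof (rule tp.tuple)
    show "seq_ok (rn r \<Gamma>) ((rn r \<Delta>)(s \<alpha> \<mapsto> fm.Prod qs))"
      using rn_seq_ok[OF tuple.hyps(1)] by (simp only: rn_upd)
    show "s \<alpha> \<notin> dom (rn r \<Delta>)" using tuple.hyps(2) by (simp add: rn_dom s_notin)
    show "distinct (map fst qs)" by fact
    show "map fst ?ps = map fst qs" using tuple.hyps(4) by (simp add: o_def)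
    show "\<forall>i<length ?ps. tp src tgt (snd (?ps ! i)) (rn r \<Gamma>) ((rn r \<Delta>)(s \<alpha> \<mapsto> snd (qs ! i)))"
    proof (intro allI impI)
      fix i assume "i < length ?ps"
      then have "i < length ps" by simp
      then have "tp src tgt (rs s (snd (ps ! i))) (rn r \<Gamma>) (rn r (\<Delta>(\<alpha> \<mapsto> snd (qs ! i))))"
        using tuple.IH by blast
      then show "tp src tgt (snd (?ps ! i)) (rn r \<Gamma>) ((rn r \<Delta>)(s \<alpha> \<mapsto> snd (qs ! i)))"
        using \<open>i < length ps\<close> by (simp add: rn_upd)
    qed
  qed
  then show ?case by (simp only: rs.simps rn_upd)
next
  case (proj \<Gamma> \<alpha> qs \<Delta> a X f)
  have "tp src tgt (Sel (s \<alpha>) a (rs s f)) ((rn r \<Gamma>)(s \<alpha> \<mapsto> Prod qs)) (rn r \<Delta>)"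
  proof (rule tp.proj)
    show "seq_ok ((rn r \<Gamma>)(s \<alpha> \<mapsto> fm.Prod qs)) (rn r \<Delta>)"
      using rn_seq_ok[OF proj.hyps(1)] by (simp only: rn_upd)
    show "s \<alpha> \<notin> dom (rn r \<Gamma>)" using proj.hyps(2) by (simp add: rn_dom s_notin)
    show "tp src tgt (rs s f) ((rn r \<Gamma>)(s \<alpha> \<mapsto> X)) (rn r \<Delta>)"
      using proj.IH by (simp only: rn_upd)
  qed fact+
  then show ?case by (simp only: rs.simps rn_upd)
next
  case (inj \<Gamma> \<Delta> \<alpha> qs a X f)
  have "tp src tgt (Sel (s \<alpha>) a (rs s f)) (rn r \<Gamma>) ((rn r \<Delta>)(s \<alpha> \<mapsto> Sum qs))"
  proof (rule tp.inj)
    show "seq_ok (rn r \<Gamma>) ((rn r \<Delta>)(s \<alpha> \<mapsto> fm.Sum qs))"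
      using rn_seq_ok[OF inj.hyps(1)] by (simp only: rn_upd)
    show "s \<alpha> \<notin> dom (rn r \<Delta>)" using inj.hyps(2) by (simp add: rn_dom s_notin)
    show "tp src tgt (rs s f) (rn r \<Gamma>) ((rn r \<Delta>)(s \<alpha> \<mapsto> X))"
      using inj.IH by (simp only: rn_upd)
  qed fact+
  then show ?case by (simp only: rs.simps rn_upd)
next
  case (ltensor \<Gamma> \<alpha> Xs \<Delta> cs f)
  have "tp src tgt (Split (s \<alpha>) (map s cs) (rs s f)) ((rn r \<Gamma>)(s \<alpha> \<mapsto> Tens Xs)) (rn r \<Delta>)"
  proof (rule tp.ltensor)
    show "seq_ok ((rn r \<Gamma>)(s \<alpha> \<mapsto> Tens Xs)) (rn r \<Delta>)"
      using rn_seq_ok[OF ltensor.hyps(1)] by (simp only: rn_upd)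
    show "s \<alpha> \<notin> dom (rn r \<Gamma>)" using ltensor.hyps(2) by (simp add: rn_dom s_notin)
    show "length (map s cs) = length Xs" using ltensor.hyps(3) by simp
    show "distinct (map s cs)" using ltensor.hyps(4) inj_s by (simp add: distinct_map inj_on_subset[OF inj_s])
    show "set (map s cs) \<inter> (dom (rn r \<Gamma>) \<union> dom (rn r \<Delta>)) = {}"
      using ltensor.hyps(5) by (simp add: rn_dom image_Un[symmetric] image_Int[OF inj_s, symmetric])
    show "tp src tgt (rs s f) (rn r \<Gamma> ++ map_of (zip (map s cs) Xs)) (rn r \<Delta>)"
      using ltensor.IH by (simp only: rn_add rn_map_of)
  qed
  then show ?case by (simp only: rs.simps rn_upd)
next
  case (rpar \<Gamma> \<Delta> \<alpha> Xs cs f)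
  have "tp src tgt (Split (s \<alpha>) (map s cs) (rs s f)) (rn r \<Gamma>) ((rn r \<Delta>)(s \<alpha> \<mapsto> Par Xs))"
  proof (rule tp.rpar)
    show "seq_ok (rn r \<Gamma>) ((rn r \<Delta>)(s \<alpha> \<mapsto> Par Xs))"
      using rn_seq_ok[OF rpar.hyps(1)] by (simp only: rn_upd)
    show "s \<alpha> \<notin> dom (rn r \<Delta>)" using rpar.hyps(2) by (simp add: rn_dom s_notin)
    show "length (map s cs) = length Xs" using rpar.hyps(3) by simp
    show "distinct (map s cs)" using rpar.hyps(4) inj_s by (simp add: distinct_map inj_on_subset[OF inj_s])
    show "set (map s cs) \<inter> (dom (rn r \<Gamma>) \<union> dom (rn r \<Delta>)) = {}"
      using rpar.hyps(5) by (simp add: rn_dom image_Un[symmetric] image_Int[OF inj_s, symmetric])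
    show "tp src tgt (rs s f) (rn r \<Gamma>) (rn r \<Delta> ++ map_of (zip (map s cs) Xs))"
      using rpar.IH by (simp only: rn_add rn_map_of)
  qed
  then show ?case by (simp only: rs.simps rn_upd)
next
  case (cut f \<Gamma> \<Delta> \<gamma> Z g \<Gamma>' \<Delta>')
  have "tp src tgt (Cut (s \<gamma>) (rs s f) (rs s g)) (rn r \<Gamma> ++ rn r \<Gamma>') (rn r \<Delta> ++ rn r \<Delta>')"
  proof (rule tp.cut)
    show "tp src tgt (rs s f) (rn r \<Gamma>) ((rn r \<Delta>)(s \<gamma> \<mapsto> Z))"
      using cut.IH(1) by (simp only: rn_upd)
    show "tp src tgt (rs s g) ((rn r \<Gamma>')(s \<gamma> \<mapsto> Z)) (rn r \<Delta>')"
      using cut.IH(2) by (simp only: rn_upd)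
    show "s \<gamma> \<notin> dom (rn r \<Gamma>) \<union> dom (rn r \<Delta>) \<union> dom (rn r \<Gamma>') \<union> dom (rn r \<Delta>')"
      using cut.hyps(3) by (simp add: rn_dom s_notin image_Un[symmetric])
    show "(dom (rn r \<Gamma>) \<union> dom (rn r \<Delta>)) \<inter> (dom (rn r \<Gamma>') \<union> dom (rn r \<Delta>')) = {}"
      using cut.hyps(4) by (simp add: rn_dom image_Un[symmetric] image_Int[OF inj_s, symmetric])
  qed
  then show ?case by (simp only: rs.simps rn_add)
next
  case (lpar Gs \<alpha> Xs Ds bs)
  let ?Gs = "map (rn r) Gs" and ?Ds = "map (rn r) Ds"
    and ?bs = "map (\<lambda>b. (s (fst b), s ` fst (snd b), rs s (snd (snd b)))) bs"
  have "tp src tgt (Fork (s \<alpha>) ?bs) ((joinall ?Gs)(s \<alpha> \<mapsto> Par Xs)) (joinall ?Ds)"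
  proof (rule tp.lpar)
    show "seq_ok ((joinall ?Gs)(s \<alpha> \<mapsto> Par Xs)) (joinall ?Ds)"
      using rn_seq_ok[OF lpar.hyps(1)] by (simp only: rn_upd rn_joinall)
    show "s \<alpha> \<notin> dom (joinall ?Gs)"
      using lpar.hyps(2) by (simp add: rn_joinall[symmetric] rn_dom s_notin)
    show "length ?bs = length Xs" "length ?Gs = length ?bs" "length ?Ds = length ?bs"
      using lpar.hyps(3-5) by simp_all
    show "\<forall>i<length ?bs. \<forall>j<length ?bs. i \<noteq> j \<longrightarrow>
          (dom (?Gs ! i) \<union> dom (?Ds ! i)) \<inter> (dom (?Gs ! j) \<union> dom (?Ds ! j)) = {}"
    proof (intro allI impI)
      fix i j assume ij: "i < length ?bs" "j < length ?bs" "i \<noteq> j"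
      then have "(dom (Gs ! i) \<union> dom (Ds ! i)) \<inter> (dom (Gs ! j) \<union> dom (Ds ! j)) = {}"
        using lpar.hyps(6) by simp
      then show "(dom (?Gs ! i) \<union> dom (?Ds ! i)) \<inter> (dom (?Gs ! j) \<union> dom (?Ds ! j)) = {}"
        using ij lpar.hyps(3-5)
        by (simp add: rn_dom image_Un[symmetric] image_Int[OF inj_s, symmetric])
    qed
    show "\<forall>i<length ?bs. fst (snd (?bs ! i)) = dom (?Gs ! i) \<union> dom (?Ds ! i) \<and>
          fst (?bs ! i) \<notin> fst (snd (?bs ! i)) \<and>
          tp src tgt (snd (snd (?bs ! i))) ((?Gs ! i)(fst (?bs ! i) \<mapsto> Xs ! i)) (?Ds ! i)"
    proof (intro allI impI)
      fix i assume i: "i < length ?bs"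
      then have i': "i < length bs" "i < length Gs" "i < length Ds" using lpar.hyps(3-5) by simp_all
      have h: "fst (snd (bs ! i)) = dom (Gs ! i) \<union> dom (Ds ! i)" "fst (bs ! i) \<notin> fst (snd (bs ! i))"
        "tp src tgt (rs s (snd (snd (bs ! i)))) (rn r ((Gs ! i)(fst (bs ! i) \<mapsto> Xs ! i))) (rn r (Ds ! i))"
        using lpar.IH i'(1) by blast+
      show "fst (snd (?bs ! i)) = dom (?Gs ! i) \<union> dom (?Ds ! i) \<and>
          fst (?bs ! i) \<notin> fst (snd (?bs ! i)) \<and>
          tp src tgt (snd (snd (?bs ! i))) ((?Gs ! i)(fst (?bs ! i) \<mapsto> Xs ! i)) (?Ds ! i)"
        using h i' by (simp add: rn_dom image_Un s_notin rn_upd)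
    qed
  qed
  then show ?case by (simp only: rs.simps rn_upd rn_joinall)
next
  case (rtensor Gs Ds \<alpha> Xs bs)
  let ?Gs = "map (rn r) Gs" and ?Ds = "map (rn r) Ds"
    and ?bs = "map (\<lambda>b. (s (fst b), s ` fst (snd b), rs s (snd (snd b)))) bs"
  have "tp src tgt (Fork (s \<alpha>) ?bs) (joinall ?Gs) ((joinall ?Ds)(s \<alpha> \<mapsto> Tens Xs))"
  proof (rule tp.rtensor)
    show "seq_ok (joinall ?Gs) ((joinall ?Ds)(s \<alpha> \<mapsto> Tens Xs))"
      using rn_seq_ok[OF rtensor.hyps(1)] by (simp only: rn_upd rn_joinall)
    show "s \<alpha> \<notin> dom (joinall ?Ds)"
      using rtensor.hyps(2) by (simp add: rn_joinall[symmetric] rn_dom s_notin)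
    show "length ?bs = length Xs" "length ?Gs = length ?bs" "length ?Ds = length ?bs"
      using rtensor.hyps(3-5) by simp_all
    show "\<forall>i<length ?bs. \<forall>j<length ?bs. i \<noteq> j \<longrightarrow>
          (dom (?Gs ! i) \<union> dom (?Ds ! i)) \<inter> (dom (?Gs ! j) \<union> dom (?Ds ! j)) = {}"
    proof (intro allI impI)
      fix i j assume ij: "i < length ?bs" "j < length ?bs" "i \<noteq> j"
      then have "(dom (Gs ! i) \<union> dom (Ds ! i)) \<inter> (dom (Gs ! j) \<union> dom (Ds ! j)) = {}"
        using rtensor.hyps(6) by simp
      then show "(dom (?Gs ! i) \<union> dom (?Ds ! i)) \<inter> (dom (?Gs ! j) \<union> dom (?Ds ! j)) = {}"
        using ij rtensor.hyps(3-5)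
        by (simp add: rn_dom image_Un[symmetric] image_Int[OF inj_s, symmetric])
    qed
    show "\<forall>i<length ?bs. fst (snd (?bs ! i)) = dom (?Gs ! i) \<union> dom (?Ds ! i) \<and>
          fst (?bs ! i) \<notin> fst (snd (?bs ! i)) \<and>
          tp src tgt (snd (snd (?bs ! i))) (?Gs ! i) ((?Ds ! i)(fst (?bs ! i) \<mapsto> Xs ! i))"
    proof (intro allI impI)
      fix i assume i: "i < length ?bs"
      then have i': "i < length bs" "i < length Gs" "i < length Ds" using rtensor.hyps(3-5) by simp_all
      have h: "fst (snd (bs ! i)) = dom (Gs ! i) \<union> dom (Ds ! i)" "fst (bs ! i) \<notin> fst (snd (bs ! i))"
        "tp src tgt (rs s (snd (snd (bs ! i)))) (rn r (Gs ! i)) (rn r ((Ds ! i)(fst (bs ! i) \<mapsto> Xs ! i)))"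
        using rtensor.IH i'(1) by blast+
      show "fst (snd (?bs ! i)) = dom (?Gs ! i) \<union> dom (?Ds ! i) \<and>
          fst (?bs ! i) \<notin> fst (snd (?bs ! i)) \<and>
          tp src tgt (snd (snd (?bs ! i))) (?Gs ! i) ((?Ds ! i)(fst (?bs ! i) \<mapsto> Xs ! i))"
        using h i' by (simp add: rn_dom image_Un s_notin rn_upd)
    qed
  qed
  then show ?case by (simp only: rs.simps rn_upd rn_joinall)
qed

end


lemma sw_sw: "sw x y (sw x y c) = c"
  unfolding sw_def by auto

interpretation swb: bijr "sw x y" "sw x y"
  by unfold_locales (rule sw_sw)+

lemma tp_ren: "tp src tgt t \<Gamma> \<Delta> \<Longrightarrow> y \<notin> chans t \<Longrightarrow>
   tp src tgt (ren x y t) (rn (sw x y) \<Gamma>) (rn (sw x y) \<Delta>)"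
  by (simp add: ren_sw swb.tp_rs)

lemma rn_sw_upd: "x \<notin> dom \<Gamma> \<Longrightarrow> y \<notin> dom \<Gamma> \<Longrightarrow> rn (sw x y) (\<Gamma>(x \<mapsto> X)) = \<Gamma>(y \<mapsto> X)"
  unfolding rn_def sw_def by (rule ext) auto

lemma rn_sw_triv: "x \<notin> dom \<Gamma> \<Longrightarrow> y \<notin> dom \<Gamma> \<Longrightarrow> rn (sw x y) \<Gamma> = \<Gamma>"
  unfolding rn_def sw_def by (rule ext) auto

lemma tp_ren_upd: "tp src tgt t (\<Gamma>(x \<mapsto> X)) \<Delta> \<Longrightarrow> y \<notin> chans t \<Longrightarrow> x \<notin> dom \<Gamma> \<Longrightarrow> y \<notin> dom \<Gamma> \<Longrightarrow>
   x \<notin> dom \<Delta> \<Longrightarrow> y \<notin> dom \<Delta> \<Longrightarrow> tp src tgt (ren x y t) (\<Gamma>(y \<mapsto> X)) \<Delta>"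
  using tp_ren[of src tgt t "\<Gamma>(x \<mapsto> X)" \<Delta> y x] by (simp add: rn_sw_upd rn_sw_triv)

lemma tp_ren_upd2: "tp src tgt t \<Gamma> (\<Delta>(x \<mapsto> X)) \<Longrightarrow> y \<notin> chans t \<Longrightarrow> x \<notin> dom \<Gamma> \<Longrightarrow> y \<notin> dom \<Gamma> \<Longrightarrow>
   x \<notin> dom \<Delta> \<Longrightarrow> y \<notin> dom \<Delta> \<Longrightarrow> tp src tgt (ren x y t) \<Gamma> (\<Delta>(y \<mapsto> X))"
  using tp_ren[of src tgt t \<Gamma> "\<Delta>(x \<mapsto> X)" y x] by (simp add: rn_sw_upd rn_sw_triv)

lemma list_choice: "(\<forall>i<n. \<exists>t. P i t) \<Longrightarrow> \<exists>ts. length ts = n \<and> (\<forall>i<n. P i (ts ! i))"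
  by (rule exI[of _ "map (\<lambda>i. SOME t. P i t) [0..<n]"]) (auto intro: someI_ex)

lemma fresh_list: "infinite (UNIV :: 'c set) \<Longrightarrow> finite (A :: 'c set) \<Longrightarrow>
   \<exists>xs. length xs = k \<and> distinct xs \<and> set xs \<inter> A = {}"
proof (induction k)
  case 0
  then show ?case by simp
next
  case (Suc k)
  then obtain xs where xs: "length xs = k" "distinct xs" "set xs \<inter> A = {}" by blast
  obtain a where "a \<notin> A \<union> set xs" using ex_new_if_finite[OF Suc.prems(1)] Suc.prems(2) by blast
  then show ?case using xs by (intro exI[of _ "a # xs"]) auto
qed

lemma single_add: "c \<notin> dom M \<Longrightarrow> [c \<mapsto> X] ++ M = M(c \<mapsto> X)"
  by (rule ext) (auto simp: map_add_def split: option.split)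

lemma joinall_singles: "distinct cs \<Longrightarrow> length cs = length Xs \<Longrightarrow>
   joinall (map (\<lambda>(c, X). [c \<mapsto> X]) (zip cs Xs)) = map_of (zip cs Xs)"
proof (induction cs arbitrary: Xs)
  case Nil
  then show ?case by (simp add: joinall_def)
next
  case (Cons c cs)
  then obtain X Xs' where X: "Xs = X # Xs'" by (cases Xs) auto
  have "joinall (map (\<lambda>(c, X). [c \<mapsto> X]) (zip (c # cs) Xs)) =
        [c \<mapsto> X] ++ joinall (map (\<lambda>(c, X). [c \<mapsto> X]) (zip cs Xs'))"
    using X by (simp add: joinall_def)
  also have "\<dots> = [c \<mapsto> X] ++ map_of (zip cs Xs')"
  proof -
    have "joinall (map (\<lambda>(c, X). [c \<mapsto> X]) (zip cs Xs')) = map_of (zip cs Xs')"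
      by (rule Cons.IH) (use Cons.prems X in simp_all)
    then show ?thesis by simp
  qed
  also have "\<dots> = (map_of (zip cs Xs'))(c \<mapsto> X)"
    using Cons X by (intro single_add) (simp add: dom_map_of_zip)
  finally have e1: "joinall (map (\<lambda>(c, X). [c \<mapsto> X]) (zip (c # cs) Xs)) = (map_of (zip cs Xs'))(c \<mapsto> X)" .
  have e2: "map_of (zip (c # cs) Xs) = (map_of (zip cs Xs'))(c \<mapsto> X)" using X by simp
  show ?case by (simp only: e1 e2)
qed

lemma joinall_empties: "joinall (replicate n Map.empty) = Map.empty"
  by (induction n) (simp_all add: joinall_def)

lemma seq_ok_single: "\<alpha> \<noteq> \<beta> \<Longrightarrow> wf_fm X \<Longrightarrow> wf_fm Y \<Longrightarrow> seq_ok [\<alpha> \<mapsto> X] [\<beta> \<mapsto> Y]"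
  unfolding seq_ok_def by simp

lemma wf_nth: "\<forall>p\<in>set qs. wf_fm (snd p) \<Longrightarrow> i < length qs \<Longrightarrow> wf_fm (snd (qs ! i))"
  by simp

lemma nth_in_qs: "i < length qs \<Longrightarrow> (fst (qs ! i), snd (qs ! i)) \<in> set qs"
  by simp


lemma seq_ok_zip_single: "length cs = length Xs \<Longrightarrow> \<forall>X\<in>set Xs. wf_fm X \<Longrightarrow> \<beta> \<notin> set cs \<Longrightarrow> wf_fm Y \<Longrightarrow>
   seq_ok (map_of (zip cs Xs)) [\<beta> \<mapsto> Y] \<and> seq_ok [\<beta> \<mapsto> Y] (map_of (zip cs Xs))"
  unfolding seq_ok_alt by (auto dest: map_of_zip_Some)

lemma map_fst_nth: "map (\<lambda>i. fst (qs ! i)) [0..<length qs] = map fst qs"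
  by (rule nth_equalityI) auto

lemma id_exists:
  assumes inf: "infinite (UNIV :: 'c set)"
  shows "wf_fm X \<Longrightarrow> \<forall>\<alpha> \<beta> :: 'c. \<alpha> \<noteq> \<beta> \<longrightarrow>
     (\<exists>i :: ('a, 'm, 'e, 'c) tm. is_id X \<alpha> \<beta> i \<and> tp src tgt i [\<alpha> \<mapsto> X] [\<beta> \<mapsto> X])"
proof (induction X rule: wf_fm.induct)
  case (1 A)
  show ?case
  proof (intro allI impI)
    fix \<alpha> \<beta> :: 'c assume ab: "\<alpha> \<noteq> \<beta>"
    show "\<exists>i :: ('a, 'm, 'e, 'c) tm. is_id (Atom A) \<alpha> \<beta> i \<and> tp src tgt i [\<alpha> \<mapsto> Atom A] [\<beta> \<mapsto> Atom A]"
      using is_id.intros(1)[OF ab, of A] tp.eq[OF ab, of src tgt A] by blast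
  qed
next
  case (2 qs)
  show ?case
  proof (intro allI impI)
    fix \<alpha> \<beta> :: 'c assume ab: "\<alpha> \<noteq> \<beta>"
    have "\<forall>i<length qs. \<exists>t :: ('a, 'm, 'e, 'c) tm. is_id (snd (qs ! i)) \<alpha> \<beta> t \<and>
            tp src tgt t [\<alpha> \<mapsto> snd (qs ! i)] [\<beta> \<mapsto> snd (qs ! i)]"
      using 2(2) ab by (meson nth_mem)
    from list_choice[OF this] obtain ts where ts: "length ts = length qs"
      "\<forall>i<length qs. is_id (snd (qs ! i)) \<alpha> \<beta> (ts ! i) \<and>
            tp src tgt (ts ! i) [\<alpha> \<mapsto> snd (qs ! i)] [\<beta> \<mapsto> snd (qs ! i)]" by blast
    let ?ps = "map (\<lambda>i. (fst (qs ! i), Sel \<beta> (fst (qs ! i)) (ts ! i))) [0..<length qs]"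
    have wfS: "wf_fm (Sum qs)" using 2 by (intro wf_fm.intros(2)) (use 2 in auto)
    have "tp src tgt (Case \<alpha> ?ps) (Map.empty(\<alpha> \<mapsto> Sum qs)) [\<beta> \<mapsto> Sum qs]"
    proof (rule tp.cotuple)
      show "seq_ok [\<alpha> \<mapsto> fm.Sum qs] [\<beta> \<mapsto> fm.Sum qs]" by (rule seq_ok_single[OF ab wfS wfS])
      show "\<alpha> \<notin> dom Map.empty" by simp
      show "distinct (map fst qs)" by fact
      show "map fst ?ps = map fst qs" by (simp add: o_def map_fst_nth)
      show "\<forall>i<length ?ps. tp src tgt (snd (?ps ! i)) (Map.empty(\<alpha> \<mapsto> snd (qs ! i))) [\<beta> \<mapsto> fm.Sum qs]"
      proof (intro allI impI)
        fix i assume "i < length ?ps"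
        then have i: "i < length qs" by simp
        have "tp src tgt (Sel \<beta> (fst (qs ! i)) (ts ! i)) [\<alpha> \<mapsto> snd (qs ! i)] (Map.empty(\<beta> \<mapsto> Sum qs))"
        proof (rule tp.inj[where X = "snd (qs ! i)"])
          show "seq_ok [\<alpha> \<mapsto> snd (qs ! i)] [\<beta> \<mapsto> fm.Sum qs]"
            by (intro seq_ok_single) (use ab wfS 2(2) i in auto)
          show "\<beta> \<notin> dom Map.empty" by simp
          show "distinct (map fst qs)" by fact
          show "(fst (qs ! i), snd (qs ! i)) \<in> set qs" using i by simp
          show "tp src tgt (ts ! i) [\<alpha> \<mapsto> snd (qs ! i)] [\<beta> \<mapsto> snd (qs ! i)]" using ts i by blast
        qed
        then show "tp src tgt (snd (?ps ! i)) (Map.empty(\<alpha> \<mapsto> snd (qs ! i))) [\<beta> \<mapsto> fm.Sum qs]"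
          using i by simp
      qed
    qed
    moreover have "is_id (Sum qs) \<alpha> \<beta> (Case \<alpha> ?ps)"
      using ab ts by (intro is_id.intros(2)) auto
    ultimately show "\<exists>i :: ('a, 'm, 'e, 'c) tm. is_id (Sum qs) \<alpha> \<beta> i \<and> tp src tgt i [\<alpha> \<mapsto> Sum qs] [\<beta> \<mapsto> Sum qs]"
      by blast
  qed
next
  case (3 qs)
  show ?case
  proof (intro allI impI)
    fix \<alpha> \<beta> :: 'c assume ab: "\<alpha> \<noteq> \<beta>"
    have "\<forall>i<length qs. \<exists>t :: ('a, 'm, 'e, 'c) tm. is_id (snd (qs ! i)) \<alpha> \<beta> t \<and>
            tp src tgt t [\<alpha> \<mapsto> snd (qs ! i)] [\<beta> \<mapsto> snd (qs ! i)]"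
      using 3(2) ab by (meson nth_mem)
    from list_choice[OF this] obtain ts where ts: "length ts = length qs"
      "\<forall>i<length qs. is_id (snd (qs ! i)) \<alpha> \<beta> (ts ! i) \<and>
            tp src tgt (ts ! i) [\<alpha> \<mapsto> snd (qs ! i)] [\<beta> \<mapsto> snd (qs ! i)]" by blast
    let ?ps = "map (\<lambda>i. (fst (qs ! i), Sel \<alpha> (fst (qs ! i)) (ts ! i))) [0..<length qs]"
    have wfS: "wf_fm (Prod qs)" by (intro wf_fm.intros(3)) (use 3 in auto)
    have "tp src tgt (Case \<beta> ?ps) [\<alpha> \<mapsto> Prod qs] (Map.empty(\<beta> \<mapsto> Prod qs))"
    proof (rule tp.tuple)
      show "seq_ok [\<alpha> \<mapsto> fm.Prod qs] [\<beta> \<mapsto> fm.Prod qs]" by (rule seq_ok_single[OF ab wfS wfS])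
      show "\<beta> \<notin> dom Map.empty" by simp
      show "distinct (map fst qs)" by fact
      show "map fst ?ps = map fst qs" by (simp add: o_def map_fst_nth)
      show "\<forall>i<length ?ps. tp src tgt (snd (?ps ! i)) [\<alpha> \<mapsto> fm.Prod qs] (Map.empty(\<beta> \<mapsto> snd (qs ! i)))"
      proof (intro allI impI)
        fix i assume "i < length ?ps"
        then have i: "i < length qs" by simp
        have "tp src tgt (Sel \<alpha> (fst (qs ! i)) (ts ! i)) (Map.empty(\<alpha> \<mapsto> Prod qs)) [\<beta> \<mapsto> snd (qs ! i)]"
        proof (rule tp.proj[where X = "snd (qs ! i)"])
          show "seq_ok [\<alpha> \<mapsto> Prod qs] [\<beta> \<mapsto> snd (qs ! i)]"
            by (intro seq_ok_single) (use ab wfS 3(2) i in auto)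
          show "\<alpha> \<notin> dom Map.empty" by simp
          show "distinct (map fst qs)" by fact
          show "(fst (qs ! i), snd (qs ! i)) \<in> set qs" using i by simp
          show "tp src tgt (ts ! i) [\<alpha> \<mapsto> snd (qs ! i)] [\<beta> \<mapsto> snd (qs ! i)]" using ts i by blast
        qed
        then show "tp src tgt (snd (?ps ! i)) [\<alpha> \<mapsto> fm.Prod qs] (Map.empty(\<beta> \<mapsto> snd (qs ! i)))"
          using i by simp
      qed
    qed
    moreover have "is_id (Prod qs) \<alpha> \<beta> (Case \<beta> ?ps)"
      using ab ts by (intro is_id.intros(3)) auto
    ultimately show "\<exists>i :: ('a, 'm, 'e, 'c) tm. is_id (Prod qs) \<alpha> \<beta> i \<and> tp src tgt i [\<alpha> \<mapsto> Prod qs] [\<beta> \<mapsto> Prod qs]"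
      by blast
  qed
next
  case (4 Xs)
  show ?case
  proof (intro allI impI)
    fix \<alpha> \<beta> :: 'c assume ab: "\<alpha> \<noteq> \<beta>"
    let ?n = "length Xs"
    obtain xs :: "'c list" where xs: "length xs = ?n + ?n" "distinct xs" "set xs \<inter> {\<alpha>, \<beta>} = {}"
      using fresh_list[OF inf, of "{\<alpha>, \<beta>}" "?n + ?n"] by blast
    define cs where "cs = take ?n xs"
    define ds where "ds = drop ?n xs"
    have cd: "length cs = ?n" "length ds = ?n" "distinct (cs @ ds)" "\<alpha> \<notin> set (cs @ ds)" "\<beta> \<notin> set (cs @ ds)"
      using xs unfolding cs_def ds_def by (auto simp del: set_append simp: set_append[symmetric])
    have dcs: "distinct cs" "distinct ds" "set cs \<inter> set ds = {}" using cd(3) by auto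
    have cne: "\<forall>i<?n. cs ! i \<noteq> ds ! i" using dcs(3) cd(1,2) by (metis disjoint_iff nth_mem)
    have wfX: "\<forall>X\<in>set Xs. wf_fm X" using 4 by blast
    have wfT: "wf_fm (Tens Xs)" by (rule wf_fm.intros) (use wfX in blast)
    have "\<forall>i<?n. \<exists>t :: ('a, 'm, 'e, 'c) tm. is_id (Xs ! i) (cs ! i) (ds ! i) t \<and>
            tp src tgt t [cs ! i \<mapsto> Xs ! i] [ds ! i \<mapsto> Xs ! i]"
      using 4 cne by (meson nth_mem)
    from list_choice[OF this] obtain ts where ts: "length ts = ?n"
      "\<forall>i<?n. is_id (Xs ! i) (cs ! i) (ds ! i) (ts ! i) \<and>
            tp src tgt (ts ! i) [cs ! i \<mapsto> Xs ! i] [ds ! i \<mapsto> Xs ! i]" by blast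
    let ?bs = "map (\<lambda>i. (ds ! i, {cs ! i}, ts ! i)) [0..<length Xs]"
    let ?Gs = "map (\<lambda>(c, X). [c \<mapsto> X]) (zip cs Xs)"
    let ?Ds = "replicate (length Xs) Map.empty"
    have jG: "joinall ?Gs = map_of (zip cs Xs)" using dcs cd by (intro joinall_singles) auto
    have jD: "joinall ?Ds = Map.empty" by (rule joinall_empties)
    have Gi: "\<And>i. i < ?n \<Longrightarrow> ?Gs ! i = [cs ! i \<mapsto> Xs ! i]" using cd by simp
    have Di: "\<And>i. i < ?n \<Longrightarrow> ?Ds ! i = Map.empty" by simp
    have tpF: "tp src tgt (Fork \<beta> ?bs) (joinall ?Gs) ((joinall ?Ds)(\<beta> \<mapsto> Tens Xs))"
    proof (rule tp.rtensor)
      show "seq_ok (joinall ?Gs) ((joinall ?Ds)(\<beta> \<mapsto> Tens Xs))"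
        unfolding jG jD using seq_ok_zip_single[OF cd(1) wfX _ wfT] cd(5) by simp
      show "\<beta> \<notin> dom (joinall ?Ds)" unfolding jD by simp
      show "length ?bs = length Xs" "length ?Gs = length ?bs" "length ?Ds = length ?bs" using cd by simp_all
      show "\<forall>i<length ?bs. \<forall>j<length ?bs. i \<noteq> j \<longrightarrow>
          (dom (?Gs ! i) \<union> dom (?Ds ! i)) \<inter> (dom (?Gs ! j) \<union> dom (?Ds ! j)) = {}"
        using Gi Di dcs(1) cd(1) by (simp add: nth_eq_iff_index_eq)
      show "\<forall>i<length ?bs. fst (snd (?bs ! i)) = dom (?Gs ! i) \<union> dom (?Ds ! i) \<and>
          fst (?bs ! i) \<notin> fst (snd (?bs ! i)) \<and>
          tp src tgt (snd (snd (?bs ! i))) (?Gs ! i) ((?Ds ! i)(fst (?bs ! i) \<mapsto> Xs ! i))"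
        using Gi Di cne ts(2) by auto
    qed
    have "tp src tgt (Split \<alpha> cs (Fork \<beta> ?bs)) (Map.empty(\<alpha> \<mapsto> Tens Xs)) [\<beta> \<mapsto> Tens Xs]"
    proof (rule tp.ltensor)
      show "seq_ok [\<alpha> \<mapsto> Tens Xs] [\<beta> \<mapsto> Tens Xs]" by (rule seq_ok_single[OF ab wfT wfT])
      show "\<alpha> \<notin> dom Map.empty" by simp
      show "length cs = length Xs" "distinct cs" using cd dcs by simp_all
      show "set cs \<inter> (dom Map.empty \<union> dom [\<beta> \<mapsto> Tens Xs]) = {}" using cd(5) by auto
      show "tp src tgt (Fork \<beta> ?bs) (Map.empty ++ map_of (zip cs Xs)) [\<beta> \<mapsto> Tens Xs]"
        using tpF unfolding jG jD by simp
    qed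
    moreover have "is_id (Tens Xs) \<alpha> \<beta> (Split \<alpha> cs (Fork \<beta> ?bs))"
      using ab cd ts by (intro is_id.intros(4)) auto
    ultimately show "\<exists>i :: ('a, 'm, 'e, 'c) tm. is_id (Tens Xs) \<alpha> \<beta> i \<and> tp src tgt i [\<alpha> \<mapsto> Tens Xs] [\<beta> \<mapsto> Tens Xs]"
      by blast
  qed
next
  case (5 Xs)
  show ?case
  proof (intro allI impI)
    fix \<alpha> \<beta> :: 'c assume ab: "\<alpha> \<noteq> \<beta>"
    let ?n = "length Xs"
    obtain xs :: "'c list" where xs: "length xs = ?n + ?n" "distinct xs" "set xs \<inter> {\<alpha>, \<beta>} = {}"
      using fresh_list[OF inf, of "{\<alpha>, \<beta>}" "?n + ?n"] by blast
    define cs where "cs = take ?n xs"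
    define ds where "ds = drop ?n xs"
    have cd: "length cs = ?n" "length ds = ?n" "distinct (cs @ ds)" "\<alpha> \<notin> set (cs @ ds)" "\<beta> \<notin> set (cs @ ds)"
      using xs unfolding cs_def ds_def by (auto simp del: set_append simp: set_append[symmetric])
    have dcs: "distinct cs" "distinct ds" "set cs \<inter> set ds = {}" using cd(3) by auto
    have cne: "\<forall>i<?n. cs ! i \<noteq> ds ! i" using dcs(3) cd(1,2) by (metis disjoint_iff nth_mem)
    have wfX: "\<forall>X\<in>set Xs. wf_fm X" using 5 by blast
    have wfT: "wf_fm (Par Xs)" by (rule wf_fm.intros) (use wfX in blast)
    have "\<forall>i<?n. \<exists>t :: ('a, 'm, 'e, 'c) tm. is_id (Xs ! i) (cs ! i) (ds ! i) t \<and>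
            tp src tgt t [cs ! i \<mapsto> Xs ! i] [ds ! i \<mapsto> Xs ! i]"
      using 5 cne by (meson nth_mem)
    from list_choice[OF this] obtain ts where ts: "length ts = ?n"
      "\<forall>i<?n. is_id (Xs ! i) (cs ! i) (ds ! i) (ts ! i) \<and>
            tp src tgt (ts ! i) [cs ! i \<mapsto> Xs ! i] [ds ! i \<mapsto> Xs ! i]" by blast
    let ?bs = "map (\<lambda>i. (cs ! i, {ds ! i}, ts ! i)) [0..<length Xs]"
    let ?Gs = "replicate (length Xs) Map.empty"
    let ?Ds = "map (\<lambda>(c, X). [c \<mapsto> X]) (zip ds Xs)"
    have jD: "joinall ?Ds = map_of (zip ds Xs)" using dcs cd by (intro joinall_singles) auto
    have jG: "joinall ?Gs = Map.empty" by (rule joinall_empties)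
    have Di: "\<And>i. i < ?n \<Longrightarrow> ?Ds ! i = [ds ! i \<mapsto> Xs ! i]" using cd by simp
    have Gi: "\<And>i. i < ?n \<Longrightarrow> ?Gs ! i = Map.empty" by simp
    have tpF: "tp src tgt (Fork \<alpha> ?bs) ((joinall ?Gs)(\<alpha> \<mapsto> Par Xs)) (joinall ?Ds)"
    proof (rule tp.lpar)
      show "seq_ok ((joinall ?Gs)(\<alpha> \<mapsto> Par Xs)) (joinall ?Ds)"
        unfolding jG jD using seq_ok_zip_single[OF cd(2) wfX _ wfT] cd(4) by simp
      show "\<alpha> \<notin> dom (joinall ?Gs)" unfolding jG by simp
      show "length ?bs = length Xs" "length ?Gs = length ?bs" "length ?Ds = length ?bs" using cd by simp_all
      show "\<forall>i<length ?bs. \<forall>j<length ?bs. i \<noteq> j \<longrightarrow>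
          (dom (?Gs ! i) \<union> dom (?Ds ! i)) \<inter> (dom (?Gs ! j) \<union> dom (?Ds ! j)) = {}"
        using Gi Di dcs(2) cd(2) by (simp add: nth_eq_iff_index_eq)
      show "\<forall>i<length ?bs. fst (snd (?bs ! i)) = dom (?Gs ! i) \<union> dom (?Ds ! i) \<and>
          fst (?bs ! i) \<notin> fst (snd (?bs ! i)) \<and>
          tp src tgt (snd (snd (?bs ! i))) ((?Gs ! i)(fst (?bs ! i) \<mapsto> Xs ! i)) (?Ds ! i)"
        using Gi Di cne ts(2) by auto
    qed
    have "tp src tgt (Split \<beta> ds (Fork \<alpha> ?bs)) [\<alpha> \<mapsto> Par Xs] (Map.empty(\<beta> \<mapsto> Par Xs))"
    proof (rule tp.rpar)
      show "seq_ok [\<alpha> \<mapsto> Par Xs] [\<beta> \<mapsto> Par Xs]" by (rule seq_ok_single[OF ab wfT wfT])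
      show "\<beta> \<notin> dom Map.empty" by simp
      show "length ds = length Xs" "distinct ds" using cd dcs by simp_all
      show "set ds \<inter> (dom [\<alpha> \<mapsto> Par Xs] \<union> dom Map.empty) = {}" using cd(4) by auto
      show "tp src tgt (Fork \<alpha> ?bs) [\<alpha> \<mapsto> Par Xs] (Map.empty ++ map_of (zip ds Xs))"
        using tpF unfolding jG jD by simp
    qed
    moreover have "is_id (Par Xs) \<alpha> \<beta> (Split \<beta> ds (Fork \<alpha> ?bs))"
      using ab cd ts by (intro is_id.intros(5)) auto
    ultimately show "\<exists>i :: ('a, 'm, 'e, 'c) tm. is_id (Par Xs) \<alpha> \<beta> i \<and> tp src tgt i [\<alpha> \<mapsto> Par Xs] [\<beta> \<mapsto> Par Xs]"
      by blast
  qed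
qed


section \<open>Equivalence machinery\<close>

lemma conv1_sym: "conv1 src tgt \<Gamma> \<Delta> t u \<Longrightarrow> conv1 src tgt \<Gamma> \<Delta> u t"
  unfolding conv1_def by blast

lemma rtc_sym: "(conv1 src tgt \<Gamma> \<Delta>)\<^sup>*\<^sup>* t u \<Longrightarrow> (conv1 src tgt \<Gamma> \<Delta>)\<^sup>*\<^sup>* u t"
proof (induction rule: rtranclp.induct)
  case (rtrancl_refl a)
  then show ?case by simp
next
  case (rtrancl_into_rtrancl a b c)
  then show ?case by (meson conv1_sym converse_rtranclp_into_rtranclp)
qed

lemma rtc_tp: "(conv1 src tgt \<Gamma> \<Delta>)\<^sup>*\<^sup>* t u \<Longrightarrow> tp src tgt t \<Gamma> \<Delta> \<Longrightarrow> tp src tgt u \<Gamma> \<Delta>"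
  by (induction rule: rtranclp.induct) (auto simp: conv1_def)

lemma sim_refl: "tp src tgt t \<Gamma> \<Delta> \<Longrightarrow> sim src tgt \<Gamma> \<Delta> t t"
  unfolding sim_def by simp

lemma sim_tp: "sim src tgt \<Gamma> \<Delta> t u \<Longrightarrow> tp src tgt t \<Gamma> \<Delta> \<and> tp src tgt u \<Gamma> \<Delta>"
  unfolding sim_def using rtc_tp by blast

lemma sim_sym: "sim src tgt \<Gamma> \<Delta> t u \<Longrightarrow> sim src tgt \<Gamma> \<Delta> u t"
  using sim_tp unfolding sim_def by (blast intro: rtc_sym)

lemma sim_trans: "sim src tgt \<Gamma> \<Delta> t u \<Longrightarrow> sim src tgt \<Gamma> \<Delta> u v \<Longrightarrow> sim src tgt \<Gamma> \<Delta> t v"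
  unfolding sim_def by auto

lemma cls_eq: "sim src tgt \<Gamma> \<Delta> t u \<Longrightarrow> cls src tgt \<Gamma> \<Delta> t = cls src tgt \<Gamma> \<Delta> u"
  unfolding cls_def by (blast intro: sim_trans sim_sym)

lemma cls_eqD: "tp src tgt u \<Gamma> \<Delta> \<Longrightarrow> cls src tgt \<Gamma> \<Delta> t = cls src tgt \<Gamma> \<Delta> u \<Longrightarrow> sim src tgt \<Gamma> \<Delta> t u"
  unfolding cls_def using sim_refl by blast

lemma mem_cls: "u \<in> cls src tgt \<Gamma> \<Delta> t \<longleftrightarrow> sim src tgt \<Gamma> \<Delta> t u"
  unfolding cls_def by simp

lemma step_sim: "tp src tgt t \<Gamma> \<Delta> \<Longrightarrow> tp src tgt u \<Gamma> \<Delta> \<Longrightarrow> step t u \<Longrightarrow> sim src tgt \<Gamma> \<Delta> t u"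
  unfolding sim_def conv1_def by (blast intro: cstep.intros)

lemma sim_ctx:
  assumes "sim src tgt \<Gamma>1 \<Delta>1 t u"
    and "\<And>v. tp src tgt v \<Gamma>1 \<Delta>1 \<Longrightarrow> tp src tgt (C v) \<Gamma>2 \<Delta>2"
    and "\<And>v w. cstep v w \<Longrightarrow> cstep (C v) (C w)"
  shows "sim src tgt \<Gamma>2 \<Delta>2 (C t) (C u)"
proof -
  have "(conv1 src tgt \<Gamma>1 \<Delta>1)\<^sup>*\<^sup>* t u" "tp src tgt t \<Gamma>1 \<Delta>1" using assms(1) unfolding sim_def by auto
  then have "(conv1 src tgt \<Gamma>2 \<Delta>2)\<^sup>*\<^sup>* (C t) (C u)"
  proof (induction rule: rtranclp.induct)
    case (rtrancl_refl a)
    then show ?case by simp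
  next
    case (rtrancl_into_rtrancl a b c)
    then have "conv1 src tgt \<Gamma>2 \<Delta>2 (C b) (C c)" using assms(2,3) unfolding conv1_def by blast
    then show ?case using rtrancl_into_rtrancl by auto
  qed
  then show ?thesis using assms(1,2) sim_tp unfolding sim_def by blast
qed

lemma sim_cut_l: "sim src tgt \<Gamma>1 \<Delta>1 t u \<Longrightarrow> (\<And>v. tp src tgt v \<Gamma>1 \<Delta>1 \<Longrightarrow> tp src tgt (Cut \<gamma> h v) \<Gamma>2 \<Delta>2) \<Longrightarrow>
   sim src tgt \<Gamma>2 \<Delta>2 (Cut \<gamma> h t) (Cut \<gamma> h u)"
  by (rule sim_ctx[where C = "\<lambda>v. Cut \<gamma> h v"]) (auto intro: cstep.intros)

lemma sim_cut_r: "sim src tgt \<Gamma>1 \<Delta>1 t u \<Longrightarrow> (\<And>v. tp src tgt v \<Gamma>1 \<Delta>1 \<Longrightarrow> tp src tgt (Cut \<gamma> v h) \<Gamma>2 \<Delta>2) \<Longrightarrow>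
   sim src tgt \<Gamma>2 \<Delta>2 (Cut \<gamma> t h) (Cut \<gamma> u h)"
  by (rule sim_ctx[where C = "\<lambda>v. Cut \<gamma> v h"]) (auto intro: cstep.intros)

lemma case_cong_sim:
  assumes sims: "\<forall>i<n. sim src tgt (G i) (D i) (f i) (g i)"
    and htyp: "\<And>h. (\<forall>i<n. tp src tgt (h i) (G i) (D i)) \<Longrightarrow>
                tp src tgt (Case \<alpha> (map (\<lambda>i. (a i, h i)) [0..<n])) \<Gamma> \<Delta>"
  shows "sim src tgt \<Gamma> \<Delta> (Case \<alpha> (map (\<lambda>i. (a i, f i)) [0..<n])) (Case \<alpha> (map (\<lambda>i. (a i, g i)) [0..<n]))"
proof -
  define H where "H k = (\<lambda>i. if i < k then g i else f i)" for k
  have ft: "\<forall>i<n. tp src tgt (f i) (G i) (D i)" and gt: "\<forall>i<n. tp src tgt (g i) (G i) (D i)"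
    using sims sim_tp by blast+
  have main: "k \<le> n \<Longrightarrow> sim src tgt \<Gamma> \<Delta> (Case \<alpha> (map (\<lambda>i. (a i, f i)) [0..<n])) (Case \<alpha> (map (\<lambda>i. (a i, H k i)) [0..<n]))" for k
  proof (induction k)
    case 0
    have "tp src tgt (Case \<alpha> (map (\<lambda>i. (a i, f i)) [0..<n])) \<Gamma> \<Delta>" using htyp ft by blast
    then show ?case unfolding H_def by (simp add: sim_refl)
  next
    case (Suc k)
    then have k: "k < n" by simp
    let ?C = "\<lambda>v. Case \<alpha> (map (\<lambda>i. (a i, ((H k)(k := v)) i)) [0..<n])"
    have "sim src tgt \<Gamma> \<Delta> (?C (f k)) (?C (g k))"
    proof (rule sim_ctx[where C = ?C])
      show "sim src tgt (G k) (D k) (f k) (g k)" using sims k by blast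
      show "tp src tgt (?C v) \<Gamma> \<Delta>" if "tp src tgt v (G k) (D k)" for v
        using that ft gt by (intro htyp) (auto simp: H_def)
      show "cstep (?C v) (?C w)" if "cstep v w" for v w
      proof -
        have "cstep (?C v) (Case \<alpha> ((map (\<lambda>i. (a i, ((H k)(k := v)) i)) [0..<n])[k := (a k, w)]))"
          using that k by (intro cstep.intros(2)) auto
        moreover have "(map (\<lambda>i. (a i, ((H k)(k := v)) i)) [0..<n])[k := (a k, w)] =
                       map (\<lambda>i. (a i, ((H k)(k := w)) i)) [0..<n]"
          by (rule nth_equalityI) (auto simp: nth_list_update)
        ultimately show ?thesis by simp
      qed
    qed
    moreover have "(H k)(k := f k) = H k" by (auto simp: H_def)
    moreover have "(H k)(k := g k) = H (Suc k)" by (auto simp: H_def)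
    ultimately show ?case using Suc by (auto intro: sim_trans)
  qed
  have e: "map (\<lambda>i. (a i, H n i)) [0..<n] = map (\<lambda>i. (a i, g i)) [0..<n]"
    by (rule map_cong) (auto simp: H_def)
  show ?thesis using main[OF order.refl] unfolding e .
qed

definition rep :: "'t set \<Rightarrow> 't" where "rep C = (SOME t. t \<in> C)"

lemma rep_hom: "C \<in> hom src tgt \<Gamma> \<Delta> \<Longrightarrow> tp src tgt (rep C) \<Gamma> \<Delta> \<and> cls src tgt \<Gamma> \<Delta> (rep C) = C"
proof -
  assume "C \<in> hom src tgt \<Gamma> \<Delta>"
  then obtain t where t: "tp src tgt t \<Gamma> \<Delta>" "C = cls src tgt \<Gamma> \<Delta> t" unfolding hom_def by blast
  then have "t \<in> C" by (simp add: mem_cls sim_refl)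
  then have "rep C \<in> C" unfolding rep_def by (rule someI)
  then have "sim src tgt \<Gamma> \<Delta> t (rep C)" using t by (simp add: mem_cls)
  then show ?thesis using t cls_eq sim_tp by metis
qed

lemma cls_hom: "tp src tgt t \<Gamma> \<Delta> \<Longrightarrow> cls src tgt \<Gamma> \<Delta> t \<in> hom src tgt \<Gamma> \<Delta>"
  unfolding hom_def by blast

lemma rep_cls: "tp src tgt t \<Gamma> \<Delta> \<Longrightarrow> sim src tgt \<Gamma> \<Delta> t (rep (cls src tgt \<Gamma> \<Delta> t))"
  using rep_hom[OF cls_hom] cls_eqD sim_sym by metis



lemma tp_cut_l:
  assumes "tp src tgt f [x \<mapsto> X] [\<gamma> \<mapsto> Z]" "tp src tgt g (\<Gamma>(\<gamma> \<mapsto> Z)) \<Delta>"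
    "x \<noteq> \<gamma>" "\<gamma> \<notin> dom \<Gamma>" "\<gamma> \<notin> dom \<Delta>" "x \<notin> dom \<Gamma>" "x \<notin> dom \<Delta>"
  shows "tp src tgt (Cut \<gamma> f g) (\<Gamma>(x \<mapsto> X)) \<Delta>"
proof -
  have "tp src tgt (Cut \<gamma> f g) ([x \<mapsto> X] ++ \<Gamma>) (Map.empty ++ \<Delta>)"
    by (rule tp.cut[where \<Delta> = Map.empty]) (use assms in auto)
  then show ?thesis by (simp only: single_add[OF assms(6)] empty_map_add)
qed

lemma tp_cut_r:
  assumes "tp src tgt f \<Gamma> (\<Delta>(\<gamma> \<mapsto> Z))" "tp src tgt g [\<gamma> \<mapsto> Z] [x \<mapsto> X]"
    "x \<noteq> \<gamma>" "\<gamma> \<notin> dom \<Gamma>" "\<gamma> \<notin> dom \<Delta>" "x \<notin> dom \<Gamma>" "x \<notin> dom \<Delta>"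
  shows "tp src tgt (Cut \<gamma> f g) \<Gamma> (\<Delta>(x \<mapsto> X))"
proof -
  have "tp src tgt (Cut \<gamma> f g) (\<Gamma> ++ Map.empty) (\<Delta> ++ [x \<mapsto> X])"
    by (rule tp.cut[where \<Gamma>' = Map.empty]) (use assms in auto)
  then show ?thesis by (simp only: map_add_empty map_add_upd)
qed

definition PhiS :: "('m \<Rightarrow> 'a list) \<Rightarrow> ('m \<Rightarrow> 'a list) \<Rightarrow> ('e \<times> ('a, 'e) fm) list \<Rightarrow>
   ('c, 'a, 'e) side \<Rightarrow> ('c, 'a, 'e) side \<Rightarrow> 'c \<Rightarrow> (nat \<Rightarrow> ('a, 'm, 'e, 'c) tm set) \<Rightarrow> ('a, 'm, 'e, 'c) tm set" where
  "PhiS src tgt qs \<Gamma> \<Delta> \<alpha> F = cls src tgt (\<Gamma>(\<alpha> \<mapsto> Sum qs)) \<Delta>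
      (Case \<alpha> (map (\<lambda>i. (fst (qs ! i), rep (F i))) [0..<length qs]))"

context
  fixes src tgt :: "'m \<Rightarrow> 'a list" and qs :: "('e \<times> ('a, 'e) fm) list"
  assumes inf: "infinite (UNIV :: 'c set)" and d: "distinct (map fst qs)"
    and wfq: "\<forall>p\<in>set qs. wf_fm (snd p)"
begin

lemma wfS: "wf_fm (Sum qs)" using d wfq by (intro wf_fm.intros(2))

lemma wfX: "i < length qs \<Longrightarrow> wf_fm (snd (qs ! i))" using wfq by simp

lemma sumA_tp:
  assumes "seq_ok (\<Gamma>(\<alpha> \<mapsto> Sum qs)) \<Delta>" "\<alpha> \<notin> dom \<Gamma>"
    "\<forall>i<length qs. tp src tgt (h i) (\<Gamma>(\<alpha> \<mapsto> snd (qs ! i))) \<Delta>"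
  shows "tp src tgt (Case \<alpha> (map (\<lambda>i. (fst (qs ! i), h i)) [0..<length qs])) (\<Gamma>(\<alpha> \<mapsto> Sum qs)) \<Delta>"
proof (rule tp.cotuple)
  show "map fst (map (\<lambda>i. (fst (qs ! i), h i)) [0..<length qs]) = map fst qs"
    by (simp add: o_def map_fst_nth)
qed (use assms d in auto)

lemma selS_tp:
  assumes "x \<noteq> y" "i < length qs" "tp src tgt u [x \<mapsto> snd (qs ! i)] [y \<mapsto> snd (qs ! i)]"
  shows "tp src tgt (Sel y (fst (qs ! i)) u) [x \<mapsto> snd (qs ! i)] [y \<mapsto> Sum qs]"
proof (rule tp.inj[where X = "snd (qs ! i)" and \<Delta> = Map.empty])
  show "seq_ok [x \<mapsto> snd (qs ! i)] [y \<mapsto> fm.Sum qs]"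
    by (rule seq_ok_single[OF assms(1) wfX[OF assms(2)] wfS])
  show "(fst (qs ! i), snd (qs ! i)) \<in> set qs" using assms(2) by simp
qed (use assms d in auto)

lemma get_id:
  assumes "wf_fm X" "x \<noteq> (y :: 'c)"
  obtains u :: "('a, 'm, 'e, 'c) tm" where "is_id X x y u" "tp src tgt u [x \<mapsto> X] [y \<mapsto> X]"
  using id_exists[OF inf assms(1)] assms(2) by blast

lemma sum_eta:
  assumes so: "seq_ok (\<Gamma>(\<alpha> \<mapsto> Sum qs)) \<Delta>" and a: "\<alpha> \<notin> dom \<Gamma>"
    and t: "tp src tgt t (\<Gamma>(\<alpha> \<mapsto> Sum qs)) (\<Delta> :: ('c, 'a, 'e) side)"
  shows "\<exists>bs. (\<forall>i<length qs. tp src tgt (bs i) (\<Gamma>(\<alpha> \<mapsto> snd (qs ! i))) \<Delta>) \<and>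
     sim src tgt (\<Gamma>(\<alpha> \<mapsto> Sum qs)) \<Delta> t (Case \<alpha> (map (\<lambda>i. (fst (qs ! i), bs i)) [0..<length qs]))"
proof -
  have aD: "\<alpha> \<notin> dom \<Delta>" using so unfolding seq_ok_def by auto
  have fin: "finite (chans t \<union> dom \<Gamma> \<union> dom \<Delta> \<union> {\<alpha>})"
    using tp_fin[OF t] seq_ok_upd_fin[OF so] by simp
  obtain \<gamma> where \<gamma>: "\<gamma> \<notin> chans t \<union> dom \<Gamma> \<union> dom \<Delta> \<union> {\<alpha>}" using ex_new_if_finite[OF inf fin] by blast
  define t' where "t' = ren \<alpha> \<gamma> t"
  have t': "tp src tgt t' (\<Gamma>(\<gamma> \<mapsto> Sum qs)) \<Delta>" unfolding t'_def
    by (rule tp_ren_upd[OF t]) (use \<gamma> a aD in auto)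
  have "\<forall>i<length qs. \<exists>u :: ('a, 'm, 'e, 'c) tm. is_id (snd (qs ! i)) \<alpha> \<gamma> u \<and>
          tp src tgt u [\<alpha> \<mapsto> snd (qs ! i)] [\<gamma> \<mapsto> snd (qs ! i)]"
  proof (intro allI impI)
    fix i assume "i < length qs"
    from get_id[OF wfX[OF this], of \<alpha> \<gamma>] \<gamma>
    show "\<exists>u :: ('a, 'm, 'e, 'c) tm. is_id (snd (qs ! i)) \<alpha> \<gamma> u \<and>
          tp src tgt u [\<alpha> \<mapsto> snd (qs ! i)] [\<gamma> \<mapsto> snd (qs ! i)]" by blast
  qed
  from list_choice[OF this] obtain ts where ts: "length ts = length qs"
    "\<forall>i<length qs. is_id (snd (qs ! i)) \<alpha> \<gamma> (ts ! i) \<and>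
          tp src tgt (ts ! i) [\<alpha> \<mapsto> snd (qs ! i)] [\<gamma> \<mapsto> snd (qs ! i)]" by blast
  define psid where "psid = map (\<lambda>i. (fst (qs ! i), Sel \<gamma> (fst (qs ! i)) (ts ! i))) [0..<length qs]"
  have ag: "\<alpha> \<noteq> \<gamma>" using \<gamma> by auto
  have isid: "is_id (Sum qs) \<alpha> \<gamma> (Case \<alpha> psid)" unfolding psid_def
    using ts ag by (intro is_id.intros(2)) auto
  have selt: "\<forall>i<length qs. tp src tgt (Sel \<gamma> (fst (qs ! i)) (ts ! i)) (Map.empty(\<alpha> \<mapsto> snd (qs ! i))) [\<gamma> \<mapsto> Sum qs]"
  proof (intro allI impI)
    fix i assume i: "i < length qs"
    show "tp src tgt (Sel \<gamma> (fst (qs ! i)) (ts ! i)) (Map.empty(\<alpha> \<mapsto> snd (qs ! i))) [\<gamma> \<mapsto> Sum qs]"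
      by (rule selS_tp[OF ag i]) (use ts i in blast)
  qed
  have idt: "tp src tgt (Case \<alpha> psid) [\<alpha> \<mapsto> Sum qs] [\<gamma> \<mapsto> Sum qs]" unfolding psid_def
    by (rule sumA_tp[OF seq_ok_single[OF ag wfS wfS] _ selt]) simp
  have T1: "tp src tgt (Cut \<gamma> (Case \<alpha> psid) t') (\<Gamma>(\<alpha> \<mapsto> Sum qs)) \<Delta>"
    by (rule tp_cut_l[OF idt t']) (use \<gamma> a aD in auto)
  have "step (Cut \<gamma> (Case \<alpha> psid) t') (ren \<gamma> \<alpha> t')"
    by (rule step.r2[OF isid]) (simp add: t'_def ren_fresh ag)
  moreover have "ren \<gamma> \<alpha> t' = t" unfolding t'_def by (rule ren_ren) (use \<gamma> in auto)
  ultimately have s1: "sim src tgt (\<Gamma>(\<alpha> \<mapsto> Sum qs)) \<Delta> (Cut \<gamma> (Case \<alpha> psid) t') t"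
    using step_sim[OF T1 t] by simp
  define bs where "bs i = Cut \<gamma> (Sel \<gamma> (fst (qs ! i)) (ts ! i)) t'" for i
  have bst: "\<forall>i<length qs. tp src tgt (bs i) (\<Gamma>(\<alpha> \<mapsto> snd (qs ! i))) \<Delta>"
  proof (intro allI impI)
    fix i assume i: "i < length qs"
    show "tp src tgt (bs i) (\<Gamma>(\<alpha> \<mapsto> snd (qs ! i))) \<Delta>" unfolding bs_def
      by (rule tp_cut_l[OF selt[rule_format, OF i] t']) (use \<gamma> a aD in auto)
  qed
  have T2: "tp src tgt (Case \<alpha> (map (\<lambda>i. (fst (qs ! i), bs i)) [0..<length qs])) (\<Gamma>(\<alpha> \<mapsto> Sum qs)) \<Delta>"
    by (rule sumA_tp[OF so a bst])
  have "step (Cut \<gamma> (Case \<alpha> psid) t') (Case \<alpha> (map (\<lambda>(a, f). (a, Cut \<gamma> f t')) psid))"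
    by (rule step.r3) (use ag in auto)
  moreover have "map (\<lambda>(a, f). (a, Cut \<gamma> f t')) psid = map (\<lambda>i. (fst (qs ! i), bs i)) [0..<length qs]"
    by (simp add: psid_def bs_def)
  ultimately have s2: "sim src tgt (\<Gamma>(\<alpha> \<mapsto> Sum qs)) \<Delta> (Cut \<gamma> (Case \<alpha> psid) t')
      (Case \<alpha> (map (\<lambda>i. (fst (qs ! i), bs i)) [0..<length qs]))"
    using step_sim[OF T1 T2] by simp
  show ?thesis using bst sim_trans[OF sim_sym[OF s1] s2] by blast
qed


lemma sum_inj:
  assumes so: "seq_ok (\<Gamma>(\<alpha> \<mapsto> Sum qs)) \<Delta>" and a: "\<alpha> \<notin> dom \<Gamma>" and i: "i < length qs"
    and fs: "\<forall>j<length qs. tp src tgt (fs j) (\<Gamma>(\<alpha> \<mapsto> snd (qs ! j))) (\<Delta> :: ('c, 'a, 'e) side)"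
    and gs: "\<forall>j<length qs. tp src tgt (gs j) (\<Gamma>(\<alpha> \<mapsto> snd (qs ! j))) \<Delta>"
    and S: "sim src tgt (\<Gamma>(\<alpha> \<mapsto> Sum qs)) \<Delta> (Case \<alpha> (map (\<lambda>j. (fst (qs ! j), fs j)) [0..<length qs]))
              (Case \<alpha> (map (\<lambda>j. (fst (qs ! j), gs j)) [0..<length qs]))"
  shows "sim src tgt (\<Gamma>(\<alpha> \<mapsto> snd (qs ! i))) \<Delta> (fs i) (gs i)"
proof -
  let ?X = "snd (qs ! i)"
  have aD: "\<alpha> \<notin> dom \<Delta>" using so unfolding seq_ok_def by auto
  have fin: "finite (chans (fs i) \<union> chans (gs i) \<union> dom \<Gamma> \<union> dom \<Delta> \<union> {\<alpha>})"
  proof -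
    have "finite (chans (fs i))" "finite (chans (gs i))" using tp_fin fs gs i by blast+
    then show ?thesis using seq_ok_upd_fin[OF so] by simp
  qed
  obtain \<beta> where \<beta>: "\<beta> \<notin> chans (fs i) \<union> chans (gs i) \<union> dom \<Gamma> \<union> dom \<Delta> \<union> {\<alpha>}"
    using ex_new_if_finite[OF inf fin] by blast
  have ab: "\<beta> \<noteq> \<alpha>" "\<alpha> \<noteq> \<beta>" using \<beta> by auto
  obtain id1 :: "('a, 'm, 'e, 'c) tm" where id1: "is_id ?X \<beta> \<alpha> id1" "tp src tgt id1 [\<beta> \<mapsto> ?X] [\<alpha> \<mapsto> ?X]"
    using get_id[OF wfX[OF i] ab(1)] by blast
  obtain id2 :: "('a, 'm, 'e, 'c) tm" where id2: "is_id ?X \<alpha> \<beta> id2" "tp src tgt id2 [\<alpha> \<mapsto> ?X] [\<beta> \<mapsto> ?X]"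
    using get_id[OF wfX[OF i] ab(2)] by blast
  let ?\<iota> = "Sel \<alpha> (fst (qs ! i)) id1"
  have it: "tp src tgt ?\<iota> [\<beta> \<mapsto> ?X] [\<alpha> \<mapsto> Sum qs]" by (rule selS_tp[OF ab(1) i id1(2)])
  have C1: "tp src tgt (Cut \<alpha> ?\<iota> v) (\<Gamma>(\<beta> \<mapsto> ?X)) \<Delta>" if "tp src tgt v (\<Gamma>(\<alpha> \<mapsto> Sum qs)) \<Delta>" for v
    by (rule tp_cut_l[OF it that]) (use \<beta> a aD in auto)
  have C2: "tp src tgt (Cut \<beta> id2 v) (\<Gamma>(\<alpha> \<mapsto> ?X)) \<Delta>" if "tp src tgt v (\<Gamma>(\<beta> \<mapsto> ?X)) \<Delta>" for v
    by (rule tp_cut_l[OF id2(2) that]) (use \<beta> a aD in auto)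
  have fwd: "sim src tgt (\<Gamma>(\<beta> \<mapsto> ?X)) \<Delta> (Cut \<alpha> ?\<iota> (Case \<alpha> (map (\<lambda>j. (fst (qs ! j), us j)) [0..<length qs])))
              (ren \<alpha> \<beta> (us i))"
    if us: "\<forall>j<length qs. tp src tgt (us j) (\<Gamma>(\<alpha> \<mapsto> snd (qs ! j))) \<Delta>" and nb: "\<beta> \<notin> chans (us i)" for us
  proof -
    have ct: "tp src tgt (Case \<alpha> (map (\<lambda>j. (fst (qs ! j), us j)) [0..<length qs])) (\<Gamma>(\<alpha> \<mapsto> Sum qs)) \<Delta>"
      by (rule sumA_tp[OF so a us])
    have ui: "tp src tgt (us i) (\<Gamma>(\<alpha> \<mapsto> ?X)) \<Delta>" using us i by blast
    have m: "tp src tgt (Cut \<alpha> id1 (us i)) (\<Gamma>(\<beta> \<mapsto> ?X)) \<Delta>"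
      by (rule tp_cut_l[OF id1(2) ui]) (use \<beta> a aD in auto)
    have r: "tp src tgt (ren \<alpha> \<beta> (us i)) (\<Gamma>(\<beta> \<mapsto> ?X)) \<Delta>"
      by (rule tp_ren_upd[OF ui nb]) (use \<beta> a aD in auto)
    have "step (Cut \<alpha> ?\<iota> (Case \<alpha> (map (\<lambda>j. (fst (qs ! j), us j)) [0..<length qs]))) (Cut \<alpha> id1 (us i))"
      by (rule step.r11) (use i in force)
    then have s1: "sim src tgt (\<Gamma>(\<beta> \<mapsto> ?X)) \<Delta> (Cut \<alpha> ?\<iota> (Case \<alpha> (map (\<lambda>j. (fst (qs ! j), us j)) [0..<length qs])))
              (Cut \<alpha> id1 (us i))" by (rule step_sim[OF C1[OF ct] m])
    have "step (Cut \<alpha> id1 (us i)) (ren \<alpha> \<beta> (us i))" by (rule step.r2[OF id1(1) nb])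
    then have s2: "sim src tgt (\<Gamma>(\<beta> \<mapsto> ?X)) \<Delta> (Cut \<alpha> id1 (us i)) (ren \<alpha> \<beta> (us i))"
      by (rule step_sim[OF m r])
    show ?thesis by (rule sim_trans[OF s1 s2])
  qed
  have bwd: "sim src tgt (\<Gamma>(\<alpha> \<mapsto> ?X)) \<Delta> (Cut \<beta> id2 (ren \<alpha> \<beta> u)) u"
    if u: "tp src tgt u (\<Gamma>(\<alpha> \<mapsto> ?X)) \<Delta>" and nb: "\<beta> \<notin> chans u" for u
  proof -
    have r: "tp src tgt (ren \<alpha> \<beta> u) (\<Gamma>(\<beta> \<mapsto> ?X)) \<Delta>"
      by (rule tp_ren_upd[OF u nb]) (use \<beta> a aD in auto)
    have "step (Cut \<beta> id2 (ren \<alpha> \<beta> u)) (ren \<beta> \<alpha> (ren \<alpha> \<beta> u))"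
      by (rule step.r2[OF id2(1)]) (simp add: ren_fresh ab)
    then show ?thesis using step_sim[OF C2[OF r] u] ren_ren[OF nb] by simp
  qed
  have "sim src tgt (\<Gamma>(\<beta> \<mapsto> ?X)) \<Delta>
      (Cut \<alpha> ?\<iota> (Case \<alpha> (map (\<lambda>j. (fst (qs ! j), fs j)) [0..<length qs])))
      (Cut \<alpha> ?\<iota> (Case \<alpha> (map (\<lambda>j. (fst (qs ! j), gs j)) [0..<length qs])))"
    by (rule sim_cut_l[OF S C1])
  then have "sim src tgt (\<Gamma>(\<beta> \<mapsto> ?X)) \<Delta> (ren \<alpha> \<beta> (fs i)) (ren \<alpha> \<beta> (gs i))"
    using fwd[OF fs] fwd[OF gs] \<beta> by (meson UnI1 UnI2 sim_sym sim_trans)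
  then have "sim src tgt (\<Gamma>(\<alpha> \<mapsto> ?X)) \<Delta> (Cut \<beta> id2 (ren \<alpha> \<beta> (fs i))) (Cut \<beta> id2 (ren \<alpha> \<beta> (gs i)))"
    by (rule sim_cut_l[OF _ C2])
  then show ?thesis using bwd fs gs i \<beta> by (meson UnI1 UnI2 sim_sym sim_trans)
qed


lemma sum_bij:
  assumes so: "seq_ok (\<Gamma>(\<alpha> \<mapsto> Sum qs)) (\<Delta> :: ('c, 'a, 'e) side)" and a: "\<alpha> \<notin> dom \<Gamma>"
  shows "bij_betw (PhiS src tgt qs \<Gamma> \<Delta> \<alpha>)
          (Pi\<^sub>E {..<length (map snd qs)} (\<lambda>i. hom src tgt (\<Gamma>(\<alpha> \<mapsto> map snd qs ! i)) \<Delta>))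
          (hom src tgt (\<Gamma>(\<alpha> \<mapsto> Sum qs)) \<Delta>)"
  unfolding bij_betw_def
proof (intro conjI)
  let ?A = "Pi\<^sub>E {..<length (map snd qs)} (\<lambda>i. hom src tgt (\<Gamma>(\<alpha> \<mapsto> map snd qs ! i)) \<Delta>)"
  let ?C = "\<lambda>F. Case \<alpha> (map (\<lambda>i. (fst (qs ! i), rep (F i))) [0..<length qs])"
  have repF: "tp src tgt (rep (F i)) (\<Gamma>(\<alpha> \<mapsto> snd (qs ! i))) \<Delta> \<and>
      cls src tgt (\<Gamma>(\<alpha> \<mapsto> snd (qs ! i))) \<Delta> (rep (F i)) = F i"
    if "F \<in> ?A" "i < length qs" for F i
  proof (rule rep_hom)
    have "F i \<in> hom src tgt (\<Gamma>(\<alpha> \<mapsto> map snd qs ! i)) \<Delta>" using PiE_mem[OF that(1)] that(2) by simp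
    then show "F i \<in> hom src tgt (\<Gamma>(\<alpha> \<mapsto> snd (qs ! i))) \<Delta>" using that(2) by simp
  qed
  have caseT: "tp src tgt (?C F) (\<Gamma>(\<alpha> \<mapsto> Sum qs)) \<Delta>" if "F \<in> ?A" for F
    by (rule sumA_tp[OF so a]) (use repF[OF that] in blast)
  show "inj_on (PhiS src tgt qs \<Gamma> \<Delta> \<alpha>) ?A"
  proof (rule inj_onI)
    fix F G assume F: "F \<in> ?A" and G: "G \<in> ?A" and eq: "PhiS src tgt qs \<Gamma> \<Delta> \<alpha> F = PhiS src tgt qs \<Gamma> \<Delta> \<alpha> G"
    have S: "sim src tgt (\<Gamma>(\<alpha> \<mapsto> Sum qs)) \<Delta> (?C F) (?C G)"
      using eq unfolding PhiS_def by (rule cls_eqD[OF caseT[OF G]])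
    show "F = G"
    proof (rule ext)
      fix i show "F i = G i"
      proof (cases "i < length qs")
        case True
        have ss: "sim src tgt (\<Gamma>(\<alpha> \<mapsto> snd (qs ! i))) \<Delta> (rep (F i)) (rep (G i))"
          by (rule sum_inj[OF so a True _ _ S]) (use repF[OF F] repF[OF G] in blast)+
        show ?thesis using cls_eq[OF ss] repF[OF F True] repF[OF G True] by simp
      next
        case False
        then show ?thesis using PiE_arb[OF F] PiE_arb[OF G] by simp
      qed
    qed
  qed
  show "PhiS src tgt qs \<Gamma> \<Delta> \<alpha> ` ?A = hom src tgt (\<Gamma>(\<alpha> \<mapsto> Sum qs)) \<Delta>"
  proof
    show "PhiS src tgt qs \<Gamma> \<Delta> \<alpha> ` ?A \<subseteq> hom src tgt (\<Gamma>(\<alpha> \<mapsto> Sum qs)) \<Delta>"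
      unfolding PhiS_def using caseT cls_hom by blast
    show "hom src tgt (\<Gamma>(\<alpha> \<mapsto> Sum qs)) \<Delta> \<subseteq> PhiS src tgt qs \<Gamma> \<Delta> \<alpha> ` ?A"
    proof
      fix C assume "C \<in> hom src tgt (\<Gamma>(\<alpha> \<mapsto> Sum qs)) \<Delta>"
      then obtain t where t: "tp src tgt t (\<Gamma>(\<alpha> \<mapsto> Sum qs)) \<Delta>" "C = cls src tgt (\<Gamma>(\<alpha> \<mapsto> Sum qs)) \<Delta> t"
        unfolding hom_def by blast
      obtain bs where bs: "\<forall>i<length qs. tp src tgt (bs i) (\<Gamma>(\<alpha> \<mapsto> snd (qs ! i))) \<Delta>"
        "sim src tgt (\<Gamma>(\<alpha> \<mapsto> Sum qs)) \<Delta> t (Case \<alpha> (map (\<lambda>i. (fst (qs ! i), bs i)) [0..<length qs]))"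
        using sum_eta[OF so a t(1)] by blast
      define F where "F = (\<lambda>i\<in>{..<length (map snd qs)}. cls src tgt (\<Gamma>(\<alpha> \<mapsto> snd (qs ! i))) \<Delta> (bs i))"
      have FA: "F \<in> ?A" unfolding F_def restrict_PiE_iff
      proof
        fix i assume "i \<in> {..<length (map snd qs)}"
        then have i: "i < length qs" by simp
        show "cls src tgt (\<Gamma>(\<alpha> \<mapsto> snd (qs ! i))) \<Delta> (bs i) \<in> hom src tgt (\<Gamma>(\<alpha> \<mapsto> map snd qs ! i)) \<Delta>"
          using cls_hom[OF bs(1)[rule_format, OF i]] i by simp
      qed
      have "sim src tgt (\<Gamma>(\<alpha> \<mapsto> Sum qs)) \<Delta> (?C F) (Case \<alpha> (map (\<lambda>i. (fst (qs ! i), bs i)) [0..<length qs]))"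
      proof (rule case_cong_sim[where G = "\<lambda>i. \<Gamma>(\<alpha> \<mapsto> snd (qs ! i))" and D = "\<lambda>i. \<Delta>"])
        show "\<forall>i<length qs. sim src tgt (\<Gamma>(\<alpha> \<mapsto> snd (qs ! i))) \<Delta> (rep (F i)) (bs i)"
        proof (intro allI impI)
          fix i assume i: "i < length qs"
          then have Fi: "F i = cls src tgt (\<Gamma>(\<alpha> \<mapsto> snd (qs ! i))) \<Delta> (bs i)" unfolding F_def by simp
          show "sim src tgt (\<Gamma>(\<alpha> \<mapsto> snd (qs ! i))) \<Delta> (rep (F i)) (bs i)"
            unfolding Fi by (rule sim_sym[OF rep_cls[OF bs(1)[rule_format, OF i]]])
        qed
        show "tp src tgt (Case \<alpha> (map (\<lambda>i. (fst (qs ! i), h i)) [0..<length qs])) (\<Gamma>(\<alpha> \<mapsto> fm.Sum qs)) \<Delta>"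
          if "\<forall>i<length qs. tp src tgt (h i) (\<Gamma>(\<alpha> \<mapsto> snd (qs ! i))) \<Delta>" for h
          by (rule sumA_tp[OF so a that])
      qed
      then have "PhiS src tgt qs \<Gamma> \<Delta> \<alpha> F = cls src tgt (\<Gamma>(\<alpha> \<mapsto> Sum qs)) \<Delta> (Case \<alpha> (map (\<lambda>i. (fst (qs ! i), bs i)) [0..<length qs]))"
        unfolding PhiS_def by (rule cls_eq)
      also have "\<dots> = C" unfolding t(2) by (rule cls_eq[OF sim_sym[OF bs(2)]])
      finally have "PhiS src tgt qs \<Gamma> \<Delta> \<alpha> F = C" .
      then show "C \<in> PhiS src tgt qs \<Gamma> \<Delta> \<alpha> ` ?A" using FA by blast
    qed
  qed
qed


lemma sum_nat1:
  assumes so: "seq_ok (\<Gamma>(\<alpha> \<mapsto> Sum qs)) (\<Delta> :: ('c, 'a, 'e) side)" and a: "\<alpha> \<notin> dom \<Gamma>"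
    and ga: "\<gamma> \<noteq> \<alpha>" and gZ: "\<Gamma> \<gamma> = Some Z"
    and h: "tp src tgt h \<Gamma>0 (\<Delta>0(\<gamma> \<mapsto> Z))" and g0: "\<gamma> \<notin> dom \<Gamma>0 \<union> dom \<Delta>0"
    and dj: "(dom \<Gamma>0 \<union> dom \<Delta>0) \<inter> (dom \<Gamma> \<union> dom \<Delta> \<union> {\<alpha>}) = {}"
    and fs: "\<forall>i<length (map snd qs). tp src tgt (fs i) (\<Gamma>(\<alpha> \<mapsto> map snd qs ! i)) \<Delta>"
    and tt: "t \<in> PhiS src tgt qs \<Gamma> \<Delta> \<alpha> (\<lambda>i\<in>{..<length (map snd qs)}. cls src tgt (\<Gamma>(\<alpha> \<mapsto> map snd qs ! i)) \<Delta> (fs i))"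
  shows "cls src tgt ((\<Gamma>0 ++ \<Gamma>(\<gamma> := None))(\<alpha> \<mapsto> Sum qs)) (\<Delta>0 ++ \<Delta>) (Cut \<gamma> h t)
          = PhiS src tgt qs (\<Gamma>0 ++ \<Gamma>(\<gamma> := None)) (\<Delta>0 ++ \<Delta>) \<alpha>
              (\<lambda>i\<in>{..<length (map snd qs)}. cls src tgt ((\<Gamma>0 ++ \<Gamma>(\<gamma> := None))(\<alpha> \<mapsto> map snd qs ! i)) (\<Delta>0 ++ \<Delta>)
                                    (Cut \<gamma> h (fs i)))"
proof -
  let ?G1 = "\<Gamma>(\<gamma> := None)"
  let ?G' = "\<Gamma>0 ++ ?G1"
  let ?D' = "\<Delta>0 ++ \<Delta>"
  let ?n = "length qs"
  have gD: "\<gamma> \<notin> dom \<Delta>" using so gZ ga unfolding seq_ok_def by auto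
  have cutT: "tp src tgt (Cut \<gamma> h v) (?G'(\<alpha> \<mapsto> X)) ?D'" if v: "tp src tgt v (\<Gamma>(\<alpha> \<mapsto> X)) \<Delta>" for v X
  proof -
    have e: "\<Gamma>(\<alpha> \<mapsto> X) = (?G1(\<alpha> \<mapsto> X))(\<gamma> \<mapsto> Z)" by (rule ext) (use gZ ga in auto)
    have "tp src tgt (Cut \<gamma> h v) (\<Gamma>0 ++ ?G1(\<alpha> \<mapsto> X)) (\<Delta>0 ++ \<Delta>)"
      by (rule tp.cut[OF h v[unfolded e]]) (use g0 gD ga dj in auto)
    then show ?thesis by (simp only: map_add_upd)
  qed
  define F where "F = (\<lambda>i\<in>{..<length (map snd qs)}. cls src tgt (\<Gamma>(\<alpha> \<mapsto> map snd qs ! i)) \<Delta> (fs i))"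
  define G where "G = (\<lambda>i\<in>{..<length (map snd qs)}. cls src tgt (?G'(\<alpha> \<mapsto> map snd qs ! i)) ?D' (Cut \<gamma> h (fs i)))"
  have fs': "\<forall>i<?n. tp src tgt (fs i) (\<Gamma>(\<alpha> \<mapsto> snd (qs ! i))) \<Delta>" using fs by simp
  have Fi: "F i = cls src tgt (\<Gamma>(\<alpha> \<mapsto> snd (qs ! i))) \<Delta> (fs i)" if "i < ?n" for i
    unfolding F_def using that by simp
  have Gi: "G i = cls src tgt (?G'(\<alpha> \<mapsto> snd (qs ! i))) ?D' (Cut \<gamma> h (fs i))" if "i < ?n" for i
    unfolding G_def using that by simp
  have repF: "sim src tgt (\<Gamma>(\<alpha> \<mapsto> snd (qs ! i))) \<Delta> (fs i) (rep (F i))" if "i < ?n" for i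
    unfolding Fi[OF that] using fs' that rep_cls by blast
  have repFt: "\<forall>i<?n. tp src tgt (rep (F i)) (\<Gamma>(\<alpha> \<mapsto> snd (qs ! i))) \<Delta>" using repF sim_tp by blast
  let ?CR = "Case \<alpha> (map (\<lambda>i. (fst (qs ! i), rep (F i))) [0..<?n])"
  have CRt: "tp src tgt ?CR (\<Gamma>(\<alpha> \<mapsto> Sum qs)) \<Delta>" by (rule sumA_tp[OF so a repFt])
  have s0: "sim src tgt (\<Gamma>(\<alpha> \<mapsto> Sum qs)) \<Delta> ?CR t" using tt unfolding F_def[symmetric] PhiS_def mem_cls .
  have so': "seq_ok (?G'(\<alpha> \<mapsto> Sum qs)) ?D'" using tp_seq_ok[OF cutT[OF CRt]] .
  have a': "\<alpha> \<notin> dom ?G'" using a dj by auto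
  have L1: "cls src tgt (?G'(\<alpha> \<mapsto> Sum qs)) ?D' (Cut \<gamma> h t) = cls src tgt (?G'(\<alpha> \<mapsto> Sum qs)) ?D' (Cut \<gamma> h ?CR)"
    by (rule cls_eq[OF sim_cut_l[OF sim_sym[OF s0] cutT]])
  have brt: "\<forall>i<?n. tp src tgt (Cut \<gamma> h (rep (F i))) (?G'(\<alpha> \<mapsto> snd (qs ! i))) ?D'"
  proof (intro allI impI)
    fix i assume i: "i < ?n"
    show "tp src tgt (Cut \<gamma> h (rep (F i))) (?G'(\<alpha> \<mapsto> snd (qs ! i))) ?D'"
      by (rule cutT) (use repFt i in blast)
  qed
  have "step (Cut \<gamma> h ?CR) (Case \<alpha> (map (\<lambda>(a, f). (a, Cut \<gamma> h f)) (map (\<lambda>i. (fst (qs ! i), rep (F i))) [0..<?n])))"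
    by (rule step.r4) (use ga in auto)
  then have "step (Cut \<gamma> h ?CR) (Case \<alpha> (map (\<lambda>i. (fst (qs ! i), Cut \<gamma> h (rep (F i)))) [0..<?n]))" by (simp add: o_def)
  then have L2: "sim src tgt (?G'(\<alpha> \<mapsto> Sum qs)) ?D' (Cut \<gamma> h ?CR) (Case \<alpha> (map (\<lambda>i. (fst (qs ! i), Cut \<gamma> h (rep (F i)))) [0..<?n]))"
    by (rule step_sim[OF cutT[OF CRt] sumA_tp[OF so' a' brt]])
  have L3: "sim src tgt (?G'(\<alpha> \<mapsto> Sum qs)) ?D' (Case \<alpha> (map (\<lambda>i. (fst (qs ! i), Cut \<gamma> h (rep (F i)))) [0..<?n]))
       (Case \<alpha> (map (\<lambda>i. (fst (qs ! i), rep (G i))) [0..<?n]))"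
  proof (rule case_cong_sim[where G = "\<lambda>i. ?G'(\<alpha> \<mapsto> snd (qs ! i))" and D = "\<lambda>i. ?D'"])
    show "\<forall>i<?n. sim src tgt (?G'(\<alpha> \<mapsto> snd (qs ! i))) ?D' (Cut \<gamma> h (rep (F i))) (rep (G i))"
    proof (intro allI impI)
      fix i assume i: "i < ?n"
      have "sim src tgt (?G'(\<alpha> \<mapsto> snd (qs ! i))) ?D' (Cut \<gamma> h (rep (F i))) (Cut \<gamma> h (fs i))"
        by (rule sim_cut_l[OF sim_sym[OF repF[OF i]] cutT])
      moreover have "sim src tgt (?G'(\<alpha> \<mapsto> snd (qs ! i))) ?D' (Cut \<gamma> h (fs i)) (rep (G i))"
        unfolding Gi[OF i] by (rule rep_cls[OF cutT]) (use fs' i in blast)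
      ultimately show "sim src tgt (?G'(\<alpha> \<mapsto> snd (qs ! i))) ?D' (Cut \<gamma> h (rep (F i))) (rep (G i))"
        by (rule sim_trans)
    qed
    show "tp src tgt (Case \<alpha> (map (\<lambda>i. (fst (qs ! i), hh i)) [0..<?n])) (?G'(\<alpha> \<mapsto> Sum qs)) ?D'"
      if "\<forall>i<?n. tp src tgt (hh i) (?G'(\<alpha> \<mapsto> snd (qs ! i))) ?D'" for hh
      by (rule sumA_tp[OF so' a' that])
  qed
  show ?thesis unfolding G_def[symmetric] PhiS_def L1
    using cls_eq[OF sim_trans[OF L2 L3]] .
qed

lemma upd_add: "x \<notin> dom G0 \<Longrightarrow> G(x \<mapsto> X) ++ G0 = (G ++ G0)(x \<mapsto> X)"
  by (rule ext) (auto simp: map_add_def split: option.split)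

lemma sum_nat2:
  assumes so: "seq_ok (\<Gamma>(\<alpha> \<mapsto> Sum qs)) (\<Delta> :: ('c, 'a, 'e) side)" and a: "\<alpha> \<notin> dom \<Gamma>"
    and ga: "\<gamma> \<noteq> \<alpha>" and dZ: "\<Delta> \<gamma> = Some Z"
    and h: "tp src tgt h (\<Gamma>0(\<gamma> \<mapsto> Z)) \<Delta>0" and g0: "\<gamma> \<notin> dom \<Gamma>0 \<union> dom \<Delta>0"
    and dj: "(dom \<Gamma>0 \<union> dom \<Delta>0) \<inter> (dom \<Gamma> \<union> dom \<Delta> \<union> {\<alpha>}) = {}"
    and fs: "\<forall>i<length (map snd qs). tp src tgt (fs i) (\<Gamma>(\<alpha> \<mapsto> map snd qs ! i)) \<Delta>"
    and tt: "t \<in> PhiS src tgt qs \<Gamma> \<Delta> \<alpha> (\<lambda>i\<in>{..<length (map snd qs)}. cls src tgt (\<Gamma>(\<alpha> \<mapsto> map snd qs ! i)) \<Delta> (fs i))"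
  shows "cls src tgt ((\<Gamma> ++ \<Gamma>0)(\<alpha> \<mapsto> Sum qs)) (\<Delta>(\<gamma> := None) ++ \<Delta>0) (Cut \<gamma> t h)
          = PhiS src tgt qs (\<Gamma> ++ \<Gamma>0) (\<Delta>(\<gamma> := None) ++ \<Delta>0) \<alpha>
              (\<lambda>i\<in>{..<length (map snd qs)}. cls src tgt ((\<Gamma> ++ \<Gamma>0)(\<alpha> \<mapsto> map snd qs ! i)) (\<Delta>(\<gamma> := None) ++ \<Delta>0)
                                    (Cut \<gamma> (fs i) h))"
proof -
  let ?D1 = "\<Delta>(\<gamma> := None)"
  let ?G' = "\<Gamma> ++ \<Gamma>0"
  let ?D' = "?D1 ++ \<Delta>0"
  let ?n = "length qs"
  have gG: "\<gamma> \<notin> dom \<Gamma>" using so dZ ga unfolding seq_ok_def by auto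
  have cutT: "tp src tgt (Cut \<gamma> v h) (?G'(\<alpha> \<mapsto> X)) ?D'" if v: "tp src tgt v (\<Gamma>(\<alpha> \<mapsto> X)) \<Delta>" for v X
  proof -
    have e: "\<Delta> = ?D1(\<gamma> \<mapsto> Z)" by (rule ext) (use dZ in auto)
    have v': "tp src tgt v (\<Gamma>(\<alpha> \<mapsto> X)) (?D1(\<gamma> \<mapsto> Z))" using v by (simp only: e[symmetric])
    have "tp src tgt (Cut \<gamma> v h) (\<Gamma>(\<alpha> \<mapsto> X) ++ \<Gamma>0) ?D'"
      by (rule tp.cut[OF v' h]) (use g0 gG ga dj in auto)
    moreover have "\<alpha> \<notin> dom \<Gamma>0" using dj by auto
    ultimately show ?thesis using upd_add by metis
  qed
  define F where "F = (\<lambda>i\<in>{..<length (map snd qs)}. cls src tgt (\<Gamma>(\<alpha> \<mapsto> map snd qs ! i)) \<Delta> (fs i))"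
  define G where "G = (\<lambda>i\<in>{..<length (map snd qs)}. cls src tgt (?G'(\<alpha> \<mapsto> map snd qs ! i)) ?D' (Cut \<gamma> (fs i) h))"
  have fs': "\<forall>i<?n. tp src tgt (fs i) (\<Gamma>(\<alpha> \<mapsto> snd (qs ! i))) \<Delta>" using fs by simp
  have Fi: "F i = cls src tgt (\<Gamma>(\<alpha> \<mapsto> snd (qs ! i))) \<Delta> (fs i)" if "i < ?n" for i
    unfolding F_def using that by simp
  have Gi: "G i = cls src tgt (?G'(\<alpha> \<mapsto> snd (qs ! i))) ?D' (Cut \<gamma> (fs i) h)" if "i < ?n" for i
    unfolding G_def using that by simp
  have repF: "sim src tgt (\<Gamma>(\<alpha> \<mapsto> snd (qs ! i))) \<Delta> (fs i) (rep (F i))" if "i < ?n" for i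
    unfolding Fi[OF that] using fs' that rep_cls by blast
  have repFt: "\<forall>i<?n. tp src tgt (rep (F i)) (\<Gamma>(\<alpha> \<mapsto> snd (qs ! i))) \<Delta>" using repF sim_tp by blast
  let ?CR = "Case \<alpha> (map (\<lambda>i. (fst (qs ! i), rep (F i))) [0..<?n])"
  have CRt: "tp src tgt ?CR (\<Gamma>(\<alpha> \<mapsto> Sum qs)) \<Delta>" by (rule sumA_tp[OF so a repFt])
  have s0: "sim src tgt (\<Gamma>(\<alpha> \<mapsto> Sum qs)) \<Delta> ?CR t" using tt unfolding F_def[symmetric] PhiS_def mem_cls .
  have so': "seq_ok (?G'(\<alpha> \<mapsto> Sum qs)) ?D'" using tp_seq_ok[OF cutT[OF CRt]] .
  have a': "\<alpha> \<notin> dom ?G'" using a dj by auto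
  have L1: "cls src tgt (?G'(\<alpha> \<mapsto> Sum qs)) ?D' (Cut \<gamma> t h) = cls src tgt (?G'(\<alpha> \<mapsto> Sum qs)) ?D' (Cut \<gamma> ?CR h)"
    by (rule cls_eq[OF sim_cut_r[OF sim_sym[OF s0] cutT]])
  have brt: "\<forall>i<?n. tp src tgt (Cut \<gamma> (rep (F i)) h) (?G'(\<alpha> \<mapsto> snd (qs ! i))) ?D'"
  proof (intro allI impI)
    fix i assume i: "i < ?n"
    show "tp src tgt (Cut \<gamma> (rep (F i)) h) (?G'(\<alpha> \<mapsto> snd (qs ! i))) ?D'"
      by (rule cutT) (use repFt i in blast)
  qed
  have "step (Cut \<gamma> ?CR h) (Case \<alpha> (map (\<lambda>(a, f). (a, Cut \<gamma> f h)) (map (\<lambda>i. (fst (qs ! i), rep (F i))) [0..<?n])))"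
    by (rule step.r3) (use ga in auto)
  then have "step (Cut \<gamma> ?CR h) (Case \<alpha> (map (\<lambda>i. (fst (qs ! i), Cut \<gamma> (rep (F i)) h)) [0..<?n]))" by (simp add: o_def)
  then have L2: "sim src tgt (?G'(\<alpha> \<mapsto> Sum qs)) ?D' (Cut \<gamma> ?CR h) (Case \<alpha> (map (\<lambda>i. (fst (qs ! i), Cut \<gamma> (rep (F i)) h)) [0..<?n]))"
    by (rule step_sim[OF cutT[OF CRt] sumA_tp[OF so' a' brt]])
  have L3: "sim src tgt (?G'(\<alpha> \<mapsto> Sum qs)) ?D' (Case \<alpha> (map (\<lambda>i. (fst (qs ! i), Cut \<gamma> (rep (F i)) h)) [0..<?n]))
       (Case \<alpha> (map (\<lambda>i. (fst (qs ! i), rep (G i))) [0..<?n]))"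
  proof (rule case_cong_sim[where G = "\<lambda>i. ?G'(\<alpha> \<mapsto> snd (qs ! i))" and D = "\<lambda>i. ?D'"])
    show "\<forall>i<?n. sim src tgt (?G'(\<alpha> \<mapsto> snd (qs ! i))) ?D' (Cut \<gamma> (rep (F i)) h) (rep (G i))"
    proof (intro allI impI)
      fix i assume i: "i < ?n"
      have "sim src tgt (?G'(\<alpha> \<mapsto> snd (qs ! i))) ?D' (Cut \<gamma> (rep (F i)) h) (Cut \<gamma> (fs i) h)"
        by (rule sim_cut_r[OF sim_sym[OF repF[OF i]] cutT])
      moreover have "sim src tgt (?G'(\<alpha> \<mapsto> snd (qs ! i))) ?D' (Cut \<gamma> (fs i) h) (rep (G i))"
        unfolding Gi[OF i] by (rule rep_cls[OF cutT]) (use fs' i in blast)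
      ultimately show "sim src tgt (?G'(\<alpha> \<mapsto> snd (qs ! i))) ?D' (Cut \<gamma> (rep (F i)) h) (rep (G i))"
        by (rule sim_trans)
    qed
    show "tp src tgt (Case \<alpha> (map (\<lambda>i. (fst (qs ! i), hh i)) [0..<?n])) (?G'(\<alpha> \<mapsto> Sum qs)) ?D'"
      if "\<forall>i<?n. tp src tgt (hh i) (?G'(\<alpha> \<mapsto> snd (qs ! i))) ?D'" for hh
      by (rule sumA_tp[OF so' a' that])
  qed
  show ?thesis unfolding G_def[symmetric] PhiS_def L1
    using cls_eq[OF sim_trans[OF L2 L3]] .
qed


lemma sum_main: "is_poly_sum TYPE('c) src tgt (Sum qs) (map snd qs)"
  unfolding is_poly_sum_def
proof (rule exI[of _ "PhiS src tgt qs"], intro conjI allI impI)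
  fix \<Gamma> \<Delta> :: "('c, 'a, 'e) side" and \<alpha>
  assume "seq_ok (\<Gamma>(\<alpha> \<mapsto> fm.Sum qs)) \<Delta> \<and> \<alpha> \<notin> dom \<Gamma>"
  then show "bij_betw (PhiS src tgt qs \<Gamma> \<Delta> \<alpha>)
          (Pi\<^sub>E {..<length (map snd qs)} (\<lambda>i. hom src tgt (\<Gamma>(\<alpha> \<mapsto> map snd qs ! i)) \<Delta>))
          (hom src tgt (\<Gamma>(\<alpha> \<mapsto> Sum qs)) \<Delta>)" using sum_bij by blast
next
  fix \<Gamma> \<Delta> :: "('c, 'a, 'e) side" and \<alpha> \<Gamma>0 \<Delta>0 \<gamma> Z h fs t
  assume "seq_ok (\<Gamma>(\<alpha> \<mapsto> fm.Sum qs)) \<Delta> \<and> \<alpha> \<notin> dom \<Gamma> \<and> \<gamma> \<noteq> \<alpha> \<and> \<Gamma> \<gamma> = Some Z \<and>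
        tp src tgt h \<Gamma>0 (\<Delta>0(\<gamma> \<mapsto> Z)) \<and> \<gamma> \<notin> dom \<Gamma>0 \<union> dom \<Delta>0 \<and>
        (dom \<Gamma>0 \<union> dom \<Delta>0) \<inter> (dom \<Gamma> \<union> dom \<Delta> \<union> {\<alpha>}) = {} \<and>
        (\<forall>i < length (map snd qs). tp src tgt (fs i) (\<Gamma>(\<alpha> \<mapsto> map snd qs ! i)) \<Delta>) \<and>
        t \<in> PhiS src tgt qs \<Gamma> \<Delta> \<alpha> (\<lambda>i\<in>{..<length (map snd qs)}. cls src tgt (\<Gamma>(\<alpha> \<mapsto> map snd qs ! i)) \<Delta> (fs i))"
  then show "cls src tgt ((\<Gamma>0 ++ \<Gamma>(\<gamma> := None))(\<alpha> \<mapsto> Sum qs)) (\<Delta>0 ++ \<Delta>) (Cut \<gamma> h t)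
          = PhiS src tgt qs (\<Gamma>0 ++ \<Gamma>(\<gamma> := None)) (\<Delta>0 ++ \<Delta>) \<alpha>
              (\<lambda>i\<in>{..<length (map snd qs)}. cls src tgt ((\<Gamma>0 ++ \<Gamma>(\<gamma> := None))(\<alpha> \<mapsto> map snd qs ! i)) (\<Delta>0 ++ \<Delta>)
                                    (Cut \<gamma> h (fs i)))"
    by (elim conjE) (rule sum_nat1)
next
  fix \<Gamma> \<Delta> :: "('c, 'a, 'e) side" and \<alpha> \<Gamma>0 \<Delta>0 \<gamma> Z h fs t
  assume "seq_ok (\<Gamma>(\<alpha> \<mapsto> fm.Sum qs)) \<Delta> \<and> \<alpha> \<notin> dom \<Gamma> \<and> \<gamma> \<noteq> \<alpha> \<and> \<Delta> \<gamma> = Some Z \<and>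
        tp src tgt h (\<Gamma>0(\<gamma> \<mapsto> Z)) \<Delta>0 \<and> \<gamma> \<notin> dom \<Gamma>0 \<union> dom \<Delta>0 \<and>
        (dom \<Gamma>0 \<union> dom \<Delta>0) \<inter> (dom \<Gamma> \<union> dom \<Delta> \<union> {\<alpha>}) = {} \<and>
        (\<forall>i < length (map snd qs). tp src tgt (fs i) (\<Gamma>(\<alpha> \<mapsto> map snd qs ! i)) \<Delta>) \<and>
        t \<in> PhiS src tgt qs \<Gamma> \<Delta> \<alpha> (\<lambda>i\<in>{..<length (map snd qs)}. cls src tgt (\<Gamma>(\<alpha> \<mapsto> map snd qs ! i)) \<Delta> (fs i))"
  then show "cls src tgt ((\<Gamma> ++ \<Gamma>0)(\<alpha> \<mapsto> Sum qs)) (\<Delta>(\<gamma> := None) ++ \<Delta>0) (Cut \<gamma> t h)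
          = PhiS src tgt qs (\<Gamma> ++ \<Gamma>0) (\<Delta>(\<gamma> := None) ++ \<Delta>0) \<alpha>
              (\<lambda>i\<in>{..<length (map snd qs)}. cls src tgt ((\<Gamma> ++ \<Gamma>0)(\<alpha> \<mapsto> map snd qs ! i)) (\<Delta>(\<gamma> := None) ++ \<Delta>0)
                                    (Cut \<gamma> (fs i) h))"
    by (elim conjE) (rule sum_nat2)
qed

end



lemma upd_add': "x \<notin> dom G0 \<Longrightarrow> G(x \<mapsto> X) ++ G0 = (G ++ G0)(x \<mapsto> X)"
  by (rule ext) (auto simp: map_add_def split: option.split)

definition PhiP :: "('m \<Rightarrow> 'a list) \<Rightarrow> ('m \<Rightarrow> 'a list) \<Rightarrow> ('e \<times> ('a, 'e) fm) list \<Rightarrow>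
   ('c, 'a, 'e) side \<Rightarrow> ('c, 'a, 'e) side \<Rightarrow> 'c \<Rightarrow> (nat \<Rightarrow> ('a, 'm, 'e, 'c) tm set) \<Rightarrow> ('a, 'm, 'e, 'c) tm set" where
  "PhiP src tgt qs \<Gamma> \<Delta> \<alpha> F = cls src tgt \<Gamma> (\<Delta>(\<alpha> \<mapsto> Prod qs))
      (Case \<alpha> (map (\<lambda>i. (fst (qs ! i), rep (F i))) [0..<length qs]))"

context
  fixes src tgt :: "'m \<Rightarrow> 'a list" and qs :: "('e \<times> ('a, 'e) fm) list"
  assumes inf: "infinite (UNIV :: 'c set)" and d: "distinct (map fst qs)"
    and wfq: "\<forall>p\<in>set qs. wf_fm (snd p)"
begin

lemma wfP: "wf_fm (Prod qs)" using d wfq by (intro wf_fm.intros(3))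

lemma wfX': "i < length qs \<Longrightarrow> wf_fm (snd (qs ! i))" using wfq by simp

lemma prodA_tp:
  assumes "seq_ok \<Gamma> (\<Delta>(\<alpha> \<mapsto> Prod qs))" "\<alpha> \<notin> dom \<Delta>"
    "\<forall>i<length qs. tp src tgt (h i) \<Gamma> (\<Delta>(\<alpha> \<mapsto> snd (qs ! i)))"
  shows "tp src tgt (Case \<alpha> (map (\<lambda>i. (fst (qs ! i), h i)) [0..<length qs])) \<Gamma> (\<Delta>(\<alpha> \<mapsto> Prod qs))"
proof (rule tp.tuple)
  show "map fst (map (\<lambda>i. (fst (qs ! i), h i)) [0..<length qs]) = map fst qs"
    by (simp add: o_def map_fst_nth)
qed (use assms d in auto)

lemma selP_tp:
  assumes "x \<noteq> y" "i < length qs" "tp src tgt u [x \<mapsto> snd (qs ! i)] [y \<mapsto> snd (qs ! i)]"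
  shows "tp src tgt (Sel x (fst (qs ! i)) u) [x \<mapsto> Prod qs] [y \<mapsto> snd (qs ! i)]"
proof (rule tp.proj[where X = "snd (qs ! i)" and \<Gamma> = Map.empty])
  show "seq_ok [x \<mapsto> Prod qs] [y \<mapsto> snd (qs ! i)]"
    by (rule seq_ok_single[OF assms(1) wfP wfX'[OF assms(2)]])
  show "(fst (qs ! i), snd (qs ! i)) \<in> set qs" using assms(2) by simp
qed (use assms d in auto)

lemma get_id':
  assumes "wf_fm X" "x \<noteq> (y :: 'c)"
  obtains u :: "('a, 'm, 'e, 'c) tm" where "is_id X x y u" "tp src tgt u [x \<mapsto> X] [y \<mapsto> X]"
  using id_exists[OF inf assms(1)] assms(2) by blast

lemma prod_eta:
  assumes so: "seq_ok \<Gamma> (\<Delta>(\<alpha> \<mapsto> Prod qs))" and a: "\<alpha> \<notin> dom \<Delta>"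
    and t: "tp src tgt t \<Gamma> ((\<Delta> :: ('c, 'a, 'e) side)(\<alpha> \<mapsto> Prod qs))"
  shows "\<exists>bs. (\<forall>i<length qs. tp src tgt (bs i) \<Gamma> (\<Delta>(\<alpha> \<mapsto> snd (qs ! i)))) \<and>
     sim src tgt \<Gamma> (\<Delta>(\<alpha> \<mapsto> Prod qs)) t (Case \<alpha> (map (\<lambda>i. (fst (qs ! i), bs i)) [0..<length qs]))"
proof -
  have aG: "\<alpha> \<notin> dom \<Gamma>" using so unfolding seq_ok_def by auto
  have fin: "finite (chans t \<union> dom \<Gamma> \<union> dom \<Delta> \<union> {\<alpha>})"
    using tp_fin[OF t] seq_ok_upd_fin2[OF so] by simp
  obtain \<gamma> where \<gamma>: "\<gamma> \<notin> chans t \<union> dom \<Gamma> \<union> dom \<Delta> \<union> {\<alpha>}" using ex_new_if_finite[OF inf fin] by blast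
  define t' where "t' = ren \<alpha> \<gamma> t"
  have t': "tp src tgt t' \<Gamma> (\<Delta>(\<gamma> \<mapsto> Prod qs))" unfolding t'_def
    by (rule tp_ren_upd2[OF t]) (use \<gamma> a aG in auto)
  have "\<forall>i<length qs. \<exists>u :: ('a, 'm, 'e, 'c) tm. is_id (snd (qs ! i)) \<gamma> \<alpha> u \<and>
          tp src tgt u [\<gamma> \<mapsto> snd (qs ! i)] [\<alpha> \<mapsto> snd (qs ! i)]"
  proof (intro allI impI)
    fix i assume "i < length qs"
    from get_id'[OF wfX'[OF this], of \<gamma> \<alpha>] \<gamma>
    show "\<exists>u :: ('a, 'm, 'e, 'c) tm. is_id (snd (qs ! i)) \<gamma> \<alpha> u \<and>
          tp src tgt u [\<gamma> \<mapsto> snd (qs ! i)] [\<alpha> \<mapsto> snd (qs ! i)]" by blast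
  qed
  from list_choice[OF this] obtain ts where ts: "length ts = length qs"
    "\<forall>i<length qs. is_id (snd (qs ! i)) \<gamma> \<alpha> (ts ! i) \<and>
          tp src tgt (ts ! i) [\<gamma> \<mapsto> snd (qs ! i)] [\<alpha> \<mapsto> snd (qs ! i)]" by blast
  define psid where "psid = map (\<lambda>i. (fst (qs ! i), Sel \<gamma> (fst (qs ! i)) (ts ! i))) [0..<length qs]"
  have ag: "\<gamma> \<noteq> \<alpha>" using \<gamma> by auto
  have isid: "is_id (Prod qs) \<gamma> \<alpha> (Case \<alpha> psid)" unfolding psid_def
    using ts ag by (intro is_id.intros(3)) auto
  have selt: "\<forall>i<length qs. tp src tgt (Sel \<gamma> (fst (qs ! i)) (ts ! i)) [\<gamma> \<mapsto> Prod qs] (Map.empty(\<alpha> \<mapsto> snd (qs ! i)))"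
  proof (intro allI impI)
    fix i assume i: "i < length qs"
    show "tp src tgt (Sel \<gamma> (fst (qs ! i)) (ts ! i)) [\<gamma> \<mapsto> Prod qs] (Map.empty(\<alpha> \<mapsto> snd (qs ! i)))"
      by (rule selP_tp[OF ag i]) (use ts i in blast)
  qed
  have idt: "tp src tgt (Case \<alpha> psid) [\<gamma> \<mapsto> Prod qs] [\<alpha> \<mapsto> Prod qs]" unfolding psid_def
    by (rule prodA_tp[OF seq_ok_single[OF ag wfP wfP] _ selt]) simp
  have T1: "tp src tgt (Cut \<gamma> t' (Case \<alpha> psid)) \<Gamma> (\<Delta>(\<alpha> \<mapsto> Prod qs))"
    by (rule tp_cut_r[OF t' idt]) (use \<gamma> a aG in auto)
  have "step (Cut \<gamma> t' (Case \<alpha> psid)) (ren \<gamma> \<alpha> t')"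
    by (rule step.r1[OF isid]) (simp add: t'_def ren_fresh ag[symmetric])
  moreover have "ren \<gamma> \<alpha> t' = t" unfolding t'_def by (rule ren_ren) (use \<gamma> in auto)
  ultimately have s1: "sim src tgt \<Gamma> (\<Delta>(\<alpha> \<mapsto> Prod qs)) (Cut \<gamma> t' (Case \<alpha> psid)) t"
    using step_sim[OF T1 t] by simp
  define bs where "bs i = Cut \<gamma> t' (Sel \<gamma> (fst (qs ! i)) (ts ! i))" for i
  have bst: "\<forall>i<length qs. tp src tgt (bs i) \<Gamma> (\<Delta>(\<alpha> \<mapsto> snd (qs ! i)))"
  proof (intro allI impI)
    fix i assume i: "i < length qs"
    show "tp src tgt (bs i) \<Gamma> (\<Delta>(\<alpha> \<mapsto> snd (qs ! i)))" unfolding bs_def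
      by (rule tp_cut_r[OF t' selt[rule_format, OF i]]) (use \<gamma> a aG in auto)
  qed
  have T2: "tp src tgt (Case \<alpha> (map (\<lambda>i. (fst (qs ! i), bs i)) [0..<length qs])) \<Gamma> (\<Delta>(\<alpha> \<mapsto> Prod qs))"
    by (rule prodA_tp[OF so a bst])
  have "step (Cut \<gamma> t' (Case \<alpha> psid)) (Case \<alpha> (map (\<lambda>(a, f). (a, Cut \<gamma> t' f)) psid))"
    by (rule step.r4) (use ag in auto)
  moreover have "map (\<lambda>(a, f). (a, Cut \<gamma> t' f)) psid = map (\<lambda>i. (fst (qs ! i), bs i)) [0..<length qs]"
    by (simp add: psid_def bs_def)
  ultimately have s2: "sim src tgt \<Gamma> (\<Delta>(\<alpha> \<mapsto> Prod qs)) (Cut \<gamma> t' (Case \<alpha> psid))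
      (Case \<alpha> (map (\<lambda>i. (fst (qs ! i), bs i)) [0..<length qs]))"
    using step_sim[OF T1 T2] by simp
  show ?thesis using bst sim_trans[OF sim_sym[OF s1] s2] by blast
qed


lemma prod_inj:
  assumes so: "seq_ok \<Gamma> (\<Delta>(\<alpha> \<mapsto> Prod qs))" and a: "\<alpha> \<notin> dom \<Delta>" and i: "i < length qs"
    and fs: "\<forall>j<length qs. tp src tgt (fs j) \<Gamma> ((\<Delta> :: ('c, 'a, 'e) side)(\<alpha> \<mapsto> snd (qs ! j)))"
    and gs: "\<forall>j<length qs. tp src tgt (gs j) \<Gamma> (\<Delta>(\<alpha> \<mapsto> snd (qs ! j)))"
    and S: "sim src tgt \<Gamma> (\<Delta>(\<alpha> \<mapsto> Prod qs)) (Case \<alpha> (map (\<lambda>j. (fst (qs ! j), fs j)) [0..<length qs]))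
              (Case \<alpha> (map (\<lambda>j. (fst (qs ! j), gs j)) [0..<length qs]))"
  shows "sim src tgt \<Gamma> (\<Delta>(\<alpha> \<mapsto> snd (qs ! i))) (fs i) (gs i)"
proof -
  let ?X = "snd (qs ! i)"
  have aG: "\<alpha> \<notin> dom \<Gamma>" using so unfolding seq_ok_def by auto
  have fin: "finite (chans (fs i) \<union> chans (gs i) \<union> dom \<Gamma> \<union> dom \<Delta> \<union> {\<alpha>})"
  proof -
    have "finite (chans (fs i))" "finite (chans (gs i))" using tp_fin fs gs i by blast+
    then show ?thesis using seq_ok_upd_fin2[OF so] by simp
  qed
  obtain \<beta> where \<beta>: "\<beta> \<notin> chans (fs i) \<union> chans (gs i) \<union> dom \<Gamma> \<union> dom \<Delta> \<union> {\<alpha>}"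
    using ex_new_if_finite[OF inf fin] by blast
  have ab: "\<beta> \<noteq> \<alpha>" "\<alpha> \<noteq> \<beta>" using \<beta> by auto
  obtain id1 :: "('a, 'm, 'e, 'c) tm" where id1: "is_id ?X \<alpha> \<beta> id1" "tp src tgt id1 [\<alpha> \<mapsto> ?X] [\<beta> \<mapsto> ?X]"
    using get_id'[OF wfX'[OF i] ab(2)] by blast
  obtain id2 :: "('a, 'm, 'e, 'c) tm" where id2: "is_id ?X \<beta> \<alpha> id2" "tp src tgt id2 [\<beta> \<mapsto> ?X] [\<alpha> \<mapsto> ?X]"
    using get_id'[OF wfX'[OF i] ab(1)] by blast
  let ?\<pi> = "Sel \<alpha> (fst (qs ! i)) id1"
  have pt: "tp src tgt ?\<pi> [\<alpha> \<mapsto> Prod qs] [\<beta> \<mapsto> ?X]" by (rule selP_tp[OF ab(2) i id1(2)])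
  have C1: "tp src tgt (Cut \<alpha> v ?\<pi>) \<Gamma> (\<Delta>(\<beta> \<mapsto> ?X))" if "tp src tgt v \<Gamma> (\<Delta>(\<alpha> \<mapsto> Prod qs))" for v
    by (rule tp_cut_r[OF that pt]) (use \<beta> a aG in auto)
  have C2: "tp src tgt (Cut \<beta> v id2) \<Gamma> (\<Delta>(\<alpha> \<mapsto> ?X))" if "tp src tgt v \<Gamma> (\<Delta>(\<beta> \<mapsto> ?X))" for v
    by (rule tp_cut_r[OF that id2(2)]) (use \<beta> a aG in auto)
  have fwd: "sim src tgt \<Gamma> (\<Delta>(\<beta> \<mapsto> ?X)) (Cut \<alpha> (Case \<alpha> (map (\<lambda>j. (fst (qs ! j), us j)) [0..<length qs])) ?\<pi>)
              (ren \<alpha> \<beta> (us i))"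
    if us: "\<forall>j<length qs. tp src tgt (us j) \<Gamma> (\<Delta>(\<alpha> \<mapsto> snd (qs ! j)))" and nb: "\<beta> \<notin> chans (us i)" for us
  proof -
    have ct: "tp src tgt (Case \<alpha> (map (\<lambda>j. (fst (qs ! j), us j)) [0..<length qs])) \<Gamma> (\<Delta>(\<alpha> \<mapsto> Prod qs))"
      by (rule prodA_tp[OF so a us])
    have ui: "tp src tgt (us i) \<Gamma> (\<Delta>(\<alpha> \<mapsto> ?X))" using us i by blast
    have m: "tp src tgt (Cut \<alpha> (us i) id1) \<Gamma> (\<Delta>(\<beta> \<mapsto> ?X))"
      by (rule tp_cut_r[OF ui id1(2)]) (use \<beta> a aG in auto)
    have r: "tp src tgt (ren \<alpha> \<beta> (us i)) \<Gamma> (\<Delta>(\<beta> \<mapsto> ?X))"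
      by (rule tp_ren_upd2[OF ui nb]) (use \<beta> a aG in auto)
    have "step (Cut \<alpha> (Case \<alpha> (map (\<lambda>j. (fst (qs ! j), us j)) [0..<length qs])) ?\<pi>) (Cut \<alpha> (us i) id1)"
      by (rule step.r12) (use i in force)
    then have s1: "sim src tgt \<Gamma> (\<Delta>(\<beta> \<mapsto> ?X)) (Cut \<alpha> (Case \<alpha> (map (\<lambda>j. (fst (qs ! j), us j)) [0..<length qs])) ?\<pi>)
              (Cut \<alpha> (us i) id1)" by (rule step_sim[OF C1[OF ct] m])
    have "step (Cut \<alpha> (us i) id1) (ren \<alpha> \<beta> (us i))" by (rule step.r1[OF id1(1) nb])
    then have s2: "sim src tgt \<Gamma> (\<Delta>(\<beta> \<mapsto> ?X)) (Cut \<alpha> (us i) id1) (ren \<alpha> \<beta> (us i))"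
      by (rule step_sim[OF m r])
    show ?thesis by (rule sim_trans[OF s1 s2])
  qed
  have bwd: "sim src tgt \<Gamma> (\<Delta>(\<alpha> \<mapsto> ?X)) (Cut \<beta> (ren \<alpha> \<beta> u) id2) u"
    if u: "tp src tgt u \<Gamma> (\<Delta>(\<alpha> \<mapsto> ?X))" and nb: "\<beta> \<notin> chans u" for u
  proof -
    have r: "tp src tgt (ren \<alpha> \<beta> u) \<Gamma> (\<Delta>(\<beta> \<mapsto> ?X))"
      by (rule tp_ren_upd2[OF u nb]) (use \<beta> a aG in auto)
    have "step (Cut \<beta> (ren \<alpha> \<beta> u) id2) (ren \<beta> \<alpha> (ren \<alpha> \<beta> u))"
      by (rule step.r1[OF id2(1)]) (simp add: ren_fresh ab)
    then show ?thesis using step_sim[OF C2[OF r] u] ren_ren[OF nb] by simp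
  qed
  have "sim src tgt \<Gamma> (\<Delta>(\<beta> \<mapsto> ?X))
      (Cut \<alpha> (Case \<alpha> (map (\<lambda>j. (fst (qs ! j), fs j)) [0..<length qs])) ?\<pi>)
      (Cut \<alpha> (Case \<alpha> (map (\<lambda>j. (fst (qs ! j), gs j)) [0..<length qs])) ?\<pi>)"
    by (rule sim_cut_r[OF S C1])
  then have "sim src tgt \<Gamma> (\<Delta>(\<beta> \<mapsto> ?X)) (ren \<alpha> \<beta> (fs i)) (ren \<alpha> \<beta> (gs i))"
    using fwd[OF fs] fwd[OF gs] \<beta> by (meson UnI1 UnI2 sim_sym sim_trans)
  then have "sim src tgt \<Gamma> (\<Delta>(\<alpha> \<mapsto> ?X)) (Cut \<beta> (ren \<alpha> \<beta> (fs i)) id2) (Cut \<beta> (ren \<alpha> \<beta> (gs i)) id2)"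
    by (rule sim_cut_r[OF _ C2])
  then show ?thesis using bwd fs gs i \<beta> by (meson UnI1 UnI2 sim_sym sim_trans)
qed

lemma prod_bij:
  assumes so: "seq_ok \<Gamma> ((\<Delta> :: ('c, 'a, 'e) side)(\<alpha> \<mapsto> Prod qs))" and a: "\<alpha> \<notin> dom \<Delta>"
  shows "bij_betw (PhiP src tgt qs \<Gamma> \<Delta> \<alpha>)
          (Pi\<^sub>E {..<length (map snd qs)} (\<lambda>i. hom src tgt \<Gamma> (\<Delta>(\<alpha> \<mapsto> map snd qs ! i))))
          (hom src tgt \<Gamma> (\<Delta>(\<alpha> \<mapsto> Prod qs)))"
  unfolding bij_betw_def
proof (intro conjI)
  let ?A = "Pi\<^sub>E {..<length (map snd qs)} (\<lambda>i. hom src tgt \<Gamma> (\<Delta>(\<alpha> \<mapsto> map snd qs ! i)))"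
  let ?C = "\<lambda>F. Case \<alpha> (map (\<lambda>i. (fst (qs ! i), rep (F i))) [0..<length qs])"
  have repF: "tp src tgt (rep (F i)) \<Gamma> (\<Delta>(\<alpha> \<mapsto> snd (qs ! i))) \<and>
      cls src tgt \<Gamma> (\<Delta>(\<alpha> \<mapsto> snd (qs ! i))) (rep (F i)) = F i"
    if "F \<in> ?A" "i < length qs" for F i
  proof (rule rep_hom)
    have "F i \<in> hom src tgt \<Gamma> (\<Delta>(\<alpha> \<mapsto> map snd qs ! i))" using PiE_mem[OF that(1)] that(2) by simp
    then show "F i \<in> hom src tgt \<Gamma> (\<Delta>(\<alpha> \<mapsto> snd (qs ! i)))" using that(2) by simp
  qed
  have caseT: "tp src tgt (?C F) \<Gamma> (\<Delta>(\<alpha> \<mapsto> Prod qs))" if "F \<in> ?A" for F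
    by (rule prodA_tp[OF so a]) (use repF[OF that] in blast)
  show "inj_on (PhiP src tgt qs \<Gamma> \<Delta> \<alpha>) ?A"
  proof (rule inj_onI)
    fix F G assume F: "F \<in> ?A" and G: "G \<in> ?A" and eq: "PhiP src tgt qs \<Gamma> \<Delta> \<alpha> F = PhiP src tgt qs \<Gamma> \<Delta> \<alpha> G"
    have S: "sim src tgt \<Gamma> (\<Delta>(\<alpha> \<mapsto> Prod qs)) (?C F) (?C G)"
      using eq unfolding PhiP_def by (rule cls_eqD[OF caseT[OF G]])
    show "F = G"
    proof (rule ext)
      fix i show "F i = G i"
      proof (cases "i < length qs")
        case True
        have ss: "sim src tgt \<Gamma> (\<Delta>(\<alpha> \<mapsto> snd (qs ! i))) (rep (F i)) (rep (G i))"
          by (rule prod_inj[OF so a True _ _ S]) (use repF[OF F] repF[OF G] in blast)+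
        show ?thesis using cls_eq[OF ss] repF[OF F True] repF[OF G True] by simp
      next
        case False
        then show ?thesis using PiE_arb[OF F] PiE_arb[OF G] by simp
      qed
    qed
  qed
  show "PhiP src tgt qs \<Gamma> \<Delta> \<alpha> ` ?A = hom src tgt \<Gamma> (\<Delta>(\<alpha> \<mapsto> Prod qs))"
  proof
    show "PhiP src tgt qs \<Gamma> \<Delta> \<alpha> ` ?A \<subseteq> hom src tgt \<Gamma> (\<Delta>(\<alpha> \<mapsto> Prod qs))"
      unfolding PhiP_def using caseT cls_hom by blast
    show "hom src tgt \<Gamma> (\<Delta>(\<alpha> \<mapsto> Prod qs)) \<subseteq> PhiP src tgt qs \<Gamma> \<Delta> \<alpha> ` ?A"
    proof
      fix C assume "C \<in> hom src tgt \<Gamma> (\<Delta>(\<alpha> \<mapsto> Prod qs))"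
      then obtain t where t: "tp src tgt t \<Gamma> (\<Delta>(\<alpha> \<mapsto> Prod qs))" "C = cls src tgt \<Gamma> (\<Delta>(\<alpha> \<mapsto> Prod qs)) t"
        unfolding hom_def by blast
      obtain bs where bs: "\<forall>i<length qs. tp src tgt (bs i) \<Gamma> (\<Delta>(\<alpha> \<mapsto> snd (qs ! i)))"
        "sim src tgt \<Gamma> (\<Delta>(\<alpha> \<mapsto> Prod qs)) t (Case \<alpha> (map (\<lambda>i. (fst (qs ! i), bs i)) [0..<length qs]))"
        using prod_eta[OF so a t(1)] by blast
      define F where "F = (\<lambda>i\<in>{..<length (map snd qs)}. cls src tgt \<Gamma> (\<Delta>(\<alpha> \<mapsto> snd (qs ! i))) (bs i))"
      have FA: "F \<in> ?A" unfolding F_def restrict_PiE_iff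
      proof
        fix i assume "i \<in> {..<length (map snd qs)}"
        then have i: "i < length qs" by simp
        show "cls src tgt \<Gamma> (\<Delta>(\<alpha> \<mapsto> snd (qs ! i))) (bs i) \<in> hom src tgt \<Gamma> (\<Delta>(\<alpha> \<mapsto> map snd qs ! i))"
          using cls_hom[OF bs(1)[rule_format, OF i]] i by simp
      qed
      have "sim src tgt \<Gamma> (\<Delta>(\<alpha> \<mapsto> Prod qs)) (?C F) (Case \<alpha> (map (\<lambda>i. (fst (qs ! i), bs i)) [0..<length qs]))"
      proof (rule case_cong_sim[where G = "\<lambda>i. \<Gamma>" and D = "\<lambda>i. \<Delta>(\<alpha> \<mapsto> snd (qs ! i))"])
        show "\<forall>i<length qs. sim src tgt \<Gamma> (\<Delta>(\<alpha> \<mapsto> snd (qs ! i))) (rep (F i)) (bs i)"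
        proof (intro allI impI)
          fix i assume i: "i < length qs"
          then have Fi: "F i = cls src tgt \<Gamma> (\<Delta>(\<alpha> \<mapsto> snd (qs ! i))) (bs i)" unfolding F_def by simp
          show "sim src tgt \<Gamma> (\<Delta>(\<alpha> \<mapsto> snd (qs ! i))) (rep (F i)) (bs i)"
            unfolding Fi by (rule sim_sym[OF rep_cls[OF bs(1)[rule_format, OF i]]])
        qed
        show "tp src tgt (Case \<alpha> (map (\<lambda>i. (fst (qs ! i), h i)) [0..<length qs])) \<Gamma> (\<Delta>(\<alpha> \<mapsto> Prod qs))"
          if "\<forall>i<length qs. tp src tgt (h i) \<Gamma> (\<Delta>(\<alpha> \<mapsto> snd (qs ! i)))" for h
          by (rule prodA_tp[OF so a that])
      qed
      then have "PhiP src tgt qs \<Gamma> \<Delta> \<alpha> F = cls src tgt \<Gamma> (\<Delta>(\<alpha> \<mapsto> Prod qs)) (Case \<alpha> (map (\<lambda>i. (fst (qs ! i), bs i)) [0..<length qs]))"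
        unfolding PhiP_def by (rule cls_eq)
      also have "\<dots> = C" unfolding t(2) by (rule cls_eq[OF sim_sym[OF bs(2)]])
      finally have "PhiP src tgt qs \<Gamma> \<Delta> \<alpha> F = C" .
      then show "C \<in> PhiP src tgt qs \<Gamma> \<Delta> \<alpha> ` ?A" using FA by blast
    qed
  qed
qed

lemma prod_nat1:
  assumes so: "seq_ok \<Gamma> ((\<Delta> :: ('c, 'a, 'e) side)(\<alpha> \<mapsto> Prod qs))" and a: "\<alpha> \<notin> dom \<Delta>"
    and ga: "\<gamma> \<noteq> \<alpha>" and gZ: "\<Gamma> \<gamma> = Some Z"
    and h: "tp src tgt h \<Gamma>0 (\<Delta>0(\<gamma> \<mapsto> Z))" and g0: "\<gamma> \<notin> dom \<Gamma>0 \<union> dom \<Delta>0"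
    and dj: "(dom \<Gamma>0 \<union> dom \<Delta>0) \<inter> (dom \<Gamma> \<union> dom \<Delta> \<union> {\<alpha>}) = {}"
    and fs: "\<forall>i<length (map snd qs). tp src tgt (fs i) \<Gamma> (\<Delta>(\<alpha> \<mapsto> map snd qs ! i))"
    and tt: "t \<in> PhiP src tgt qs \<Gamma> \<Delta> \<alpha> (\<lambda>i\<in>{..<length (map snd qs)}. cls src tgt \<Gamma> (\<Delta>(\<alpha> \<mapsto> map snd qs ! i)) (fs i))"
  shows "cls src tgt (\<Gamma>0 ++ \<Gamma>(\<gamma> := None)) ((\<Delta>0 ++ \<Delta>)(\<alpha> \<mapsto> Prod qs)) (Cut \<gamma> h t)
          = PhiP src tgt qs (\<Gamma>0 ++ \<Gamma>(\<gamma> := None)) (\<Delta>0 ++ \<Delta>) \<alpha>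
              (\<lambda>i\<in>{..<length (map snd qs)}. cls src tgt (\<Gamma>0 ++ \<Gamma>(\<gamma> := None)) ((\<Delta>0 ++ \<Delta>)(\<alpha> \<mapsto> map snd qs ! i))
                                    (Cut \<gamma> h (fs i)))"
proof -
  let ?G1 = "\<Gamma>(\<gamma> := None)"
  let ?G' = "\<Gamma>0 ++ ?G1"
  let ?D' = "\<Delta>0 ++ \<Delta>"
  let ?n = "length qs"
  have gD: "\<gamma> \<notin> dom \<Delta>" using so gZ ga unfolding seq_ok_def by auto
  have cutT: "tp src tgt (Cut \<gamma> h v) ?G' (?D'(\<alpha> \<mapsto> X))" if v: "tp src tgt v \<Gamma> (\<Delta>(\<alpha> \<mapsto> X))" for v X
  proof -
    have e: "\<Gamma> = ?G1(\<gamma> \<mapsto> Z)" by (rule ext) (use gZ in auto)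
    have v': "tp src tgt v (?G1(\<gamma> \<mapsto> Z)) (\<Delta>(\<alpha> \<mapsto> X))" using v by (simp only: e[symmetric])
    have "tp src tgt (Cut \<gamma> h v) (\<Gamma>0 ++ ?G1) (\<Delta>0 ++ \<Delta>(\<alpha> \<mapsto> X))"
      by (rule tp.cut[OF h v']) (use g0 gD ga dj in auto)
    then show ?thesis by (simp only: map_add_upd)
  qed
  define F where "F = (\<lambda>i\<in>{..<length (map snd qs)}. cls src tgt \<Gamma> (\<Delta>(\<alpha> \<mapsto> map snd qs ! i)) (fs i))"
  define G where "G = (\<lambda>i\<in>{..<length (map snd qs)}. cls src tgt ?G' (?D'(\<alpha> \<mapsto> map snd qs ! i)) (Cut \<gamma> h (fs i)))"
  have fs': "\<forall>i<?n. tp src tgt (fs i) \<Gamma> (\<Delta>(\<alpha> \<mapsto> snd (qs ! i)))" using fs by simp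
  have Fi: "F i = cls src tgt \<Gamma> (\<Delta>(\<alpha> \<mapsto> snd (qs ! i))) (fs i)" if "i < ?n" for i
    unfolding F_def using that by simp
  have Gi: "G i = cls src tgt ?G' (?D'(\<alpha> \<mapsto> snd (qs ! i))) (Cut \<gamma> h (fs i))" if "i < ?n" for i
    unfolding G_def using that by simp
  have repF: "sim src tgt \<Gamma> (\<Delta>(\<alpha> \<mapsto> snd (qs ! i))) (fs i) (rep (F i))" if "i < ?n" for i
    unfolding Fi[OF that] using fs' that rep_cls by blast
  have repFt: "\<forall>i<?n. tp src tgt (rep (F i)) \<Gamma> (\<Delta>(\<alpha> \<mapsto> snd (qs ! i)))" using repF sim_tp by blast
  let ?CR = "Case \<alpha> (map (\<lambda>i. (fst (qs ! i), rep (F i))) [0..<?n])"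
  have CRt: "tp src tgt ?CR \<Gamma> (\<Delta>(\<alpha> \<mapsto> Prod qs))" by (rule prodA_tp[OF so a repFt])
  have s0: "sim src tgt \<Gamma> (\<Delta>(\<alpha> \<mapsto> Prod qs)) ?CR t" using tt unfolding F_def[symmetric] PhiP_def mem_cls .
  have so': "seq_ok ?G' (?D'(\<alpha> \<mapsto> Prod qs))" using tp_seq_ok[OF cutT[OF CRt]] .
  have a': "\<alpha> \<notin> dom ?D'" using a dj by auto
  have L1: "cls src tgt ?G' (?D'(\<alpha> \<mapsto> Prod qs)) (Cut \<gamma> h t) = cls src tgt ?G' (?D'(\<alpha> \<mapsto> Prod qs)) (Cut \<gamma> h ?CR)"
    by (rule cls_eq[OF sim_cut_l[OF sim_sym[OF s0] cutT]])
  have brt: "\<forall>i<?n. tp src tgt (Cut \<gamma> h (rep (F i))) ?G' (?D'(\<alpha> \<mapsto> snd (qs ! i)))"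
  proof (intro allI impI)
    fix i assume i: "i < ?n"
    show "tp src tgt (Cut \<gamma> h (rep (F i))) ?G' (?D'(\<alpha> \<mapsto> snd (qs ! i)))"
      by (rule cutT) (use repFt i in blast)
  qed
  have "step (Cut \<gamma> h ?CR) (Case \<alpha> (map (\<lambda>(a, f). (a, Cut \<gamma> h f)) (map (\<lambda>i. (fst (qs ! i), rep (F i))) [0..<?n])))"
    by (rule step.r4) (use ga in auto)
  then have "step (Cut \<gamma> h ?CR) (Case \<alpha> (map (\<lambda>i. (fst (qs ! i), Cut \<gamma> h (rep (F i)))) [0..<?n]))" by (simp add: o_def)
  then have L2: "sim src tgt ?G' (?D'(\<alpha> \<mapsto> Prod qs)) (Cut \<gamma> h ?CR) (Case \<alpha> (map (\<lambda>i. (fst (qs ! i), Cut \<gamma> h (rep (F i)))) [0..<?n]))"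
    by (rule step_sim[OF cutT[OF CRt] prodA_tp[OF so' a' brt]])
  have L3: "sim src tgt ?G' (?D'(\<alpha> \<mapsto> Prod qs)) (Case \<alpha> (map (\<lambda>i. (fst (qs ! i), Cut \<gamma> h (rep (F i)))) [0..<?n]))
       (Case \<alpha> (map (\<lambda>i. (fst (qs ! i), rep (G i))) [0..<?n]))"
  proof (rule case_cong_sim[where G = "\<lambda>i. ?G'" and D = "\<lambda>i. ?D'(\<alpha> \<mapsto> snd (qs ! i))"])
    show "\<forall>i<?n. sim src tgt ?G' (?D'(\<alpha> \<mapsto> snd (qs ! i))) (Cut \<gamma> h (rep (F i))) (rep (G i))"
    proof (intro allI impI)
      fix i assume i: "i < ?n"
      have "sim src tgt ?G' (?D'(\<alpha> \<mapsto> snd (qs ! i))) (Cut \<gamma> h (rep (F i))) (Cut \<gamma> h (fs i))"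
        by (rule sim_cut_l[OF sim_sym[OF repF[OF i]] cutT])
      moreover have "sim src tgt ?G' (?D'(\<alpha> \<mapsto> snd (qs ! i))) (Cut \<gamma> h (fs i)) (rep (G i))"
        unfolding Gi[OF i] by (rule rep_cls[OF cutT]) (use fs' i in blast)
      ultimately show "sim src tgt ?G' (?D'(\<alpha> \<mapsto> snd (qs ! i))) (Cut \<gamma> h (rep (F i))) (rep (G i))"
        by (rule sim_trans)
    qed
    show "tp src tgt (Case \<alpha> (map (\<lambda>i. (fst (qs ! i), hh i)) [0..<?n])) ?G' (?D'(\<alpha> \<mapsto> Prod qs))"
      if "\<forall>i<?n. tp src tgt (hh i) ?G' (?D'(\<alpha> \<mapsto> snd (qs ! i)))" for hh
      by (rule prodA_tp[OF so' a' that])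
  qed
  show ?thesis unfolding G_def[symmetric] PhiP_def L1
    using cls_eq[OF sim_trans[OF L2 L3]] .
qed

lemma prod_nat2:
  assumes so: "seq_ok \<Gamma> ((\<Delta> :: ('c, 'a, 'e) side)(\<alpha> \<mapsto> Prod qs))" and a: "\<alpha> \<notin> dom \<Delta>"
    and ga: "\<gamma> \<noteq> \<alpha>" and dZ: "\<Delta> \<gamma> = Some Z"
    and h: "tp src tgt h (\<Gamma>0(\<gamma> \<mapsto> Z)) \<Delta>0" and g0: "\<gamma> \<notin> dom \<Gamma>0 \<union> dom \<Delta>0"
    and dj: "(dom \<Gamma>0 \<union> dom \<Delta>0) \<inter> (dom \<Gamma> \<union> dom \<Delta> \<union> {\<alpha>}) = {}"
    and fs: "\<forall>i<length (map snd qs). tp src tgt (fs i) \<Gamma> (\<Delta>(\<alpha> \<mapsto> map snd qs ! i))"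
    and tt: "t \<in> PhiP src tgt qs \<Gamma> \<Delta> \<alpha> (\<lambda>i\<in>{..<length (map snd qs)}. cls src tgt \<Gamma> (\<Delta>(\<alpha> \<mapsto> map snd qs ! i)) (fs i))"
  shows "cls src tgt (\<Gamma> ++ \<Gamma>0) ((\<Delta>(\<gamma> := None) ++ \<Delta>0)(\<alpha> \<mapsto> Prod qs)) (Cut \<gamma> t h)
          = PhiP src tgt qs (\<Gamma> ++ \<Gamma>0) (\<Delta>(\<gamma> := None) ++ \<Delta>0) \<alpha>
              (\<lambda>i\<in>{..<length (map snd qs)}. cls src tgt (\<Gamma> ++ \<Gamma>0) ((\<Delta>(\<gamma> := None) ++ \<Delta>0)(\<alpha> \<mapsto> map snd qs ! i))
                                    (Cut \<gamma> (fs i) h))"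
proof -
  let ?D1 = "\<Delta>(\<gamma> := None)"
  let ?G' = "\<Gamma> ++ \<Gamma>0"
  let ?D' = "?D1 ++ \<Delta>0"
  let ?n = "length qs"
  have gG: "\<gamma> \<notin> dom \<Gamma>" using so dZ ga unfolding seq_ok_def by auto
  have cutT: "tp src tgt (Cut \<gamma> v h) ?G' (?D'(\<alpha> \<mapsto> X))" if v: "tp src tgt v \<Gamma> (\<Delta>(\<alpha> \<mapsto> X))" for v X
  proof -
    have e: "\<Delta>(\<alpha> \<mapsto> X) = (?D1(\<alpha> \<mapsto> X))(\<gamma> \<mapsto> Z)" by (rule ext) (use dZ ga in auto)
    have v': "tp src tgt v \<Gamma> ((?D1(\<alpha> \<mapsto> X))(\<gamma> \<mapsto> Z))" using v by (simp only: e[symmetric])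
    have "tp src tgt (Cut \<gamma> v h) (\<Gamma> ++ \<Gamma>0) (?D1(\<alpha> \<mapsto> X) ++ \<Delta>0)"
      by (rule tp.cut[OF v' h]) (use g0 gG ga dj in auto)
    moreover have "\<alpha> \<notin> dom \<Delta>0" using dj by auto
    ultimately show ?thesis using upd_add' by metis
  qed
  define F where "F = (\<lambda>i\<in>{..<length (map snd qs)}. cls src tgt \<Gamma> (\<Delta>(\<alpha> \<mapsto> map snd qs ! i)) (fs i))"
  define G where "G = (\<lambda>i\<in>{..<length (map snd qs)}. cls src tgt ?G' (?D'(\<alpha> \<mapsto> map snd qs ! i)) (Cut \<gamma> (fs i) h))"
  have fs': "\<forall>i<?n. tp src tgt (fs i) \<Gamma> (\<Delta>(\<alpha> \<mapsto> snd (qs ! i)))" using fs by simp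
  have Fi: "F i = cls src tgt \<Gamma> (\<Delta>(\<alpha> \<mapsto> snd (qs ! i))) (fs i)" if "i < ?n" for i
    unfolding F_def using that by simp
  have Gi: "G i = cls src tgt ?G' (?D'(\<alpha> \<mapsto> snd (qs ! i))) (Cut \<gamma> (fs i) h)" if "i < ?n" for i
    unfolding G_def using that by simp
  have repF: "sim src tgt \<Gamma> (\<Delta>(\<alpha> \<mapsto> snd (qs ! i))) (fs i) (rep (F i))" if "i < ?n" for i
    unfolding Fi[OF that] using fs' that rep_cls by blast
  have repFt: "\<forall>i<?n. tp src tgt (rep (F i)) \<Gamma> (\<Delta>(\<alpha> \<mapsto> snd (qs ! i)))" using repF sim_tp by blast
  let ?CR = "Case \<alpha> (map (\<lambda>i. (fst (qs ! i), rep (F i))) [0..<?n])"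
  have CRt: "tp src tgt ?CR \<Gamma> (\<Delta>(\<alpha> \<mapsto> Prod qs))" by (rule prodA_tp[OF so a repFt])
  have s0: "sim src tgt \<Gamma> (\<Delta>(\<alpha> \<mapsto> Prod qs)) ?CR t" using tt unfolding F_def[symmetric] PhiP_def mem_cls .
  have so': "seq_ok ?G' (?D'(\<alpha> \<mapsto> Prod qs))" using tp_seq_ok[OF cutT[OF CRt]] .
  have a': "\<alpha> \<notin> dom ?D'" using a dj by auto
  have L1: "cls src tgt ?G' (?D'(\<alpha> \<mapsto> Prod qs)) (Cut \<gamma> t h) = cls src tgt ?G' (?D'(\<alpha> \<mapsto> Prod qs)) (Cut \<gamma> ?CR h)"
    by (rule cls_eq[OF sim_cut_r[OF sim_sym[OF s0] cutT]])
  have brt: "\<forall>i<?n. tp src tgt (Cut \<gamma> (rep (F i)) h) ?G' (?D'(\<alpha> \<mapsto> snd (qs ! i)))"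
  proof (intro allI impI)
    fix i assume i: "i < ?n"
    show "tp src tgt (Cut \<gamma> (rep (F i)) h) ?G' (?D'(\<alpha> \<mapsto> snd (qs ! i)))"
      by (rule cutT) (use repFt i in blast)
  qed
  have "step (Cut \<gamma> ?CR h) (Case \<alpha> (map (\<lambda>(a, f). (a, Cut \<gamma> f h)) (map (\<lambda>i. (fst (qs ! i), rep (F i))) [0..<?n])))"
    by (rule step.r3) (use ga in auto)
  then have "step (Cut \<gamma> ?CR h) (Case \<alpha> (map (\<lambda>i. (fst (qs ! i), Cut \<gamma> (rep (F i)) h)) [0..<?n]))" by (simp add: o_def)
  then have L2: "sim src tgt ?G' (?D'(\<alpha> \<mapsto> Prod qs)) (Cut \<gamma> ?CR h) (Case \<alpha> (map (\<lambda>i. (fst (qs ! i), Cut \<gamma> (rep (F i)) h)) [0..<?n]))"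
    by (rule step_sim[OF cutT[OF CRt] prodA_tp[OF so' a' brt]])
  have L3: "sim src tgt ?G' (?D'(\<alpha> \<mapsto> Prod qs)) (Case \<alpha> (map (\<lambda>i. (fst (qs ! i), Cut \<gamma> (rep (F i)) h)) [0..<?n]))
       (Case \<alpha> (map (\<lambda>i. (fst (qs ! i), rep (G i))) [0..<?n]))"
  proof (rule case_cong_sim[where G = "\<lambda>i. ?G'" and D = "\<lambda>i. ?D'(\<alpha> \<mapsto> snd (qs ! i))"])
    show "\<forall>i<?n. sim src tgt ?G' (?D'(\<alpha> \<mapsto> snd (qs ! i))) (Cut \<gamma> (rep (F i)) h) (rep (G i))"
    proof (intro allI impI)
      fix i assume i: "i < ?n"
      have "sim src tgt ?G' (?D'(\<alpha> \<mapsto> snd (qs ! i))) (Cut \<gamma> (rep (F i)) h) (Cut \<gamma> (fs i) h)"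
        by (rule sim_cut_r[OF sim_sym[OF repF[OF i]] cutT])
      moreover have "sim src tgt ?G' (?D'(\<alpha> \<mapsto> snd (qs ! i))) (Cut \<gamma> (fs i) h) (rep (G i))"
        unfolding Gi[OF i] by (rule rep_cls[OF cutT]) (use fs' i in blast)
      ultimately show "sim src tgt ?G' (?D'(\<alpha> \<mapsto> snd (qs ! i))) (Cut \<gamma> (rep (F i)) h) (rep (G i))"
        by (rule sim_trans)
    qed
    show "tp src tgt (Case \<alpha> (map (\<lambda>i. (fst (qs ! i), hh i)) [0..<?n])) ?G' (?D'(\<alpha> \<mapsto> Prod qs))"
      if "\<forall>i<?n. tp src tgt (hh i) ?G' (?D'(\<alpha> \<mapsto> snd (qs ! i)))" for hh
      by (rule prodA_tp[OF so' a' that])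
  qed
  show ?thesis unfolding G_def[symmetric] PhiP_def L1
    using cls_eq[OF sim_trans[OF L2 L3]] .
qed


lemma prod_main: "is_poly_product TYPE('c) src tgt (Prod qs) (map snd qs)"
  unfolding is_poly_product_def
proof (rule exI[of _ "PhiP src tgt qs"], intro conjI allI impI)
  fix \<Gamma> \<Delta> :: "('c, 'a, 'e) side" and \<alpha>
  assume "seq_ok \<Gamma> (\<Delta>(\<alpha> \<mapsto> fm.Prod qs)) \<and> \<alpha> \<notin> dom \<Delta>"
  then show "bij_betw (PhiP src tgt qs \<Gamma> \<Delta> \<alpha>)
          (Pi\<^sub>E {..<length (map snd qs)} (\<lambda>i. hom src tgt \<Gamma> (\<Delta>(\<alpha> \<mapsto> map snd qs ! i))))
          (hom src tgt \<Gamma> (\<Delta>(\<alpha> \<mapsto> Prod qs)))" using prod_bij by blast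
next
  fix \<Gamma> \<Delta> :: "('c, 'a, 'e) side" and \<alpha> \<Gamma>0 \<Delta>0 \<gamma> Z h fs t
  assume "seq_ok \<Gamma> (\<Delta>(\<alpha> \<mapsto> fm.Prod qs)) \<and> \<alpha> \<notin> dom \<Delta> \<and> \<gamma> \<noteq> \<alpha> \<and> \<Gamma> \<gamma> = Some Z \<and>
        tp src tgt h \<Gamma>0 (\<Delta>0(\<gamma> \<mapsto> Z)) \<and> \<gamma> \<notin> dom \<Gamma>0 \<union> dom \<Delta>0 \<and>
        (dom \<Gamma>0 \<union> dom \<Delta>0) \<inter> (dom \<Gamma> \<union> dom \<Delta> \<union> {\<alpha>}) = {} \<and>
        (\<forall>i < length (map snd qs). tp src tgt (fs i) \<Gamma> (\<Delta>(\<alpha> \<mapsto> map snd qs ! i))) \<and>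
        t \<in> PhiP src tgt qs \<Gamma> \<Delta> \<alpha> (\<lambda>i\<in>{..<length (map snd qs)}. cls src tgt \<Gamma> (\<Delta>(\<alpha> \<mapsto> map snd qs ! i)) (fs i))"
  then show "cls src tgt (\<Gamma>0 ++ \<Gamma>(\<gamma> := None)) ((\<Delta>0 ++ \<Delta>)(\<alpha> \<mapsto> Prod qs)) (Cut \<gamma> h t)
          = PhiP src tgt qs (\<Gamma>0 ++ \<Gamma>(\<gamma> := None)) (\<Delta>0 ++ \<Delta>) \<alpha>
              (\<lambda>i\<in>{..<length (map snd qs)}. cls src tgt (\<Gamma>0 ++ \<Gamma>(\<gamma> := None)) ((\<Delta>0 ++ \<Delta>)(\<alpha> \<mapsto> map snd qs ! i))
                                    (Cut \<gamma> h (fs i)))"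
    by (elim conjE) (rule prod_nat1)
next
  fix \<Gamma> \<Delta> :: "('c, 'a, 'e) side" and \<alpha> \<Gamma>0 \<Delta>0 \<gamma> Z h fs t
  assume "seq_ok \<Gamma> (\<Delta>(\<alpha> \<mapsto> fm.Prod qs)) \<and> \<alpha> \<notin> dom \<Delta> \<and> \<gamma> \<noteq> \<alpha> \<and> \<Delta> \<gamma> = Some Z \<and>
        tp src tgt h (\<Gamma>0(\<gamma> \<mapsto> Z)) \<Delta>0 \<and> \<gamma> \<notin> dom \<Gamma>0 \<union> dom \<Delta>0 \<and>
        (dom \<Gamma>0 \<union> dom \<Delta>0) \<inter> (dom \<Gamma> \<union> dom \<Delta> \<union> {\<alpha>}) = {} \<and>
        (\<forall>i < length (map snd qs). tp src tgt (fs i) \<Gamma> (\<Delta>(\<alpha> \<mapsto> map snd qs ! i))) \<and>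
        t \<in> PhiP src tgt qs \<Gamma> \<Delta> \<alpha> (\<lambda>i\<in>{..<length (map snd qs)}. cls src tgt \<Gamma> (\<Delta>(\<alpha> \<mapsto> map snd qs ! i)) (fs i))"
  then show "cls src tgt (\<Gamma> ++ \<Gamma>0) ((\<Delta>(\<gamma> := None) ++ \<Delta>0)(\<alpha> \<mapsto> Prod qs)) (Cut \<gamma> t h)
          = PhiP src tgt qs (\<Gamma> ++ \<Gamma>0) (\<Delta>(\<gamma> := None) ++ \<Delta>0) \<alpha>
              (\<lambda>i\<in>{..<length (map snd qs)}. cls src tgt (\<Gamma> ++ \<Gamma>0) ((\<Delta>(\<gamma> := None) ++ \<Delta>0)(\<alpha> \<mapsto> map snd qs ! i))
                                    (Cut \<gamma> (fs i) h))"
    by (elim conjE) (rule prod_nat2)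
qed

end


theorem mainTheorem2:
  fixes src tgt :: "'m \<Rightarrow> 'a list" and idm :: "'a \<Rightarrow> 'm"
    and cmp :: "'m \<Rightarrow> nat \<Rightarrow> nat \<Rightarrow> 'm \<Rightarrow> 'm"
    and qs :: "('e \<times> ('a, 'e) fm) list"
  assumes "polycategory src tgt idm cmp"
    and "infinite (UNIV :: 'c set)"
    and "distinct (map fst qs)"
    and "\<forall>p \<in> set qs. wf_fm (snd p)"
  shows "is_poly_sum TYPE('c) src tgt (Sum qs) (map snd qs) \<and>
         is_poly_product TYPE('c) src tgt (Prod qs) (map snd qs)"
  using sum_main[OF assms(2,3,4)] prod_main[OF assms(2,3,4)] by blast

end
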